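(* Let $(\mathcal C,\mathbb E,\mathfrak s)$ and $(\mathcal D,\mathbb F,\mathfrak t)$ be $n$-exangulated categories and $(\mathscr F,\Gamma)\colon(\mathcal C,\mathbb E,\mathfrak s)\to(\mathcal D,\mathbb F,\mathfrak t)$ an $n$-exangulated functor. Then $(\widetilde{\mathscr F},\widetilde\Gamma)$ is an $n$-exangulated functor $(\widetilde{\mathcal C},\widetilde{\mathbb E},\widetilde{\mathfrak s})\to(\widetilde{\mathcal D},\widetilde{\mathbb F},\widetilde{\mathfrak t})$.
   Context: $n\ge1$. An $n$-exangulated category $(\mathcal C,\mathbb E,\mathfrak s)$ (Herschend–Liu–Nakaoka) consists of an additive category $\mathcal C$, a biadditive functor $\mathbb E\colon\mathcal C^{\mathrm{op}}\times\mathcal C\to\mathsf{Ab}$, and an exact realisation $\mathfrak s$ assigning to each $\alpha\in\mathbb E(C,A)$ a homotopy class $[X_\bullet]$ of $(n+2)$-term complexes $X_0\to X_1\to\cdots\to X_{n+1}$ with $X_0=A$, $X_{n+1}=C$, satisfying axioms (EA1), (EA2), (EA2$^{\mathrm{op}}$). Write $a_*\alpha=\mathbb E(C,a)(\alpha)$ and $c^*\alpha=\mathbb E(c,A)(\alpha)$. A morphism of $\mathbb E$-extensions $\alpha\to\beta$ ($\alpha\in\mathbb E(C,A)$, $\beta\in\mathbb E(D,B)$) is a pair $(a\colon A\to B,c\colon C\to D)$ with $a_*\alpha=c^*\beta$. An $n$-exangulated functor $(\mathscr F,\Gamma)$ is an additive functor $\mathscr F\colon\mathcal C\to\mathcal D$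 with a natural transformation $\Gamma\colon\mathbb E(-,-)\Rightarrow\mathbb F(\mathscr F-,\mathscr F-)$ such that $\mathfrak s(\alpha)=[X_\bullet]$ implies $\mathfrak t(\Gamma(\alpha))=[\mathscr FX_\bullet]$. Idempotent completion: $\widetilde{\mathcal C}$ has objects $(X,e)$ with $e\colon X\to X$ idempotent, morphisms $(e_Y,f,e_X)\colon(X,e_X)\to(Y,e_Y)$ with $fe_X=f=e_Yf$, composition $(e_Z,g,e_Y)(e_Y,f,e_X)=(e_Z,gf,e_X)$, identity $(e,e,e)$; for additive $\mathscr F$, $\widetilde{\mathscr F}(X,e)=(\mathscr FX,\mathscr Fe)$, $\widetilde{\mathscr F}(e_Y,f,e_X)=(\mathscr Fe_Y,\mathscr Ff,\mathscr Fe_X)$. The biadditive functor $\widetilde{\mathbb E}$ on $\widetilde{\mathcal C}$: $\widetilde{\mathbb E}((C,e_C),(A,e_A))=\{(e_A,\alpha,e_C)\mid\alpha\in\mathbb E(C,A),\ (e_A)_*\alpha=\alpha=(e_C)^*\alpha\}$ with addition in the middle component, and $\widetilde{\mathbb E}((e_C,d,e_D),(e_B,a,e_A))(e_A,\alpha,e_C)=(e_B,\mathbb E(d,a)(\alpha),e_D)$. The realisation $\widetilde{\mathfrak s}$: given $(e_A,\alpha,e_C)$, choose $X_\bullet$ with $\mathfrak s(\alpha)=[X_\bullet]$ (differentials $d_i$) and an idempotent morphism of complexes $e_\bullet\colon X_\bullet\to X_\bullet$ with $e_0=e_A$, $e_{n+1}=e_C$ (one exists, and the result is independent of choices); then $\widetilde{\mathfrak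 s}(e_A,\alpha,e_C)=[(X_\bullet,e_\bullet)]$, where $(X_\bullet,e_\bullet)$ is the complex in $\widetilde{\mathcal C}$ with terms $(X_i,e_i)$ and differentials $(e_{i+1},e_{i+1}d_i,e_i)$. Then $(\widetilde{\mathcal C},\widetilde{\mathbb E},\widetilde{\mathfrak s})$ is $n$-exangulated. Given $(\mathscr F,\Gamma)$, $\widetilde\Gamma$ is defined by $\widetilde\Gamma(e_A,\alpha,e_C)=(\mathscr Fe_A,\Gamma(\alpha),\mathscr Fe_C)$. *)

theory Defs
  imports "HOL-Algebra.Group"
begin

section \<open>Additive categories (objects 'o, morphisms 'm, operations indexed by objects)\<close>

record ('o,'m) addcat =
  Ob  :: "'o set"
  Hm  :: "'o \<Rightarrow> 'o \<Rightarrow> 'm set"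
  Cp  :: "'o \<Rightarrow> 'o \<Rightarrow> 'o \<Rightarrow> 'm \<Rightarrow> 'm \<Rightarrow> 'm"           (* Cp X Y Z g f = g o f *)
  Idn :: "'o \<Rightarrow> 'm"
  Ad  :: "'o \<Rightarrow> 'o \<Rightarrow> 'm \<Rightarrow> 'm \<Rightarrow> 'm"
  Zr  :: "'o \<Rightarrow> 'o \<Rightarrow> 'm"

definition hom_group :: "('o,'m) addcat \<Rightarrow> 'o \<Rightarrow> 'o \<Rightarrow> 'm monoid" where
  "hom_group C X Y = \<lparr>carrier = Hm C X Y, mult = Ad C X Y, one = Zr C X Y\<rparr>"

definition is_category :: "('o,'m) addcat \<Rightarrow> bool" where
  "is_category C \<longleftrightarrow>
     (\<forall>X Y. (X \<notin> Ob C \<or> Y \<notin> Ob C) \<longrightarrow> Hm C X Y = {}) \<and>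
     (\<forall>X\<in>Ob C. Idn C X \<in> Hm C X X) \<and>
     (\<forall>X\<in>Ob C. \<forall>Y\<in>Ob C. \<forall>Z\<in>Ob C. \<forall>f\<in>Hm C X Y. \<forall>g\<in>Hm C Y Z. Cp C X Y Z g f \<in> Hm C X Z) \<and>
     (\<forall>X\<in>Ob C. \<forall>Y\<in>Ob C. \<forall>Z\<in>Ob C. \<forall>W\<in>Ob C. \<forall>f\<in>Hm C X Y. \<forall>g\<in>Hm C Y Z. \<forall>h\<in>Hm C Z W.
        Cp C X Z W h (Cp C X Y Z g f) = Cp C X Y W (Cp C Y Z W h g) f) \<and>
     (\<forall>X\<in>Ob C. \<forall>Y\<in>Ob C. \<forall>f\<in>Hm C X Y.
        Cp C X Y Y (Idn C Y) f = f \<and> Cp C X X Y f (Idn C X) = f)"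

definition is_preadditive :: "('o,'m) addcat \<Rightarrow> bool" where
  "is_preadditive C \<longleftrightarrow> is_category C \<and>
     (\<forall>X\<in>Ob C. \<forall>Y\<in>Ob C. comm_group (hom_group C X Y)) \<and>
     (\<forall>X\<in>Ob C. \<forall>Y\<in>Ob C. \<forall>Z\<in>Ob C.
        (\<forall>f\<in>Hm C X Y. \<forall>f'\<in>Hm C X Y. \<forall>g\<in>Hm C Y Z.
           Cp C X Y Z g (Ad C X Y f f') = Ad C X Z (Cp C X Y Z g f) (Cp C X Y Z g f')) \<and>
        (\<forall>f\<in>Hm C X Y. \<forall>g\<in>Hm C Y Z. \<forall>g'\<in>Hm C Y Z.
           Cp C X Y Z (Ad C Y Z g g') f = Ad C X Z (Cp C X Y Z g f) (Cp C X Y Z g' f)))"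

definition is_zero_obj :: "('o,'m) addcat \<Rightarrow> 'o \<Rightarrow> bool" where
  "is_zero_obj C Z \<longleftrightarrow> Z \<in> Ob C \<and> Idn C Z = Zr C Z Z"

definition is_biproduct :: "('o,'m) addcat \<Rightarrow> 'o \<Rightarrow> 'o \<Rightarrow> 'o \<Rightarrow> 'm \<Rightarrow> 'm \<Rightarrow> 'm \<Rightarrow> 'm \<Rightarrow> bool" where
  "is_biproduct C X Y P i1 i2 p1 p2 \<longleftrightarrow> P \<in> Ob C \<and>
     i1 \<in> Hm C X P \<and> i2 \<in> Hm C Y P \<and> p1 \<in> Hm C P X \<and> p2 \<in> Hm C P Y \<and>
     Cp C X P X p1 i1 = Idn C X \<and> Cp C Y P Y p2 i2 = Idn C Y \<and>
     Cp C Y P X p1 i2 = Zr C Y X \<and> Cp C X P Y p2 i1 = Zr C X Y \<and>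
     Ad C P P (Cp C P X P i1 p1) (Cp C P Y P i2 p2) = Idn C P"

definition is_additive :: "('o,'m) addcat \<Rightarrow> bool" where
  "is_additive C \<longleftrightarrow> is_preadditive C \<and> (\<exists>Z. is_zero_obj C Z) \<and>
     (\<forall>X\<in>Ob C. \<forall>Y\<in>Ob C. \<exists>P i1 i2 p1 p2. is_biproduct C X Y P i1 i2 p1 p2)"

section \<open>Biadditive functors E : C^op x C \<rightarrow> Ab\<close>

record ('o,'m,'x) bifun =
  Ex  :: "'o \<Rightarrow> 'o \<Rightarrow> 'x set"                           (* Ex C A = E(C,A) *)
  EAd :: "'o \<Rightarrow> 'o \<Rightarrow> 'x \<Rightarrow> 'x \<Rightarrow> 'x"
  EZr :: "'o \<Rightarrow> 'o \<Rightarrow> 'x"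
  EMp :: "'o \<Rightarrow> 'o \<Rightarrow> 'o \<Rightarrow> 'o \<Rightarrow> 'm \<Rightarrow> 'm \<Rightarrow> 'x \<Rightarrow> 'x"
    (* EMp C' C A A' c a = E(c,a) : E(C,A) \<rightarrow> E(C',A') for c : C' \<rightarrow> C, a : A \<rightarrow> A' *)

definition ext_group :: "('o,'m,'x) bifun \<Rightarrow> 'o \<Rightarrow> 'o \<Rightarrow> 'x monoid" where
  "ext_group E Cc A = \<lparr>carrier = Ex E Cc A, mult = EAd E Cc A, one = EZr E Cc A\<rparr>"

definition pushE :: "('o,'m) addcat \<Rightarrow> ('o,'m,'x) bifun \<Rightarrow> 'o \<Rightarrow> 'o \<Rightarrow> 'o \<Rightarrow> 'm \<Rightarrow> 'x \<Rightarrow> 'x" where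
  "pushE C E Cc A A' a \<alpha> = EMp E Cc Cc A A' (Idn C Cc) a \<alpha>"

definition pullE :: "('o,'m) addcat \<Rightarrow> ('o,'m,'x) bifun \<Rightarrow> 'o \<Rightarrow> 'o \<Rightarrow> 'o \<Rightarrow> 'm \<Rightarrow> 'x \<Rightarrow> 'x" where
  "pullE C E C' Cc A c \<alpha> = EMp E C' Cc A A c (Idn C A) \<alpha>"

definition is_biadditive :: "('o,'m) addcat \<Rightarrow> ('o,'m,'x) bifun \<Rightarrow> bool" where
  "is_biadditive C E \<longleftrightarrow>
     (\<forall>Cc A. (Cc \<notin> Ob C \<or> A \<notin> Ob C) \<longrightarrow> Ex E Cc A = {}) \<and>
     (\<forall>Cc\<in>Ob C. \<forall>A\<in>Ob C. comm_group (ext_group E Cc A)) \<and>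
     (\<forall>C'\<in>Ob C. \<forall>Cc\<in>Ob C. \<forall>A\<in>Ob C. \<forall>A'\<in>Ob C. \<forall>c\<in>Hm C C' Cc. \<forall>a\<in>Hm C A A'.
        EMp E C' Cc A A' c a \<in> hom (ext_group E Cc A) (ext_group E C' A')) \<and>
     (\<forall>Cc\<in>Ob C. \<forall>A\<in>Ob C. \<forall>\<alpha>\<in>Ex E Cc A. EMp E Cc Cc A A (Idn C Cc) (Idn C A) \<alpha> = \<alpha>) \<and>
     (\<forall>C''\<in>Ob C. \<forall>C'\<in>Ob C. \<forall>Cc\<in>Ob C. \<forall>A\<in>Ob C. \<forall>A'\<in>Ob C. \<forall>A''\<in>Ob C.
      \<forall>c'\<in>Hm C C'' C'. \<forall>c\<in>Hm C C' Cc. \<forall>a\<in>Hm C A A'. \<forall>a'\<in>Hm C A' A''. \<forall>\<alpha>\<in>Ex E Cc A.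
        EMp E C'' Cc A A'' (Cp C C'' C' Cc c c') (Cp C A A' A'' a' a) \<alpha>
          = EMp E C'' C' A' A'' c' a' (EMp E C' Cc A A' c a \<alpha>)) \<and>
     (\<forall>C'\<in>Ob C. \<forall>Cc\<in>Ob C. \<forall>A\<in>Ob C. \<forall>A'\<in>Ob C. \<forall>\<alpha>\<in>Ex E Cc A.
        (\<forall>c\<in>Hm C C' Cc. \<forall>c'\<in>Hm C C' Cc. \<forall>a\<in>Hm C A A'.
           EMp E C' Cc A A' (Ad C C' Cc c c') a \<alpha>
             = EAd E C' A' (EMp E C' Cc A A' c a \<alpha>) (EMp E C' Cc A A' c' a \<alpha>)) \<and>
        (\<forall>c\<in>Hm C C' Cc. \<forall>a\<in>Hm C A A'. \<forall>a'\<in>Hm C A A'.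
           EMp E C' Cc A A' c (Ad C A A' a a') \<alpha>
             = EAd E C' A' (EMp E C' Cc A A' c a \<alpha>) (EMp E C' Cc A A' c a' \<alpha>)))"

section \<open>(n+2)-term complexes X_0 \<rightarrow> ... \<rightarrow> X_{n+1} and their homotopy classes\<close>

type_synonym ('o,'m) cx = "(nat \<Rightarrow> 'o) \<times> (nat \<Rightarrow> 'm)"

definition is_cx :: "('o,'m) addcat \<Rightarrow> nat \<Rightarrow> (nat \<Rightarrow> 'o) \<Rightarrow> (nat \<Rightarrow> 'm) \<Rightarrow> bool" where
  "is_cx C n X d \<longleftrightarrow> (\<forall>i\<le>Suc n. X i \<in> Ob C) \<and> (\<forall>i\<le>n. d i \<in> Hm C (X i) (X (Suc i))) \<and>
     (\<forall>i<n. Cp C (X i) (X (Suc i)) (X (Suc (Suc i))) (d (Suc i)) (d i) = Zr C (X i) (X (Suc (Suc i))))"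

definition cxAC :: "('o,'m) addcat \<Rightarrow> nat \<Rightarrow> 'o \<Rightarrow> 'o \<Rightarrow> (nat \<Rightarrow> 'o) \<Rightarrow> (nat \<Rightarrow> 'm) \<Rightarrow> bool" where
  "cxAC C n A B X d \<longleftrightarrow> is_cx C n X d \<and> X 0 = A \<and> X (Suc n) = B"

definition is_cmor :: "('o,'m) addcat \<Rightarrow> nat \<Rightarrow> (nat \<Rightarrow> 'o) \<Rightarrow> (nat \<Rightarrow> 'm) \<Rightarrow> (nat \<Rightarrow> 'o) \<Rightarrow> (nat \<Rightarrow> 'm) \<Rightarrow> (nat \<Rightarrow> 'm) \<Rightarrow> bool" where
  "is_cmor C n X d Y d' f \<longleftrightarrow> (\<forall>i\<le>Suc n. f i \<in> Hm C (X i) (Y i)) \<and>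
     (\<forall>i\<le>n. Cp C (X i) (X (Suc i)) (Y (Suc i)) (f (Suc i)) (d i) = Cp C (X i) (Y i) (Y (Suc i)) (d' i) (f i))"

text \<open>f ~ g: f_i = g_i + d'_{i-1} phi_i + phi_{i+1} d_i (phi_0 = 0, phi_{n+2} = 0)\<close>
definition homotopic :: "('o,'m) addcat \<Rightarrow> nat \<Rightarrow> (nat \<Rightarrow> 'o) \<Rightarrow> (nat \<Rightarrow> 'm) \<Rightarrow> (nat \<Rightarrow> 'o) \<Rightarrow> (nat \<Rightarrow> 'm) \<Rightarrow> (nat \<Rightarrow> 'm) \<Rightarrow> (nat \<Rightarrow> 'm) \<Rightarrow> bool" where
  "homotopic C n X d Y d' f g \<longleftrightarrow> (\<exists>\<phi>.
     (\<forall>i. 1 \<le> i \<and> i \<le> Suc n \<longrightarrow> \<phi> i \<in> Hm C (X i) (Y (i - 1))) \<and>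
     (\<forall>i\<le>Suc n. f i = Ad C (X i) (Y i) (g i)
        (Ad C (X i) (Y i)
           (if i = 0 then Zr C (X i) (Y i) else Cp C (X i) (Y (i - 1)) (Y i) (d' (i - 1)) (\<phi> i))
           (if i = Suc n then Zr C (X i) (Y i) else Cp C (X i) (X (Suc i)) (Y i) (\<phi> (Suc i)) (d i)))))"

definition heq :: "('o,'m) addcat \<Rightarrow> nat \<Rightarrow> 'o \<Rightarrow> 'o \<Rightarrow> (nat \<Rightarrow> 'o) \<Rightarrow> (nat \<Rightarrow> 'm) \<Rightarrow> (nat \<Rightarrow> 'o) \<Rightarrow> (nat \<Rightarrow> 'm) \<Rightarrow> bool" where
  "heq C n A B X d Y d' \<longleftrightarrow> cxAC C n A B X d \<and> cxAC C n A B Y d' \<and>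
     (\<exists>f g. is_cmor C n X d Y d' f \<and> f 0 = Idn C A \<and> f (Suc n) = Idn C B \<and>
            is_cmor C n Y d' X d g \<and> g 0 = Idn C A \<and> g (Suc n) = Idn C B \<and>
            homotopic C n X d X d (\<lambda>i. Cp C (X i) (Y i) (X i) (g i) (f i)) (\<lambda>i. Idn C (X i)) \<and>
            homotopic C n Y d' Y d' (\<lambda>i. Cp C (Y i) (X i) (Y i) (f i) (g i)) (\<lambda>i. Idn C (Y i)))"

definition hclass :: "('o,'m) addcat \<Rightarrow> nat \<Rightarrow> 'o \<Rightarrow> 'o \<Rightarrow> (nat \<Rightarrow> 'o) \<Rightarrow> (nat \<Rightarrow> 'm) \<Rightarrow> ('o,'m) cx set" where
  "hclass C n A B X d = {(Y, d'). heq C n A B X d Y d'}"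

section \<open>n-exangles, realisations, mapping cones\<close>

definition nexangle :: "('o,'m) addcat \<Rightarrow> ('o,'m,'x) bifun \<Rightarrow> nat \<Rightarrow> (nat \<Rightarrow> 'o) \<Rightarrow> (nat \<Rightarrow> 'm) \<Rightarrow> 'x \<Rightarrow> bool" where
  "nexangle C E n X d \<delta> \<longleftrightarrow> is_cx C n X d \<and> \<delta> \<in> Ex E (X (Suc n)) (X 0) \<and>
     pullE C E (X n) (X (Suc n)) (X 0) (d n) \<delta> = EZr E (X n) (X 0) \<and>
     pushE C E (X (Suc n)) (X 0) (X 1) (d 0) \<delta> = EZr E (X (Suc n)) (X 1) \<and>
     (\<forall>W\<in>Ob C.
        (\<forall>i. 1 \<le> i \<and> i \<le> n \<longrightarrow> (\<forall>h\<in>Hm C W (X i).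
            Cp C W (X i) (X (Suc i)) (d i) h = Zr C W (X (Suc i)) \<longrightarrow>
            (\<exists>h'\<in>Hm C W (X (i - 1)). h = Cp C W (X (i - 1)) (X i) (d (i - 1)) h'))) \<and>
        (\<forall>h\<in>Hm C W (X (Suc n)).
            pullE C E W (X (Suc n)) (X 0) h \<delta> = EZr E W (X 0) \<longrightarrow>
            (\<exists>h'\<in>Hm C W (X n). h = Cp C W (X n) (X (Suc n)) (d n) h')) \<and>
        (\<forall>i. 1 \<le> i \<and> i \<le> n \<longrightarrow> (\<forall>h\<in>Hm C (X i) W.
            Cp C (X (i - 1)) (X i) W h (d (i - 1)) = Zr C (X (i - 1)) W \<longrightarrow>
            (\<exists>h'\<in>Hm C (X (Suc i)) W. h = Cp C (X i) (X (Suc i)) W h' (d i)))) \<and>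
        (\<forall>h\<in>Hm C (X 0) W.
            pushE C E (X (Suc n)) (X 0) W h \<delta> = EZr E (X (Suc n)) W \<longrightarrow>
            (\<exists>h'\<in>Hm C (X 1) W. h = Cp C (X 0) (X 1) W h' (d 0))))"

text \<open>s Cc A delta is the class s(delta) for delta in E(Cc,A)\<close>
definition is_realisation :: "('o,'m) addcat \<Rightarrow> ('o,'m,'x) bifun \<Rightarrow> nat \<Rightarrow> ('o \<Rightarrow> 'o \<Rightarrow> 'x \<Rightarrow> ('o,'m) cx set) \<Rightarrow> bool" where
  "is_realisation C E n s \<longleftrightarrow> (\<forall>Cc\<in>Ob C. \<forall>A\<in>Ob C. \<forall>\<delta>\<in>Ex E Cc A.
      \<exists>X d. cxAC C n A Cc X d \<and> s Cc A \<delta> = hclass C n A Cc X d)"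

text \<open>(M, dM) is a mapping cone of f : X \<rightarrow> Y (f_0 = 1):
  X_1 \<rightarrow> X_2 + Y_1 \<rightarrow> ... \<rightarrow> X_{n+1} + Y_n \<rightarrow> Y_{n+1}\<close>
definition is_cone :: "('o,'m) addcat \<Rightarrow> nat \<Rightarrow> (nat \<Rightarrow> 'o) \<Rightarrow> (nat \<Rightarrow> 'm) \<Rightarrow> (nat \<Rightarrow> 'o) \<Rightarrow> (nat \<Rightarrow> 'm) \<Rightarrow> (nat \<Rightarrow> 'm) \<Rightarrow> (nat \<Rightarrow> 'o) \<Rightarrow> (nat \<Rightarrow> 'm) \<Rightarrow> bool" where
  "is_cone C n X d Y d' f M dM \<longleftrightarrow> M 0 = X 1 \<and> M (Suc n) = Y (Suc n) \<and>
     (\<exists>i1 i2 p1 p2.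
        (\<forall>i. 1 \<le> i \<and> i \<le> n \<longrightarrow> is_biproduct C (X (Suc i)) (Y i) (M i) (i1 i) (i2 i) (p1 i) (p2 i)) \<and>
        dM 0 \<in> Hm C (M 0) (M 1) \<and>
        Ad C (X 1) (X 2) (Cp C (X 1) (M 1) (X 2) (p1 1) (dM 0)) (d 1) = Zr C (X 1) (X 2) \<and>
        Cp C (X 1) (M 1) (Y 1) (p2 1) (dM 0) = f 1 \<and>
        (\<forall>i. 1 \<le> i \<and> i < n \<longrightarrow>
           dM i \<in> Hm C (M i) (M (Suc i)) \<and>
           Ad C (X (Suc i)) (X (Suc (Suc i)))
             (Cp C (X (Suc i)) (M (Suc i)) (X (Suc (Suc i))) (p1 (Suc i))
                (Cp C (X (Suc i)) (M i) (M (Suc i)) (dM i) (i1 i))) (d (Suc i))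
             = Zr C (X (Suc i)) (X (Suc (Suc i))) \<and>
           Cp C (Y i) (M (Suc i)) (X (Suc (Suc i))) (p1 (Suc i))
             (Cp C (Y i) (M i) (M (Suc i)) (dM i) (i2 i)) = Zr C (Y i) (X (Suc (Suc i))) \<and>
           Cp C (X (Suc i)) (M (Suc i)) (Y (Suc i)) (p2 (Suc i))
             (Cp C (X (Suc i)) (M i) (M (Suc i)) (dM i) (i1 i)) = f (Suc i) \<and>
           Cp C (Y i) (M (Suc i)) (Y (Suc i)) (p2 (Suc i))
             (Cp C (Y i) (M i) (M (Suc i)) (dM i) (i2 i)) = d' i) \<and>
        dM n \<in> Hm C (M n) (M (Suc n)) \<and>
        Cp C (X (Suc n)) (M n) (Y (Suc n)) (dM n) (i1 n) = f (Suc n) \<and>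
        Cp C (Y n) (M n) (Y (Suc n)) (dM n) (i2 n) = d' n)"

text \<open>(M, dM) is a mapping cocone of g : Y \<rightarrow> X (g_{n+1} = 1):
  Y_0 \<rightarrow> Y_1 + X_0 \<rightarrow> ... \<rightarrow> Y_n + X_{n-1} \<rightarrow> X_n\<close>
definition is_cocone :: "('o,'m) addcat \<Rightarrow> nat \<Rightarrow> (nat \<Rightarrow> 'o) \<Rightarrow> (nat \<Rightarrow> 'm) \<Rightarrow> (nat \<Rightarrow> 'o) \<Rightarrow> (nat \<Rightarrow> 'm) \<Rightarrow> (nat \<Rightarrow> 'm) \<Rightarrow> (nat \<Rightarrow> 'o) \<Rightarrow> (nat \<Rightarrow> 'm) \<Rightarrow> bool" where
  "is_cocone C n Y d' X d g M dM \<longleftrightarrow> M 0 = Y 0 \<and> M (Suc n) = X n \<and>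
     (\<exists>i1 i2 p1 p2.
        (\<forall>i. 1 \<le> i \<and> i \<le> n \<longrightarrow> is_biproduct C (Y i) (X (i - 1)) (M i) (i1 i) (i2 i) (p1 i) (p2 i)) \<and>
        dM 0 \<in> Hm C (M 0) (M 1) \<and>
        Ad C (Y 0) (Y 1) (Cp C (Y 0) (M 1) (Y 1) (p1 1) (dM 0)) (d' 0) = Zr C (Y 0) (Y 1) \<and>
        Cp C (Y 0) (M 1) (X 0) (p2 1) (dM 0) = g 0 \<and>
        (\<forall>i. 1 \<le> i \<and> i < n \<longrightarrow>
           dM i \<in> Hm C (M i) (M (Suc i)) \<and>
           Ad C (Y i) (Y (Suc i))
             (Cp C (Y i) (M (Suc i)) (Y (Suc i)) (p1 (Suc i))
                (Cp C (Y i) (M i) (M (Suc i)) (dM i) (i1 i))) (d' i)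
             = Zr C (Y i) (Y (Suc i)) \<and>
           Cp C (X (i - 1)) (M (Suc i)) (Y (Suc i)) (p1 (Suc i))
             (Cp C (X (i - 1)) (M i) (M (Suc i)) (dM i) (i2 i)) = Zr C (X (i - 1)) (Y (Suc i)) \<and>
           Cp C (Y i) (M (Suc i)) (X i) (p2 (Suc i))
             (Cp C (Y i) (M i) (M (Suc i)) (dM i) (i1 i)) = g i \<and>
           Cp C (X (i - 1)) (M (Suc i)) (X i) (p2 (Suc i))
             (Cp C (X (i - 1)) (M i) (M (Suc i)) (dM i) (i2 i)) = d (i - 1)) \<and>
        dM n \<in> Hm C (M n) (M (Suc n)) \<and>
        Cp C (Y n) (M n) (X n) (dM n) (i1 n) = g n \<and>
        Cp C (X (n - 1)) (M n) (X n) (dM n) (i2 n) = d (n - 1))"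

definition inflation :: "('o,'m) addcat \<Rightarrow> ('o,'m,'x) bifun \<Rightarrow> ('o \<Rightarrow> 'o \<Rightarrow> 'x \<Rightarrow> ('o,'m) cx set) \<Rightarrow> 'o \<Rightarrow> 'o \<Rightarrow> 'm \<Rightarrow> bool" where
  "inflation C E s A B f \<longleftrightarrow> (\<exists>Cc \<delta> X d. Cc \<in> Ob C \<and> \<delta> \<in> Ex E Cc A \<and> (X, d) \<in> s Cc A \<delta> \<and> X 1 = B \<and> d 0 = f)"

definition deflation :: "('o,'m) addcat \<Rightarrow> ('o,'m,'x) bifun \<Rightarrow> ('o \<Rightarrow> 'o \<Rightarrow> 'x \<Rightarrow> ('o,'m) cx set) \<Rightarrow> nat \<Rightarrow> 'o \<Rightarrow> 'o \<Rightarrow> 'm \<Rightarrow> bool" where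
  "deflation C E s n B Cc g \<longleftrightarrow> (\<exists>A \<delta> X d. A \<in> Ob C \<and> \<delta> \<in> Ex E Cc A \<and> (X, d) \<in> s Cc A \<delta> \<and> X n = B \<and> d n = g)"

definition is_nexangulated :: "('o,'m) addcat \<Rightarrow> ('o,'m,'x) bifun \<Rightarrow> ('o \<Rightarrow> 'o \<Rightarrow> 'x \<Rightarrow> ('o,'m) cx set) \<Rightarrow> nat \<Rightarrow> bool" where
  "is_nexangulated C E s n \<longleftrightarrow> 1 \<le> n \<and> is_additive C \<and> is_biadditive C E \<and> is_realisation C E n s \<and>
     \<comment> \<open>(R0)\<close>
     (\<forall>A\<in>Ob C. \<forall>B\<in>Ob C. \<forall>Cc\<in>Ob C. \<forall>D\<in>Ob C. \<forall>\<delta>\<in>Ex E Cc A. \<forall>\<rho>\<in>Ex E D B.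
      \<forall>a\<in>Hm C A B. \<forall>c\<in>Hm C Cc D.
        pushE C E Cc A B a \<delta> = pullE C E Cc D B c \<rho> \<longrightarrow>
        (\<forall>X d Y d'. (X, d) \<in> s Cc A \<delta> \<longrightarrow> (Y, d') \<in> s D B \<rho> \<longrightarrow>
           (\<exists>f. is_cmor C n X d Y d' f \<and> f 0 = a \<and> f (Suc n) = c))) \<and>
     \<comment> \<open>(R1)\<close>
     (\<forall>Cc\<in>Ob C. \<forall>A\<in>Ob C. \<forall>\<delta>\<in>Ex E Cc A. \<forall>X d. (X, d) \<in> s Cc A \<delta> \<longrightarrow> nexangle C E n X d \<delta>) \<and>
     \<comment> \<open>(R2)\<close>
     (\<forall>A\<in>Ob C. \<forall>Z. is_zero_obj C Z \<longrightarrow>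
        (let X = (\<lambda>i. if i \<le> 1 then A else Z) in
           (X, \<lambda>i. if i = 0 then Idn C A else Zr C (X i) (X (Suc i))) \<in> s Z A (EZr E Z A)) \<and>
        (let X = (\<lambda>i. if n \<le> i then A else Z) in
           (X, \<lambda>i. if i = n then Idn C A else Zr C (X i) (X (Suc i))) \<in> s A Z (EZr E A Z))) \<and>
     \<comment> \<open>(EA1)\<close>
     (\<forall>A\<in>Ob C. \<forall>B\<in>Ob C. \<forall>Cc\<in>Ob C. \<forall>f\<in>Hm C A B. \<forall>g\<in>Hm C B Cc.
        (inflation C E s A B f \<and> inflation C E s B Cc g \<longrightarrow> inflation C E s A Cc (Cp C A B Cc g f)) \<and>
        (deflation C E s n A B f \<and> deflation C E s n B Cc g \<longrightarrow> deflation C E s n A Cc (Cp C A B Cc g f))) \<and>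
     \<comment> \<open>(EA2)\<close>
     (\<forall>A\<in>Ob C. \<forall>Cc\<in>Ob C. \<forall>D\<in>Ob C. \<forall>\<rho>\<in>Ex E D A. \<forall>c\<in>Hm C Cc D. \<forall>X d Y d'.
        (X, d) \<in> s Cc A (pullE C E Cc D A c \<rho>) \<longrightarrow> (Y, d') \<in> s D A \<rho> \<longrightarrow>
        (\<exists>f. is_cmor C n X d Y d' f \<and> f 0 = Idn C A \<and> f (Suc n) = c \<and>
           (\<exists>M dM. is_cone C n X d Y d' f M dM \<and>
              (M, dM) \<in> s D (X 1) (pushE C E D A (X 1) (d 0) \<rho>)))) \<and>
     \<comment> \<open>(EA2op)\<close>
     (\<forall>A\<in>Ob C. \<forall>B\<in>Ob C. \<forall>Cc\<in>Ob C. \<forall>\<rho>\<in>Ex E Cc A. \<forall>a\<in>Hm C A B. \<forall>X d Y d'.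
        (X, d) \<in> s Cc B (pushE C E Cc A B a \<rho>) \<longrightarrow> (Y, d') \<in> s Cc A \<rho> \<longrightarrow>
        (\<exists>g. is_cmor C n Y d' X d g \<and> g 0 = a \<and> g (Suc n) = Idn C Cc \<and>
           (\<exists>M dM. is_cocone C n Y d' X d g M dM \<and>
              (M, dM) \<in> s (X n) A (pullE C E (X n) Cc A (d n) \<rho>))))"

section \<open>n-exangulated functors\<close>

definition is_add_functor :: "('o,'m) addcat \<Rightarrow> ('p,'q) addcat \<Rightarrow> ('o \<Rightarrow> 'p) \<Rightarrow> ('o \<Rightarrow> 'o \<Rightarrow> 'm \<Rightarrow> 'q) \<Rightarrow> bool" where
  "is_add_functor C D Fo Fm \<longleftrightarrow>
     (\<forall>X\<in>Ob C. Fo X \<in> Ob D) \<and>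
     (\<forall>X\<in>Ob C. \<forall>Y\<in>Ob C. \<forall>f\<in>Hm C X Y. Fm X Y f \<in> Hm D (Fo X) (Fo Y)) \<and>
     (\<forall>X\<in>Ob C. Fm X X (Idn C X) = Idn D (Fo X)) \<and>
     (\<forall>X\<in>Ob C. \<forall>Y\<in>Ob C. \<forall>Z\<in>Ob C. \<forall>f\<in>Hm C X Y. \<forall>g\<in>Hm C Y Z.
        Fm X Z (Cp C X Y Z g f) = Cp D (Fo X) (Fo Y) (Fo Z) (Fm Y Z g) (Fm X Y f)) \<and>
     (\<forall>X\<in>Ob C. \<forall>Y\<in>Ob C. \<forall>f\<in>Hm C X Y. \<forall>g\<in>Hm C X Y.
        Fm X Y (Ad C X Y f g) = Ad D (Fo X) (Fo Y) (Fm X Y f) (Fm X Y g))"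

definition is_nat_trans :: "('o,'m) addcat \<Rightarrow> ('o,'m,'x) bifun \<Rightarrow> ('p,'q) addcat \<Rightarrow> ('p,'q,'y) bifun \<Rightarrow> ('o \<Rightarrow> 'p) \<Rightarrow> ('o \<Rightarrow> 'o \<Rightarrow> 'm \<Rightarrow> 'q) \<Rightarrow> ('o \<Rightarrow> 'o \<Rightarrow> 'x \<Rightarrow> 'y) \<Rightarrow> bool" where
  "is_nat_trans C E D F Fo Fm \<Gamma> \<longleftrightarrow>
     (\<forall>Cc\<in>Ob C. \<forall>A\<in>Ob C. \<Gamma> Cc A \<in> hom (ext_group E Cc A) (ext_group F (Fo Cc) (Fo A))) \<and>
     (\<forall>C'\<in>Ob C. \<forall>Cc\<in>Ob C. \<forall>A\<in>Ob C. \<forall>A'\<in>Ob C. \<forall>c\<in>Hm C C' Cc. \<forall>a\<in>Hm C A A'. \<forall>\<alpha>\<in>Ex E Cc A.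
        \<Gamma> C' A' (EMp E C' Cc A A' c a \<alpha>)
          = EMp F (Fo C') (Fo Cc) (Fo A) (Fo A') (Fm C' Cc c) (Fm A A' a) (\<Gamma> Cc A \<alpha>))"

definition is_nexfun :: "('o,'m) addcat \<Rightarrow> ('o,'m,'x) bifun \<Rightarrow> ('o \<Rightarrow> 'o \<Rightarrow> 'x \<Rightarrow> ('o,'m) cx set) \<Rightarrow>
    ('p,'q) addcat \<Rightarrow> ('p,'q,'y) bifun \<Rightarrow> ('p \<Rightarrow> 'p \<Rightarrow> 'y \<Rightarrow> ('p,'q) cx set) \<Rightarrow> nat \<Rightarrow>
    ('o \<Rightarrow> 'p) \<Rightarrow> ('o \<Rightarrow> 'o \<Rightarrow> 'm \<Rightarrow> 'q) \<Rightarrow> ('o \<Rightarrow> 'o \<Rightarrow> 'x \<Rightarrow> 'y) \<Rightarrow> bool" where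
  "is_nexfun C E s D F t n Fo Fm \<Gamma> \<longleftrightarrow> is_add_functor C D Fo Fm \<and> is_nat_trans C E D F Fo Fm \<Gamma> \<and>
     (\<forall>Cc\<in>Ob C. \<forall>A\<in>Ob C. \<forall>\<delta>\<in>Ex E Cc A. \<forall>X d. (X, d) \<in> s Cc A \<delta> \<longrightarrow>
        t (Fo Cc) (Fo A) (\<Gamma> Cc A \<delta>)
          = hclass D n (Fo A) (Fo Cc) (\<lambda>i. Fo (X i)) (\<lambda>i. Fm (X i) (X (Suc i)) (d i)))"

section \<open>Idempotent completion\<close>

definition ic :: "('o,'m) addcat \<Rightarrow> ('o \<times> 'm, 'm \<times> 'm \<times> 'm) addcat" where
  "ic C = \<lparr>
     Ob = {(X, e). X \<in> Ob C \<and> e \<in> Hm C X X \<and> Cp C X X X e e = e},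
     Hm = (\<lambda>(X, eX) (Y, eY).
             if (X, eX) \<in> {(X, e). X \<in> Ob C \<and> e \<in> Hm C X X \<and> Cp C X X X e e = e} \<and>
                (Y, eY) \<in> {(X, e). X \<in> Ob C \<and> e \<in> Hm C X X \<and> Cp C X X X e e = e}
             then {(eY, f, eX) | f. f \<in> Hm C X Y \<and> Cp C X X Y f eX = f \<and> Cp C X Y Y eY f = f}
             else {}),
     Cp = (\<lambda>(X, eX) (Y, eY) (Z, eZ) (a, g, b) (a', f, b'). (eZ, Cp C X Y Z g f, eX)),
     Idn = (\<lambda>(X, e). (e, e, e)),
     Ad = (\<lambda>(X, eX) (Y, eY) (a, f, b) (a', g, b'). (eY, Ad C X Y f g, eX)),
     Zr = (\<lambda>(X, eX) (Y, eY). (eY, Zr C X Y, eX)) \<rparr>"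

definition icE :: "('o,'m) addcat \<Rightarrow> ('o,'m,'x) bifun \<Rightarrow> ('o \<times> 'm, 'm \<times> 'm \<times> 'm, 'm \<times> 'x \<times> 'm) bifun" where
  "icE C E = \<lparr>
     Ex = (\<lambda>(Cc, eC) (A, eA).
             if (Cc, eC) \<in> Ob (ic C) \<and> (A, eA) \<in> Ob (ic C)
             then {(eA, \<alpha>, eC) | \<alpha>. \<alpha> \<in> Ex E Cc A \<and> pushE C E Cc A A eA \<alpha> = \<alpha> \<and> pullE C E Cc Cc A eC \<alpha> = \<alpha>}
             else {}),
     EAd = (\<lambda>(Cc, eC) (A, eA) (x, \<alpha>, y) (x', \<beta>, y'). (eA, EAd E Cc A \<alpha> \<beta>, eC)),
     EZr = (\<lambda>(Cc, eC) (A, eA). (eA, EZr E Cc A, eC)),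
     EMp = (\<lambda>(C', eC') (Cc, eC) (A, eA) (A', eA') (x, c, y) (x', a, y') (u, \<alpha>, v).
              (x', EMp E C' Cc A A' c a \<alpha>, y)) \<rparr>"

definition lift_cx :: "('o,'m) addcat \<Rightarrow> (nat \<Rightarrow> 'o) \<Rightarrow> (nat \<Rightarrow> 'm) \<Rightarrow> (nat \<Rightarrow> 'm) \<Rightarrow> ('o \<times> 'm, 'm \<times> 'm \<times> 'm) cx" where
  "lift_cx C X d e = (\<lambda>i. (X i, e i), \<lambda>i. (e (Suc i), Cp C (X i) (X (Suc i)) (X (Suc i)) (e (Suc i)) (d i), e i))"

text \<open>s~(e_A, alpha, e_C): the homotopy classes of (X, e) for X in s(alpha) and e an idempotent
  endomorphism of X with e_0 = e_A, e_{n+1} = e_C (union over all such choices)\<close>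
definition ics :: "('o,'m) addcat \<Rightarrow> ('o \<Rightarrow> 'o \<Rightarrow> 'x \<Rightarrow> ('o,'m) cx set) \<Rightarrow> nat \<Rightarrow>
    ('o \<times> 'm) \<Rightarrow> ('o \<times> 'm) \<Rightarrow> ('m \<times> 'x \<times> 'm) \<Rightarrow> ('o \<times> 'm, 'm \<times> 'm \<times> 'm) cx set" where
  "ics C s n = (\<lambda>(Cc, eC) (A, eA) (x, \<alpha>, y).
     {Z. \<exists>X d e. (X, d) \<in> s Cc A \<alpha> \<and> is_cmor C n X d X d e \<and>
          (\<forall>i\<le>Suc n. Cp C (X i) (X i) (X i) (e i) (e i) = e i) \<and>
          e 0 = eA \<and> e (Suc n) = eC \<and>
          heq (ic C) n (A, eA) (Cc, eC) (fst (lift_cx C X d e)) (snd (lift_cx C X d e)) (fst Z) (snd Z)})"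

definition icFo :: "('o \<Rightarrow> 'p) \<Rightarrow> ('o \<Rightarrow> 'o \<Rightarrow> 'm \<Rightarrow> 'q) \<Rightarrow> ('o \<times> 'm) \<Rightarrow> ('p \<times> 'q)" where
  "icFo Fo Fm = (\<lambda>(X, e). (Fo X, Fm X X e))"

definition icFm :: "('o \<Rightarrow> 'o \<Rightarrow> 'm \<Rightarrow> 'q) \<Rightarrow> ('o \<times> 'm) \<Rightarrow> ('o \<times> 'm) \<Rightarrow> ('m \<times> 'm \<times> 'm) \<Rightarrow> ('q \<times> 'q \<times> 'q)" where
  "icFm Fm = (\<lambda>(X, eX) (Y, eY) (a, f, b). (Fm Y Y a, Fm X Y f, Fm X X b))"

definition ic\<Gamma> :: "('o \<Rightarrow> 'o \<Rightarrow> 'm \<Rightarrow> 'q) \<Rightarrow> ('o \<Rightarrow> 'o \<Rightarrow> 'x \<Rightarrow> 'y) \<Rightarrow> ('o \<times> 'm) \<Rightarrow> ('o \<times> 'm) \<Rightarrow> ('m \<times> 'x \<times> 'm) \<Rightarrow> ('q \<times> 'y \<times> 'q)" where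
  "ic\<Gamma> Fm \<Gamma> = (\<lambda>(Cc, eC) (A, eA) (x, \<alpha>, y). (Fm A A x, \<Gamma> Cc A \<alpha>, Fm Cc Cc y))"

end

theory Submission
  imports Defs
begin


locale padd = fixes C :: "('o,'m) addcat" assumes pa: "is_preadditive C"
begin

lemma cat: "is_category C" using pa unfolding is_preadditive_def by blast

lemma hm_obs: "f \<in> Hm C X Y \<Longrightarrow> X \<in> Ob C \<and> Y \<in> Ob C"
  using cat unfolding is_category_def by blast

lemma idn_hm[simp]: "X \<in> Ob C \<Longrightarrow> Idn C X \<in> Hm C X X"
  using cat unfolding is_category_def by blast

lemma cp_hm[simp]: "f \<in> Hm C X Y \<Longrightarrow> g \<in> Hm C Y Z \<Longrightarrow> Cp C X Y Z g f \<in> Hm C X Z"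
  using cat hm_obs unfolding is_category_def by metis

lemma cp_assoc: "f \<in> Hm C X Y \<Longrightarrow> g \<in> Hm C Y Z \<Longrightarrow> h \<in> Hm C Z W \<Longrightarrow>
   Cp C X Z W h (Cp C X Y Z g f) = Cp C X Y W (Cp C Y Z W h g) f"
  using cat hm_obs unfolding is_category_def by metis

lemma cp_idn_l[simp]: "f \<in> Hm C X Y \<Longrightarrow> Cp C X Y Y (Idn C Y) f = f"
  using cat hm_obs unfolding is_category_def by metis
lemma cp_idn_r[simp]: "f \<in> Hm C X Y \<Longrightarrow> Cp C X X Y f (Idn C X) = f"
  using cat hm_obs unfolding is_category_def by metis

lemma cg: "X \<in> Ob C \<Longrightarrow> Y \<in> Ob C \<Longrightarrow> comm_group (hom_group C X Y)"
  using pa unfolding is_preadditive_def by blast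

lemma cgh: "f \<in> Hm C X Y \<Longrightarrow> comm_group (hom_group C X Y)"
  using cg hm_obs by blast

lemma hg_simps[simp]: "carrier (hom_group C X Y) = Hm C X Y" "mult (hom_group C X Y) = Ad C X Y"
  "one (hom_group C X Y) = Zr C X Y"
  by (simp_all add: hom_group_def)

definition ng :: "'o \<Rightarrow> 'o \<Rightarrow> 'm \<Rightarrow> 'm" where
  "ng X Y f = inv\<^bsub>hom_group C X Y\<^esub> f"


lemma ad_hm[simp]: "f \<in> Hm C X Y \<Longrightarrow> g \<in> Hm C X Y \<Longrightarrow> Ad C X Y f g \<in> Hm C X Y"
proof - assume a: "f \<in> Hm C X Y" "g \<in> Hm C X Y"
  interpret G: comm_group "hom_group C X Y" using cgh a by blast
  show ?thesis using G.m_closed[of f g] a by simp qed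

lemma zr_hm[simp]: "X \<in> Ob C \<Longrightarrow> Y \<in> Ob C \<Longrightarrow> Zr C X Y \<in> Hm C X Y"
proof - assume a: "X \<in> Ob C" "Y \<in> Ob C"
  interpret G: comm_group "hom_group C X Y" using cg a by blast
  show ?thesis using G.one_closed by simp qed

lemma ng_hm[simp]: "f \<in> Hm C X Y \<Longrightarrow> ng X Y f \<in> Hm C X Y"
proof - assume a: "f \<in> Hm C X Y"
  interpret G: comm_group "hom_group C X Y" using cgh a by blast
  show ?thesis using G.inv_closed[of f] a by (simp add: ng_def) qed

lemma ad_assoc: "f \<in> Hm C X Y \<Longrightarrow> g \<in> Hm C X Y \<Longrightarrow> h \<in> Hm C X Y \<Longrightarrow>
   Ad C X Y (Ad C X Y f g) h = Ad C X Y f (Ad C X Y g h)"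
proof - assume a: "f \<in> Hm C X Y" "g \<in> Hm C X Y" "h \<in> Hm C X Y"
  interpret G: comm_group "hom_group C X Y" using cgh a by blast
  show ?thesis using G.m_assoc[of f g h] a by simp qed

lemma ad_comm: "f \<in> Hm C X Y \<Longrightarrow> g \<in> Hm C X Y \<Longrightarrow> Ad C X Y f g = Ad C X Y g f"
proof - assume a: "f \<in> Hm C X Y" "g \<in> Hm C X Y"
  interpret G: comm_group "hom_group C X Y" using cgh a by blast
  show ?thesis using G.m_comm[of f g] a by simp qed

lemma ad_lcomm: "f \<in> Hm C X Y \<Longrightarrow> g \<in> Hm C X Y \<Longrightarrow> h \<in> Hm C X Y \<Longrightarrow>
   Ad C X Y f (Ad C X Y g h) = Ad C X Y g (Ad C X Y f h)"
proof - assume a: "f \<in> Hm C X Y" "g \<in> Hm C X Y" "h \<in> Hm C X Y"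
  interpret G: comm_group "hom_group C X Y" using cgh a by blast
  show ?thesis using G.m_lcomm[of f g h] a by simp qed

lemma ad_zr_l[simp]: "f \<in> Hm C X Y \<Longrightarrow> Ad C X Y (Zr C X Y) f = f"
proof - assume a: "f \<in> Hm C X Y"
  interpret G: comm_group "hom_group C X Y" using cgh a by blast
  show ?thesis using G.l_one[of f] a by simp qed

lemma ad_zr_r[simp]: "f \<in> Hm C X Y \<Longrightarrow> Ad C X Y f (Zr C X Y) = f"
proof - assume a: "f \<in> Hm C X Y"
  interpret G: comm_group "hom_group C X Y" using cgh a by blast
  show ?thesis using G.r_one[of f] a by simp qed

lemma ad_ng_r[simp]: "f \<in> Hm C X Y \<Longrightarrow> Ad C X Y f (ng X Y f) = Zr C X Y"
proof - assume a: "f \<in> Hm C X Y"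
  interpret G: comm_group "hom_group C X Y" using cgh a by blast
  show ?thesis using G.r_inv[of f] a by (simp add: ng_def) qed

lemma ad_ng_l[simp]: "f \<in> Hm C X Y \<Longrightarrow> Ad C X Y (ng X Y f) f = Zr C X Y"
proof - assume a: "f \<in> Hm C X Y"
  interpret G: comm_group "hom_group C X Y" using cgh a by blast
  show ?thesis using G.l_inv[of f] a by (simp add: ng_def) qed

lemma ad_cancel: "f \<in> Hm C X Y \<Longrightarrow> g \<in> Hm C X Y \<Longrightarrow> h \<in> Hm C X Y \<Longrightarrow>
   Ad C X Y f g = Ad C X Y f h \<Longrightarrow> g = h"
proof - assume a: "f \<in> Hm C X Y" "g \<in> Hm C X Y" "h \<in> Hm C X Y" "Ad C X Y f g = Ad C X Y f h"
  interpret G: comm_group "hom_group C X Y" using cgh a by blast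
  show ?thesis using G.Units_l_cancel[of f g h] G.Units_eq a by simp qed

lemma ad_ng_cancel1[simp]: "f \<in> Hm C X Y \<Longrightarrow> g \<in> Hm C X Y \<Longrightarrow> Ad C X Y f (Ad C X Y (ng X Y f) g) = g"
  by (simp flip: ad_assoc)
lemma ad_ng_cancel2[simp]: "f \<in> Hm C X Y \<Longrightarrow> g \<in> Hm C X Y \<Longrightarrow> Ad C X Y (ng X Y f) (Ad C X Y f g) = g"
  by (simp flip: ad_assoc)

lemma ng_unique: "f \<in> Hm C X Y \<Longrightarrow> g \<in> Hm C X Y \<Longrightarrow> Ad C X Y f g = Zr C X Y \<Longrightarrow> g = ng X Y f"
  using ad_cancel[of f X Y g "ng X Y f"] by simp

lemma ng_ng[simp]: "f \<in> Hm C X Y \<Longrightarrow> ng X Y (ng X Y f) = f"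
  using ng_unique[of "ng X Y f" X Y f] by simp

lemma ng_zr[simp]: "X \<in> Ob C \<Longrightarrow> Y \<in> Ob C \<Longrightarrow> ng X Y (Zr C X Y) = Zr C X Y"
  using ng_unique[of "Zr C X Y" X Y "Zr C X Y"] by simp

lemma ng_ad: "f \<in> Hm C X Y \<Longrightarrow> g \<in> Hm C X Y \<Longrightarrow> ng X Y (Ad C X Y f g) = Ad C X Y (ng X Y f) (ng X Y g)"
proof - assume a: "f \<in> Hm C X Y" "g \<in> Hm C X Y"
  interpret G: comm_group "hom_group C X Y" using cgh a by blast
  show ?thesis using G.inv_mult[of f g] a by (simp add: ng_def) qed

lemma cp_ad_r: "f \<in> Hm C X Y \<Longrightarrow> f' \<in> Hm C X Y \<Longrightarrow> g \<in> Hm C Y Z \<Longrightarrow>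
   Cp C X Y Z g (Ad C X Y f f') = Ad C X Z (Cp C X Y Z g f) (Cp C X Y Z g f')"
proof - assume a: "f \<in> Hm C X Y" "f' \<in> Hm C X Y" "g \<in> Hm C Y Z"
  then have "X \<in> Ob C" "Y \<in> Ob C" "Z \<in> Ob C" using hm_obs by auto
  then show ?thesis using pa a unfolding is_preadditive_def by blast qed

lemma cp_ad_l: "f \<in> Hm C X Y \<Longrightarrow> g \<in> Hm C Y Z \<Longrightarrow> g' \<in> Hm C Y Z \<Longrightarrow>
   Cp C X Y Z (Ad C Y Z g g') f = Ad C X Z (Cp C X Y Z g f) (Cp C X Y Z g' f)"
proof - assume a: "f \<in> Hm C X Y" "g \<in> Hm C Y Z" "g' \<in> Hm C Y Z"
  then have "X \<in> Ob C" "Y \<in> Ob C" "Z \<in> Ob C" using hm_obs by auto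
  then show ?thesis using pa a unfolding is_preadditive_def by blast qed

lemma cp_zr_r[simp]: "X \<in> Ob C \<Longrightarrow> g \<in> Hm C Y Z \<Longrightarrow> Cp C X Y Z g (Zr C X Y) = Zr C X Z"
proof -
  assume X: "X \<in> Ob C" and g: "g \<in> Hm C Y Z"
  have Y: "Y \<in> Ob C" "Z \<in> Ob C" using g hm_obs by auto
  have "Cp C X Y Z g (Zr C X Y) = Cp C X Y Z g (Ad C X Y (Zr C X Y) (Zr C X Y))" using X Y by simp
  also have "\<dots> = Ad C X Z (Cp C X Y Z g (Zr C X Y)) (Cp C X Y Z g (Zr C X Y))"
    using X Y g by (intro cp_ad_r; simp)
  finally have e: "Ad C X Z (Cp C X Y Z g (Zr C X Y)) (Zr C X Z) = Ad C X Z (Cp C X Y Z g (Zr C X Y)) (Cp C X Y Z g (Zr C X Y))"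
    using X Y g by simp
  show ?thesis using ad_cancel[OF _ _ _ e] X Y g by simp
qed

lemma cp_zr_l[simp]: "f \<in> Hm C X Y \<Longrightarrow> Z \<in> Ob C \<Longrightarrow> Cp C X Y Z (Zr C Y Z) f = Zr C X Z"
proof -
  assume Z: "Z \<in> Ob C" and f: "f \<in> Hm C X Y"
  have Y: "X \<in> Ob C" "Y \<in> Ob C" using f hm_obs by auto
  have "Cp C X Y Z (Zr C Y Z) f = Cp C X Y Z (Ad C Y Z (Zr C Y Z) (Zr C Y Z)) f" using Z Y by simp
  also have "\<dots> = Ad C X Z (Cp C X Y Z (Zr C Y Z) f) (Cp C X Y Z (Zr C Y Z) f)"
    using Z Y f by (intro cp_ad_l; simp)
  finally have e: "Ad C X Z (Cp C X Y Z (Zr C Y Z) f) (Zr C X Z) = Ad C X Z (Cp C X Y Z (Zr C Y Z) f) (Cp C X Y Z (Zr C Y Z) f)"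
    using Z Y f by simp
  show ?thesis using ad_cancel[OF _ _ _ e] Z Y f by simp
qed

lemma cp_ng_r: "f \<in> Hm C X Y \<Longrightarrow> g \<in> Hm C Y Z \<Longrightarrow> Cp C X Y Z g (ng X Y f) = ng X Z (Cp C X Y Z g f)"
proof - assume a: "f \<in> Hm C X Y" "g \<in> Hm C Y Z"
  then have "X \<in> Ob C" "Y \<in> Ob C" "Z \<in> Ob C" using hm_obs by auto
  then show ?thesis using a ng_unique[of "Cp C X Y Z g f" X Z "Cp C X Y Z g (ng X Y f)"]
    by (simp add: cp_ad_r[symmetric]) qed

lemma cp_ng_l: "f \<in> Hm C X Y \<Longrightarrow> g \<in> Hm C Y Z \<Longrightarrow> Cp C X Y Z (ng Y Z g) f = ng X Z (Cp C X Y Z g f)"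
proof - assume a: "f \<in> Hm C X Y" "g \<in> Hm C Y Z"
  then have "X \<in> Ob C" "Y \<in> Ob C" "Z \<in> Ob C" using hm_obs by auto
  then show ?thesis using a ng_unique[of "Cp C X Y Z g f" X Z "Cp C X Y Z (ng Y Z g) f"]
    by (simp add: cp_ad_l[symmetric]) qed

end


context padd begin

definition hok :: "nat \<Rightarrow> (nat \<Rightarrow> 'o) \<Rightarrow> (nat \<Rightarrow> 'o) \<Rightarrow> (nat \<Rightarrow> 'm) \<Rightarrow> bool" where
  "hok n X Y \<phi> \<longleftrightarrow> (\<forall>i. 1 \<le> i \<and> i \<le> Suc n \<longrightarrow> \<phi> i \<in> Hm C (X i) (Y (i - 1)))"

definition hterm :: "nat \<Rightarrow> (nat \<Rightarrow> 'o) \<Rightarrow> (nat \<Rightarrow> 'm) \<Rightarrow> (nat \<Rightarrow> 'o) \<Rightarrow> (nat \<Rightarrow> 'm) \<Rightarrow> (nat \<Rightarrow> 'm) \<Rightarrow> nat \<Rightarrow> 'm" where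
  "hterm n X d Y d' \<phi> i = Ad C (X i) (Y i)
           (if i = 0 then Zr C (X i) (Y i) else Cp C (X i) (Y (i - 1)) (Y i) (d' (i - 1)) (\<phi> i))
           (if i = Suc n then Zr C (X i) (Y i) else Cp C (X i) (X (Suc i)) (Y i) (\<phi> (Suc i)) (d i))"

lemma homotopic_alt: "homotopic C n X d Y d' f g \<longleftrightarrow>
   (\<exists>\<phi>. hok n X Y \<phi> \<and> (\<forall>i\<le>Suc n. f i = Ad C (X i) (Y i) (g i) (hterm n X d Y d' \<phi> i)))"
  unfolding homotopic_def hok_def hterm_def by simp

definition mor :: "nat \<Rightarrow> (nat \<Rightarrow> 'o) \<Rightarrow> (nat \<Rightarrow> 'o) \<Rightarrow> (nat \<Rightarrow> 'm) \<Rightarrow> bool" where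
  "mor n X Y f \<longleftrightarrow> (\<forall>i\<le>Suc n. f i \<in> Hm C (X i) (Y i))"

lemma cx_ob: "is_cx C n X d \<Longrightarrow> i \<le> Suc n \<Longrightarrow> X i \<in> Ob C"
  unfolding is_cx_def by blast
lemma cx_d: "is_cx C n X d \<Longrightarrow> i \<le> n \<Longrightarrow> d i \<in> Hm C (X i) (X (Suc i))"
  unfolding is_cx_def by blast
lemma cx_dd: "is_cx C n X d \<Longrightarrow> i < n \<Longrightarrow> Cp C (X i) (X (Suc i)) (X (Suc (Suc i))) (d (Suc i)) (d i) = Zr C (X i) (X (Suc (Suc i)))"
  unfolding is_cx_def by blast

lemma cmor_mor: "is_cmor C n X d Y d' f \<Longrightarrow> mor n X Y f"
  unfolding is_cmor_def mor_def by blast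
lemma mor_hm: "mor n X Y f \<Longrightarrow> i \<le> Suc n \<Longrightarrow> f i \<in> Hm C (X i) (Y i)"
  unfolding mor_def by blast
lemma cmor_comm: "is_cmor C n X d Y d' f \<Longrightarrow> i \<le> n \<Longrightarrow>
   Cp C (X i) (X (Suc i)) (Y (Suc i)) (f (Suc i)) (d i) = Cp C (X i) (Y i) (Y (Suc i)) (d' i) (f i)"
  unfolding is_cmor_def by blast
lemma hok_hm: "hok n X Y \<phi> \<Longrightarrow> 1 \<le> i \<Longrightarrow> i \<le> Suc n \<Longrightarrow> \<phi> i \<in> Hm C (X i) (Y (i - 1))"
  unfolding hok_def by blast

lemma hterm_hm:
  assumes X: "is_cx C n X d" and Y: "is_cx C n Y d'" and h: "hok n X Y \<phi>" and i: "i \<le> Suc n"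
  shows "hterm n X d Y d' \<phi> i \<in> Hm C (X i) (Y i)"
proof -
  have o: "X i \<in> Ob C" "Y i \<in> Ob C" using X Y i cx_ob by auto
  have a: "(if i = 0 then Zr C (X i) (Y i) else Cp C (X i) (Y (i - 1)) (Y i) (d' (i - 1)) (\<phi> i)) \<in> Hm C (X i) (Y i)"
  proof (cases "i = 0")
    case False
    then have "d' (i - 1) \<in> Hm C (Y (i - 1)) (Y i)" using cx_d[OF Y, of "i - 1"] i by simp
    then show ?thesis using False hok_hm[OF h, of i] i by simp
  qed (use o in simp)
  have b: "(if i = Suc n then Zr C (X i) (Y i) else Cp C (X i) (X (Suc i)) (Y i) (\<phi> (Suc i)) (d i)) \<in> Hm C (X i) (Y i)"
  proof (cases "i = Suc n")
    case False
    then have "d i \<in> Hm C (X i) (X (Suc i))" using cx_d[OF X, of i] i by simp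
    then show ?thesis using False hok_hm[OF h, of "Suc i"] i by simp
  qed (use o in simp)
  show ?thesis unfolding hterm_def using a b by simp
qed

definition cad :: "(nat \<Rightarrow> 'o) \<Rightarrow> (nat \<Rightarrow> 'o) \<Rightarrow> (nat \<Rightarrow> 'm) \<Rightarrow> (nat \<Rightarrow> 'm) \<Rightarrow> nat \<Rightarrow> 'm" where
  "cad X Y f g = (\<lambda>i. Ad C (X i) (Y i) (f i) (g i))"
definition cng :: "(nat \<Rightarrow> 'o) \<Rightarrow> (nat \<Rightarrow> 'o) \<Rightarrow> (nat \<Rightarrow> 'm) \<Rightarrow> nat \<Rightarrow> 'm" where
  "cng X Y f = (\<lambda>i. ng (X i) (Y i) (f i))"
definition czr :: "(nat \<Rightarrow> 'o) \<Rightarrow> (nat \<Rightarrow> 'o) \<Rightarrow> nat \<Rightarrow> 'm" where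
  "czr X Y = (\<lambda>i. Zr C (X i) (Y i))"
definition ccp :: "(nat \<Rightarrow> 'o) \<Rightarrow> (nat \<Rightarrow> 'o) \<Rightarrow> (nat \<Rightarrow> 'o) \<Rightarrow> (nat \<Rightarrow> 'm) \<Rightarrow> (nat \<Rightarrow> 'm) \<Rightarrow> nat \<Rightarrow> 'm" where
  "ccp X Y Z g f = (\<lambda>i. Cp C (X i) (Y i) (Z i) (g i) (f i))"
definition cid :: "(nat \<Rightarrow> 'o) \<Rightarrow> nat \<Rightarrow> 'm" where
  "cid X = (\<lambda>i. Idn C (X i))"

definition hsh :: "(nat \<Rightarrow> 'o) \<Rightarrow> (nat \<Rightarrow> 'o) \<Rightarrow> (nat \<Rightarrow> 'o) \<Rightarrow> (nat \<Rightarrow> 'm) \<Rightarrow> (nat \<Rightarrow> 'm) \<Rightarrow> nat \<Rightarrow> 'm" where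
  "hsh X Y Z h \<phi> = (\<lambda>i. Cp C (X i) (Y (i - 1)) (Z (i - 1)) (h (i - 1)) (\<phi> i))"
definition hpre :: "(nat \<Rightarrow> 'o) \<Rightarrow> (nat \<Rightarrow> 'o) \<Rightarrow> (nat \<Rightarrow> 'o) \<Rightarrow> (nat \<Rightarrow> 'm) \<Rightarrow> (nat \<Rightarrow> 'm) \<Rightarrow> nat \<Rightarrow> 'm" where
  "hpre W X Y \<phi> k = (\<lambda>i. Cp C (W i) (X i) (Y (i - 1)) (\<phi> i) (k i))"
definition had :: "(nat \<Rightarrow> 'o) \<Rightarrow> (nat \<Rightarrow> 'o) \<Rightarrow> (nat \<Rightarrow> 'm) \<Rightarrow> (nat \<Rightarrow> 'm) \<Rightarrow> nat \<Rightarrow> 'm" where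
  "had X Y \<phi> \<psi> = (\<lambda>i. Ad C (X i) (Y (i - 1)) (\<phi> i) (\<psi> i))"
definition hng :: "(nat \<Rightarrow> 'o) \<Rightarrow> (nat \<Rightarrow> 'o) \<Rightarrow> (nat \<Rightarrow> 'm) \<Rightarrow> nat \<Rightarrow> 'm" where
  "hng X Y \<phi> = (\<lambda>i. ng (X i) (Y (i - 1)) (\<phi> i))"

lemma hok_had: "hok n X Y \<phi> \<Longrightarrow> hok n X Y \<psi> \<Longrightarrow> hok n X Y (had X Y \<phi> \<psi>)"
  unfolding hok_def had_def by simp
lemma hok_hng: "hok n X Y \<phi> \<Longrightarrow> hok n X Y (hng X Y \<phi>)"
  unfolding hok_def hng_def by simp
lemma hok_hsh: "hok n X Y \<phi> \<Longrightarrow> mor n Y Z h \<Longrightarrow> hok n X Z (hsh X Y Z h \<phi>)"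
  unfolding hok_def hsh_def mor_def
proof (intro allI impI)
  fix i assume a: "\<forall>i. 1 \<le> i \<and> i \<le> Suc n \<longrightarrow> \<phi> i \<in> Hm C (X i) (Y (i - 1))" "\<forall>i\<le>Suc n. h i \<in> Hm C (Y i) (Z i)"
    "1 \<le> i \<and> i \<le> Suc n"
  then have "i - 1 \<le> Suc n" by linarith
  then show "Cp C (X i) (Y (i - 1)) (Z (i - 1)) (h (i - 1)) (\<phi> i) \<in> Hm C (X i) (Z (i - 1))"
    using a by simp
qed
lemma hok_hpre: "hok n X Y \<phi> \<Longrightarrow> mor n W X k \<Longrightarrow> hok n W Y (hpre W X Y \<phi> k)"
  unfolding hok_def hpre_def mor_def by simp
lemma hok_zr: "is_cx C n X d \<Longrightarrow> is_cx C n Y d' \<Longrightarrow> hok n X Y (\<lambda>i. Zr C (X i) (Y (i - 1)))"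
  unfolding hok_def
proof (intro allI impI)
  fix i assume a: "is_cx C n X d" "is_cx C n Y d'" "1 \<le> i \<and> i \<le> Suc n"
  then show "Zr C (X i) (Y (i - 1)) \<in> Hm C (X i) (Y (i - 1))"
  proof -
    have "i - 1 \<le> Suc n" using a(3) by linarith
    then show ?thesis using cx_ob[OF a(1), of i] cx_ob[OF a(2), of "i - 1"] a(3) by simp
  qed
qed


lemma ad_4: "a \<in> Hm C X Y \<Longrightarrow> b \<in> Hm C X Y \<Longrightarrow> c \<in> Hm C X Y \<Longrightarrow> e \<in> Hm C X Y \<Longrightarrow>
  Ad C X Y (Ad C X Y a b) (Ad C X Y c e) = Ad C X Y (Ad C X Y a c) (Ad C X Y b e)"
  by (simp add: ad_assoc ad_lcomm[of b X Y c])

lemma hterm_cases: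
  assumes "i \<le> Suc n"
    and "i = 0 \<Longrightarrow> i \<noteq> Suc n \<Longrightarrow> P"
    and "i = Suc n \<Longrightarrow> i \<noteq> 0 \<Longrightarrow> P"
    and "i \<noteq> 0 \<Longrightarrow> i \<noteq> Suc n \<Longrightarrow> i \<le> n \<Longrightarrow> P"
  shows P
  using assms by (cases "i = 0"; cases "i = Suc n") auto

lemma hterm_0: "hterm n X d Y d' \<phi> 0 = Ad C (X 0) (Y 0) (Zr C (X 0) (Y 0)) (Cp C (X 0) (X 1) (Y 0) (\<phi> 1) (d 0))"
  unfolding hterm_def by simp
lemma hterm_top: "hterm n X d Y d' \<phi> (Suc n) = Ad C (X (Suc n)) (Y (Suc n)) (Cp C (X (Suc n)) (Y n) (Y (Suc n)) (d' n) (\<phi> (Suc n))) (Zr C (X (Suc n)) (Y (Suc n)))"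
  unfolding hterm_def by simp
lemma hterm_mid: "i \<noteq> 0 \<Longrightarrow> i \<noteq> Suc n \<Longrightarrow> hterm n X d Y d' \<phi> i = Ad C (X i) (Y i) (Cp C (X i) (Y (i - 1)) (Y i) (d' (i - 1)) (\<phi> i)) (Cp C (X i) (X (Suc i)) (Y i) (\<phi> (Suc i)) (d i))"
  unfolding hterm_def by simp

lemma hterm_had:
  assumes X: "is_cx C n X d" and Y: "is_cx C n Y d'" and h1: "hok n X Y \<phi>" and h2: "hok n X Y \<psi>" and i: "i \<le> Suc n"
  shows "hterm n X d Y d' (had X Y \<phi> \<psi>) i = Ad C (X i) (Y i) (hterm n X d Y d' \<phi> i) (hterm n X d Y d' \<psi> i)"
  using i
proof (rule hterm_cases)
  assume a: "i = 0" "i \<noteq> Suc n"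
  have m: "\<phi> 1 \<in> Hm C (X 1) (Y 0)" "\<psi> 1 \<in> Hm C (X 1) (Y 0)" "d 0 \<in> Hm C (X 0) (X 1)"
    using hok_hm[OF h1, of 1] hok_hm[OF h2, of 1] cx_d[OF X, of 0] a by auto
  show ?thesis using a m by (simp add: hterm_0 had_def cp_ad_l)
next
  assume a: "i = Suc n" "i \<noteq> 0"
  have m: "\<phi> (Suc n) \<in> Hm C (X (Suc n)) (Y n)" "\<psi> (Suc n) \<in> Hm C (X (Suc n)) (Y n)" "d' n \<in> Hm C (Y n) (Y (Suc n))"
    using hok_hm[OF h1, of "Suc n"] hok_hm[OF h2, of "Suc n"] cx_d[OF Y, of n] by auto
  show ?thesis using a m by (simp add: hterm_top had_def cp_ad_r)
next
  assume a: "i \<noteq> 0" "i \<noteq> Suc n" "i \<le> n"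
  have m: "\<phi> i \<in> Hm C (X i) (Y (i - 1))" "\<psi> i \<in> Hm C (X i) (Y (i - 1))" "d' (i - 1) \<in> Hm C (Y (i - 1)) (Y i)"
    "\<phi> (Suc i) \<in> Hm C (X (Suc i)) (Y i)" "\<psi> (Suc i) \<in> Hm C (X (Suc i)) (Y i)" "d i \<in> Hm C (X i) (X (Suc i))"
    using hok_hm[OF h1, of i] hok_hm[OF h2, of i] hok_hm[OF h1, of "Suc i"] hok_hm[OF h2, of "Suc i"]
      cx_d[OF Y, of "i - 1"] cx_d[OF X, of i] a by auto
  show ?thesis using a m by (simp add: hterm_mid had_def cp_ad_r cp_ad_l ad_4)
qed

lemma hterm_hng:
  assumes X: "is_cx C n X d" and Y: "is_cx C n Y d'" and h1: "hok n X Y \<phi>" and i: "i \<le> Suc n"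
  shows "hterm n X d Y d' (hng X Y \<phi>) i = ng (X i) (Y i) (hterm n X d Y d' \<phi> i)"
  using i
proof (rule hterm_cases)
  assume a: "i = 0" "i \<noteq> Suc n"
  have m: "\<phi> 1 \<in> Hm C (X 1) (Y 0)" "d 0 \<in> Hm C (X 0) (X 1)"
    using hok_hm[OF h1, of 1] cx_d[OF X, of 0] a by auto
  show ?thesis using a m by (simp add: hterm_0 hng_def cp_ng_l)
next
  assume a: "i = Suc n" "i \<noteq> 0"
  have m: "\<phi> (Suc n) \<in> Hm C (X (Suc n)) (Y n)" "d' n \<in> Hm C (Y n) (Y (Suc n))"
    using hok_hm[OF h1, of "Suc n"] cx_d[OF Y, of n] by auto
  show ?thesis using a m by (simp add: hterm_top hng_def cp_ng_r)
next
  assume a: "i \<noteq> 0" "i \<noteq> Suc n" "i \<le> n"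
  have m: "\<phi> i \<in> Hm C (X i) (Y (i - 1))" "d' (i - 1) \<in> Hm C (Y (i - 1)) (Y i)"
    "\<phi> (Suc i) \<in> Hm C (X (Suc i)) (Y i)" "d i \<in> Hm C (X i) (X (Suc i))"
    using hok_hm[OF h1, of i] hok_hm[OF h1, of "Suc i"]
      cx_d[OF Y, of "i - 1"] cx_d[OF X, of i] a by auto
  show ?thesis using a m by (simp add: hterm_mid hng_def cp_ng_r cp_ng_l ng_ad)
qed

lemma hterm_zr:
  assumes X: "is_cx C n X d" and Y: "is_cx C n Y d'" and i: "i \<le> Suc n"
  shows "hterm n X d Y d' (\<lambda>i. Zr C (X i) (Y (i - 1))) i = Zr C (X i) (Y i)"
  using i
proof (rule hterm_cases)
  assume a: "i = 0" "i \<noteq> Suc n"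
  have m: "d 0 \<in> Hm C (X 0) (X 1)" "Y 0 \<in> Ob C" using cx_d[OF X, of 0] cx_ob[OF Y, of 0] by auto
  show ?thesis using a m hm_obs by (simp add: hterm_0)
next
  assume a: "i = Suc n" "i \<noteq> 0"
  have m: "d' n \<in> Hm C (Y n) (Y (Suc n))" "X (Suc n) \<in> Ob C" using cx_d[OF Y, of n] cx_ob[OF X, of "Suc n"] by auto
  show ?thesis using a m hm_obs by (simp add: hterm_top)
next
  assume a: "i \<noteq> 0" "i \<noteq> Suc n" "i \<le> n"
  have m: "d' (i - 1) \<in> Hm C (Y (i - 1)) (Y i)" "d i \<in> Hm C (X i) (X (Suc i))"
    using cx_d[OF Y, of "i - 1"] cx_d[OF X, of i] a by auto
  show ?thesis using a m hm_obs by (simp add: hterm_mid)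
qed

lemma hterm_post:
  assumes X: "is_cx C n X d" and Y: "is_cx C n Y d'" and Z: "is_cx C n Z d''" and h1: "hok n X Y \<phi>"
    and hm: "is_cmor C n Y d' Z d'' h" and i: "i \<le> Suc n"
  shows "Cp C (X i) (Y i) (Z i) (h i) (hterm n X d Y d' \<phi> i) = hterm n X d Z d'' (hsh X Y Z h \<phi>) i"
  using i
proof (rule hterm_cases)
  assume a: "i = 0" "i \<noteq> Suc n"
  have m: "\<phi> 1 \<in> Hm C (X 1) (Y 0)" "d 0 \<in> Hm C (X 0) (X 1)" "h 0 \<in> Hm C (Y 0) (Z 0)"
    using hok_hm[OF h1, of 1] cx_d[OF X, of 0] mor_hm[OF cmor_mor[OF hm], of 0] a by auto
  show ?thesis using a m by (simp add: hterm_0 hsh_def cp_assoc)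
next
  assume a: "i = Suc n" "i \<noteq> 0"
  have m: "\<phi> (Suc n) \<in> Hm C (X (Suc n)) (Y n)" "d' n \<in> Hm C (Y n) (Y (Suc n))"
    "h n \<in> Hm C (Y n) (Z n)" "h (Suc n) \<in> Hm C (Y (Suc n)) (Z (Suc n))" "d'' n \<in> Hm C (Z n) (Z (Suc n))"
    using hok_hm[OF h1, of "Suc n"] cx_d[OF Y, of n] cx_d[OF Z, of n] mor_hm[OF cmor_mor[OF hm], of n]
     mor_hm[OF cmor_mor[OF hm], of "Suc n"] by auto
  have c: "Cp C (Y n) (Y (Suc n)) (Z (Suc n)) (h (Suc n)) (d' n) = Cp C (Y n) (Z n) (Z (Suc n)) (d'' n) (h n)"
    using cmor_comm[OF hm, of n] by simp
  show ?thesis using a m hm_obs[OF m(1)] by (simp add: hterm_top hsh_def cp_assoc c)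
next
  assume a: "i \<noteq> 0" "i \<noteq> Suc n" "i \<le> n"
  then obtain j where j: "i = Suc j" by (cases i) auto
  have m: "\<phi> (Suc j) \<in> Hm C (X (Suc j)) (Y j)" "d' j \<in> Hm C (Y j) (Y (Suc j))"
    "\<phi> (Suc (Suc j)) \<in> Hm C (X (Suc (Suc j))) (Y (Suc j))" "d (Suc j) \<in> Hm C (X (Suc j)) (X (Suc (Suc j)))"
    "h j \<in> Hm C (Y j) (Z j)" "h (Suc j) \<in> Hm C (Y (Suc j)) (Z (Suc j))" "d'' j \<in> Hm C (Z j) (Z (Suc j))"
    using hok_hm[OF h1, of i] hok_hm[OF h1, of "Suc i"] mor_hm[OF cmor_mor[OF hm], of i] mor_hm[OF cmor_mor[OF hm], of "i - 1"]
      cx_d[OF Y, of "i - 1"] cx_d[OF Z, of "i - 1"] cx_d[OF X, of i] a j by auto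
  have c: "Cp C (Y j) (Y (Suc j)) (Z (Suc j)) (h (Suc j)) (d' j) = Cp C (Y j) (Z j) (Z (Suc j)) (d'' j) (h j)"
    using cmor_comm[OF hm, of j] a j by simp
  show ?thesis using a m j by (simp add: hterm_mid hsh_def cp_ad_r cp_assoc c)
qed

lemma hterm_pre:
  assumes W: "is_cx C n W dW" and X: "is_cx C n X d" and Y: "is_cx C n Y d'" and h1: "hok n X Y \<phi>"
    and km: "is_cmor C n W dW X d k" and i: "i \<le> Suc n"
  shows "Cp C (W i) (X i) (Y i) (hterm n X d Y d' \<phi> i) (k i) = hterm n W dW Y d' (hpre W X Y \<phi> k) i"
  using i
proof (rule hterm_cases)
  assume a: "i = 0" "i \<noteq> Suc n"
  have m: "\<phi> 1 \<in> Hm C (X 1) (Y 0)" "d 0 \<in> Hm C (X 0) (X 1)" "k 0 \<in> Hm C (W 0) (X 0)"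
    "k 1 \<in> Hm C (W 1) (X 1)" "dW 0 \<in> Hm C (W 0) (W 1)"
    using hok_hm[OF h1, of 1] cx_d[OF X, of 0] cx_d[OF W, of 0] mor_hm[OF cmor_mor[OF km], of 0]
     mor_hm[OF cmor_mor[OF km], of 1] a by auto
  have c: "Cp C (W 0) (W (Suc 0)) (X (Suc 0)) (k (Suc 0)) (dW 0) = Cp C (W 0) (X 0) (X (Suc 0)) (d 0) (k 0)"
    using cmor_comm[OF km, of 0] by simp
  show ?thesis using a m hm_obs[OF m(1)] by (simp add: hterm_0 hpre_def flip: cp_assoc c)
next
  assume a: "i = Suc n" "i \<noteq> 0"
  have m: "\<phi> (Suc n) \<in> Hm C (X (Suc n)) (Y n)" "d' n \<in> Hm C (Y n) (Y (Suc n))"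
    "k (Suc n) \<in> Hm C (W (Suc n)) (X (Suc n))"
    using hok_hm[OF h1, of "Suc n"] cx_d[OF Y, of n] mor_hm[OF cmor_mor[OF km], of "Suc n"] by auto
  show ?thesis using a m hm_obs[OF m(1)] by (simp add: hterm_top hpre_def cp_assoc)
next
  assume a: "i \<noteq> 0" "i \<noteq> Suc n" "i \<le> n"
  have m: "\<phi> i \<in> Hm C (X i) (Y (i - 1))" "d' (i - 1) \<in> Hm C (Y (i - 1)) (Y i)"
    "\<phi> (Suc i) \<in> Hm C (X (Suc i)) (Y i)" "d i \<in> Hm C (X i) (X (Suc i))"
    "k i \<in> Hm C (W i) (X i)" "k (Suc i) \<in> Hm C (W (Suc i)) (X (Suc i))" "dW i \<in> Hm C (W i) (W (Suc i))"
    using hok_hm[OF h1, of i] hok_hm[OF h1, of "Suc i"] mor_hm[OF cmor_mor[OF km], of i] mor_hm[OF cmor_mor[OF km], of "Suc i"]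
      cx_d[OF Y, of "i - 1"] cx_d[OF W, of i] cx_d[OF X, of i] a by auto
  have c: "Cp C (W i) (W (Suc i)) (X (Suc i)) (k (Suc i)) (dW i) = Cp C (W i) (X i) (X (Suc i)) (d i) (k i)"
    using cmor_comm[OF km, of i] a by simp
  show ?thesis using a m by (simp add: hterm_mid hpre_def cp_ad_l flip: cp_assoc c)
qed

end


context padd begin

lemma htpI: "hok n X Y \<phi> \<Longrightarrow> (\<And>i. i \<le> Suc n \<Longrightarrow> f i = Ad C (X i) (Y i) (g i) (hterm n X d Y d' \<phi> i)) \<Longrightarrow>
  homotopic C n X d Y d' f g"
  unfolding homotopic_alt by blast

lemma htpE: "homotopic C n X d Y d' f g \<Longrightarrow>
  (\<And>\<phi>. hok n X Y \<phi> \<Longrightarrow> (\<And>i. i \<le> Suc n \<Longrightarrow> f i = Ad C (X i) (Y i) (g i) (hterm n X d Y d' \<phi> i)) \<Longrightarrow> P) \<Longrightarrow> P"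
  unfolding homotopic_alt by blast

lemma htp_refl: "is_cx C n X d \<Longrightarrow> is_cx C n Y d' \<Longrightarrow> mor n X Y f \<Longrightarrow> homotopic C n X d Y d' f f"
proof (rule htpI[OF hok_zr], assumption+)
  fix i assume a: "is_cx C n X d" "is_cx C n Y d'" "mor n X Y f" "i \<le> Suc n"
  have "hterm n X d Y d' (\<lambda>i. Zr C (X i) (Y (i - 1))) i = Zr C (X i) (Y i)" using hterm_zr a by blast
  then show "f i = Ad C (X i) (Y i) (f i) (hterm n X d Y d' (\<lambda>i. Zr C (X i) (Y (i - 1))) i)"
    using mor_hm[OF a(3) a(4)] by simp
qed

lemma htp_sym:
  assumes X: "is_cx C n X d" and Y: "is_cx C n Y d'" and g: "mor n X Y g" and h: "homotopic C n X d Y d' f g"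
  shows "homotopic C n X d Y d' g f"
proof -
  obtain \<phi> where p: "hok n X Y \<phi>" and e: "\<And>i. i \<le> Suc n \<Longrightarrow> f i = Ad C (X i) (Y i) (g i) (hterm n X d Y d' \<phi> i)"
    using h unfolding homotopic_alt by blast
  show ?thesis
  proof (rule htpI[OF hok_hng[OF p]])
    fix i assume i: "i \<le> Suc n"
    have m: "g i \<in> Hm C (X i) (Y i)" "hterm n X d Y d' \<phi> i \<in> Hm C (X i) (Y i)"
      using mor_hm[OF g i] hterm_hm[OF X Y p i] by auto
    show "g i = Ad C (X i) (Y i) (f i) (hterm n X d Y d' (hng X Y \<phi>) i)"
      using m by (simp add: e[OF i] hterm_hng[OF X Y p i] ad_assoc)
  qed
qed

lemma htp_mor: "is_cx C n X d \<Longrightarrow> is_cx C n Y d' \<Longrightarrow> mor n X Y g \<Longrightarrow> homotopic C n X d Y d' f g \<Longrightarrow> mor n X Y f"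
  unfolding mor_def by (auto elim!: htpE simp: hterm_hm)

lemma htp_trans:
  assumes X: "is_cx C n X d" and Y: "is_cx C n Y d'" and h: "mor n X Y h"
    and fg: "homotopic C n X d Y d' f g" and gh: "homotopic C n X d Y d' g h"
  shows "homotopic C n X d Y d' f h"
proof -
  obtain \<phi> where p: "hok n X Y \<phi>" and e: "\<And>i. i \<le> Suc n \<Longrightarrow> f i = Ad C (X i) (Y i) (g i) (hterm n X d Y d' \<phi> i)"
    using fg unfolding homotopic_alt by blast
  obtain \<psi> where q: "hok n X Y \<psi>" and e2: "\<And>i. i \<le> Suc n \<Longrightarrow> g i = Ad C (X i) (Y i) (h i) (hterm n X d Y d' \<psi> i)"
    using gh unfolding homotopic_alt by blast
  show ?thesis
  proof (rule htpI[OF hok_had[OF q p]])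
    fix i assume i: "i \<le> Suc n"
    have m: "h i \<in> Hm C (X i) (Y i)" "hterm n X d Y d' \<phi> i \<in> Hm C (X i) (Y i)" "hterm n X d Y d' \<psi> i \<in> Hm C (X i) (Y i)"
      using mor_hm[OF h i] hterm_hm[OF X Y p i] hterm_hm[OF X Y q i] by auto
    show "f i = Ad C (X i) (Y i) (h i) (hterm n X d Y d' (had X Y \<psi> \<phi>) i)"
      using m by (simp add: e[OF i] e2[OF i] hterm_had[OF X Y q p i] ad_assoc)
  qed
qed

lemma htp_post:
  assumes X: "is_cx C n X d" and Y: "is_cx C n Y d'" and Z: "is_cx C n Z d''" and g: "mor n X Y g"
    and hm: "is_cmor C n Y d' Z d'' h" and fg: "homotopic C n X d Y d' f g"
  shows "homotopic C n X d Z d'' (ccp X Y Z h f) (ccp X Y Z h g)"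
proof -
  obtain \<phi> where p: "hok n X Y \<phi>" and e: "\<And>i. i \<le> Suc n \<Longrightarrow> f i = Ad C (X i) (Y i) (g i) (hterm n X d Y d' \<phi> i)"
    using fg unfolding homotopic_alt by blast
  show ?thesis
  proof (rule htpI[OF hok_hsh[OF p cmor_mor[OF hm]]])
    fix i assume i: "i \<le> Suc n"
    have m: "g i \<in> Hm C (X i) (Y i)" "hterm n X d Y d' \<phi> i \<in> Hm C (X i) (Y i)" "h i \<in> Hm C (Y i) (Z i)"
      using mor_hm[OF g i] hterm_hm[OF X Y p i] mor_hm[OF cmor_mor[OF hm] i] by auto
    show "ccp X Y Z h f i = Ad C (X i) (Z i) (ccp X Y Z h g i) (hterm n X d Z d'' (hsh X Y Z h \<phi>) i)"
      using m by (simp add: ccp_def e[OF i] cp_ad_r hterm_post[OF X Y Z p hm i])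
  qed
qed

lemma htp_pre:
  assumes W: "is_cx C n W dW" and X: "is_cx C n X d" and Y: "is_cx C n Y d'" and g: "mor n X Y g"
    and km: "is_cmor C n W dW X d k" and fg: "homotopic C n X d Y d' f g"
  shows "homotopic C n W dW Y d' (ccp W X Y f k) (ccp W X Y g k)"
proof -
  obtain \<phi> where p: "hok n X Y \<phi>" and e: "\<And>i. i \<le> Suc n \<Longrightarrow> f i = Ad C (X i) (Y i) (g i) (hterm n X d Y d' \<phi> i)"
    using fg unfolding homotopic_alt by blast
  show ?thesis
  proof (rule htpI[OF hok_hpre[OF p cmor_mor[OF km]]])
    fix i assume i: "i \<le> Suc n"
    have m: "g i \<in> Hm C (X i) (Y i)" "hterm n X d Y d' \<phi> i \<in> Hm C (X i) (Y i)" "k i \<in> Hm C (W i) (X i)"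
      using mor_hm[OF g i] hterm_hm[OF X Y p i] mor_hm[OF cmor_mor[OF km] i] by auto
    show "ccp W X Y f k i = Ad C (W i) (Y i) (ccp W X Y g k i) (hterm n W dW Y d' (hpre W X Y \<phi> k) i)"
      using m by (simp add: ccp_def e[OF i] cp_ad_l hterm_pre[OF W X Y p km i])
  qed
qed

lemma htp_add:
  assumes X: "is_cx C n X d" and Y: "is_cx C n Y d'" and g: "mor n X Y g" and k: "mor n X Y k"
    and fg: "homotopic C n X d Y d' f g"
  shows "homotopic C n X d Y d' (cad X Y f k) (cad X Y g k)"
proof -
  obtain \<phi> where p: "hok n X Y \<phi>" and e: "\<And>i. i \<le> Suc n \<Longrightarrow> f i = Ad C (X i) (Y i) (g i) (hterm n X d Y d' \<phi> i)"
    using fg unfolding homotopic_alt by blast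
  show ?thesis
  proof (rule htpI[OF p])
    fix i assume i: "i \<le> Suc n"
    have m: "g i \<in> Hm C (X i) (Y i)" "hterm n X d Y d' \<phi> i \<in> Hm C (X i) (Y i)" "k i \<in> Hm C (X i) (Y i)"
      using mor_hm[OF g i] hterm_hm[OF X Y p i] mor_hm[OF k i] by auto
    show "cad X Y f k i = Ad C (X i) (Y i) (cad X Y g k i) (hterm n X d Y d' \<phi> i)"
      using m by (simp add: cad_def e[OF i] ad_assoc ad_comm[of "k i"])
  qed
qed

lemma htp_cong:
  assumes "\<And>i. i \<le> Suc n \<Longrightarrow> f i = f' i" "\<And>i. i \<le> Suc n \<Longrightarrow> g i = g' i"
    and "homotopic C n X d Y d' f g"
  shows "homotopic C n X d Y d' f' g'"
  using assms unfolding homotopic_alt by metis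

lemma htp_eq: "is_cx C n X d \<Longrightarrow> is_cx C n Y d' \<Longrightarrow> mor n X Y f \<Longrightarrow> (\<And>i. i \<le> Suc n \<Longrightarrow> f i = g i) \<Longrightarrow>
  homotopic C n X d Y d' f g"
  by (rule htp_cong[where f=f and g=f]) (auto intro: htp_refl)

lemma cmorI: "(\<And>i. i \<le> Suc n \<Longrightarrow> f i \<in> Hm C (X i) (Y i)) \<Longrightarrow>
  (\<And>i. i \<le> n \<Longrightarrow> Cp C (X i) (X (Suc i)) (Y (Suc i)) (f (Suc i)) (d i) = Cp C (X i) (Y i) (Y (Suc i)) (d' i) (f i)) \<Longrightarrow>
  is_cmor C n X d Y d' f"
  unfolding is_cmor_def by blast

lemma cmor_ccp:
  assumes X: "is_cx C n X d" and Y: "is_cx C n Y d'" and Z: "is_cx C n Z d''"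
    and f: "is_cmor C n X d Y d' f" and g: "is_cmor C n Y d' Z d'' g"
  shows "is_cmor C n X d Z d'' (ccp X Y Z g f)"
proof (rule cmorI)
  fix i assume "i \<le> Suc n" then show "ccp X Y Z g f i \<in> Hm C (X i) (Z i)"
    using mor_hm[OF cmor_mor[OF f]] mor_hm[OF cmor_mor[OF g]] by (simp add: ccp_def)
next
  fix i assume i: "i \<le> n"
  have m: "f i \<in> Hm C (X i) (Y i)" "g i \<in> Hm C (Y i) (Z i)" "f (Suc i) \<in> Hm C (X (Suc i)) (Y (Suc i))"
    "g (Suc i) \<in> Hm C (Y (Suc i)) (Z (Suc i))" "d i \<in> Hm C (X i) (X (Suc i))" "d' i \<in> Hm C (Y i) (Y (Suc i))"
    "d'' i \<in> Hm C (Z i) (Z (Suc i))"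
    using i mor_hm[OF cmor_mor[OF f]] mor_hm[OF cmor_mor[OF g]] cx_d[OF X] cx_d[OF Y] cx_d[OF Z] by auto
  have c1: "Cp C (X i) (X (Suc i)) (Y (Suc i)) (f (Suc i)) (d i) = Cp C (X i) (Y i) (Y (Suc i)) (d' i) (f i)"
    using cmor_comm[OF f i] .
  have c2: "Cp C (Y i) (Y (Suc i)) (Z (Suc i)) (g (Suc i)) (d' i) = Cp C (Y i) (Z i) (Z (Suc i)) (d'' i) (g i)"
    using cmor_comm[OF g i] .
  show "Cp C (X i) (X (Suc i)) (Z (Suc i)) (ccp X Y Z g f (Suc i)) (d i) = Cp C (X i) (Z i) (Z (Suc i)) (d'' i) (ccp X Y Z g f i)"
  proof -
    have "Cp C (X i) (X (Suc i)) (Z (Suc i)) (Cp C (X (Suc i)) (Y (Suc i)) (Z (Suc i)) (g (Suc i)) (f (Suc i))) (d i)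
      = Cp C (X i) (Y (Suc i)) (Z (Suc i)) (g (Suc i)) (Cp C (X i) (X (Suc i)) (Y (Suc i)) (f (Suc i)) (d i))"
      using m by (simp add: cp_assoc)
    also have "\<dots> = Cp C (X i) (Y (Suc i)) (Z (Suc i)) (g (Suc i)) (Cp C (X i) (Y i) (Y (Suc i)) (d' i) (f i))"
      using c1 by simp
    also have "\<dots> = Cp C (X i) (Y i) (Z (Suc i)) (Cp C (Y i) (Y (Suc i)) (Z (Suc i)) (g (Suc i)) (d' i)) (f i)"
      using m by (simp add: cp_assoc)
    also have "\<dots> = Cp C (X i) (Y i) (Z (Suc i)) (Cp C (Y i) (Z i) (Z (Suc i)) (d'' i) (g i)) (f i)"
      using c2 by simp
    also have "\<dots> = Cp C (X i) (Z i) (Z (Suc i)) (d'' i) (Cp C (X i) (Y i) (Z i) (g i) (f i))"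
      using m by (simp add: cp_assoc)
    finally show ?thesis by (simp add: ccp_def)
  qed
qed

lemma cmor_cad:
  assumes X: "is_cx C n X d" and Y: "is_cx C n Y d'"
    and f: "is_cmor C n X d Y d' f" and g: "is_cmor C n X d Y d' g"
  shows "is_cmor C n X d Y d' (cad X Y f g)"
proof (rule cmorI)
  fix i assume "i \<le> Suc n" then show "cad X Y f g i \<in> Hm C (X i) (Y i)"
    using mor_hm[OF cmor_mor[OF f]] mor_hm[OF cmor_mor[OF g]] by (simp add: cad_def)
next
  fix i assume i: "i \<le> n"
  have m: "f i \<in> Hm C (X i) (Y i)" "g i \<in> Hm C (X i) (Y i)" "f (Suc i) \<in> Hm C (X (Suc i)) (Y (Suc i))"
    "g (Suc i) \<in> Hm C (X (Suc i)) (Y (Suc i))" "d i \<in> Hm C (X i) (X (Suc i))" "d' i \<in> Hm C (Y i) (Y (Suc i))"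
    using i mor_hm[OF cmor_mor[OF f]] mor_hm[OF cmor_mor[OF g]] cx_d[OF X] cx_d[OF Y] by auto
  show "Cp C (X i) (X (Suc i)) (Y (Suc i)) (cad X Y f g (Suc i)) (d i) = Cp C (X i) (Y i) (Y (Suc i)) (d' i) (cad X Y f g i)"
    using m by (simp add: cad_def cp_ad_l cp_ad_r cmor_comm[OF f i] cmor_comm[OF g i])
qed

lemma cmor_cng:
  assumes X: "is_cx C n X d" and Y: "is_cx C n Y d'" and f: "is_cmor C n X d Y d' f"
  shows "is_cmor C n X d Y d' (cng X Y f)"
proof (rule cmorI)
  fix i assume "i \<le> Suc n" then show "cng X Y f i \<in> Hm C (X i) (Y i)"
    using mor_hm[OF cmor_mor[OF f]] by (simp add: cng_def)
next
  fix i assume i: "i \<le> n"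
  have m: "f i \<in> Hm C (X i) (Y i)" "f (Suc i) \<in> Hm C (X (Suc i)) (Y (Suc i))"
    "d i \<in> Hm C (X i) (X (Suc i))" "d' i \<in> Hm C (Y i) (Y (Suc i))"
    using i mor_hm[OF cmor_mor[OF f]] cx_d[OF X] cx_d[OF Y] by auto
  show "Cp C (X i) (X (Suc i)) (Y (Suc i)) (cng X Y f (Suc i)) (d i) = Cp C (X i) (Y i) (Y (Suc i)) (d' i) (cng X Y f i)"
    using m by (simp add: cng_def cp_ng_l cp_ng_r cmor_comm[OF f i])
qed

lemma cmor_czr:
  assumes X: "is_cx C n X d" and Y: "is_cx C n Y d'"
  shows "is_cmor C n X d Y d' (czr X Y)"
proof (rule cmorI)
  fix i assume "i \<le> Suc n" then show "czr X Y i \<in> Hm C (X i) (Y i)"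
    using cx_ob[OF X] cx_ob[OF Y] by (simp add: czr_def)
next
  fix i assume i: "i \<le> n"
  have m: "d i \<in> Hm C (X i) (X (Suc i))" "d' i \<in> Hm C (Y i) (Y (Suc i))"
    using i cx_d[OF X] cx_d[OF Y] by auto
  show "Cp C (X i) (X (Suc i)) (Y (Suc i)) (czr X Y (Suc i)) (d i) = Cp C (X i) (Y i) (Y (Suc i)) (d' i) (czr X Y i)"
    using m hm_obs by (simp add: czr_def)
qed

lemma cmor_cid:
  assumes X: "is_cx C n X d"
  shows "is_cmor C n X d X d (cid X)"
proof (rule cmorI)
  fix i assume "i \<le> Suc n" then show "cid X i \<in> Hm C (X i) (X i)"
    using cx_ob[OF X] by (simp add: cid_def)
next
  fix i assume i: "i \<le> n"
  have m: "d i \<in> Hm C (X i) (X (Suc i))"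
    using i cx_d[OF X] by auto
  show "Cp C (X i) (X (Suc i)) (X (Suc i)) (cid X (Suc i)) (d i) = Cp C (X i) (X i) (X (Suc i)) (d i) (cid X i)"
    using m by (simp add: cid_def)
qed

end


context padd begin

lemma heq_alt: "heq C n A B X d Y d' \<longleftrightarrow> cxAC C n A B X d \<and> cxAC C n A B Y d' \<and>
     (\<exists>f g. is_cmor C n X d Y d' f \<and> f 0 = Idn C A \<and> f (Suc n) = Idn C B \<and>
            is_cmor C n Y d' X d g \<and> g 0 = Idn C A \<and> g (Suc n) = Idn C B \<and>
            homotopic C n X d X d (ccp X Y X g f) (cid X) \<and>
            homotopic C n Y d' Y d' (ccp Y X Y f g) (cid Y))"
  unfolding heq_def ccp_def cid_def by simp

lemma cxAC_cx: "cxAC C n A B X d \<Longrightarrow> is_cx C n X d" unfolding cxAC_def by blast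

lemma heq_sym: "heq C n A B X d Y d' \<Longrightarrow> heq C n A B Y d' X d"
  unfolding heq_alt by blast

lemma heq_refl:
  assumes a: "cxAC C n A B X d" shows "heq C n A B X d X d"
proof -
  have X: "is_cx C n X d" using a by (rule cxAC_cx)
  have "homotopic C n X d X d (ccp X X X (cid X) (cid X)) (cid X)"
    by (rule htp_eq[OF X X]) (auto simp: ccp_def cid_def mor_def cx_ob[OF X])
  moreover have "cid X 0 = Idn C A" "cid X (Suc n) = Idn C B" using a by (auto simp: cid_def cxAC_def)
  ultimately show ?thesis unfolding heq_alt using a cmor_cid[OF X] by blast
qed

lemma heq_trans:
  assumes h1: "heq C n A B X d Y d'" and h2: "heq C n A B Y d' Z d''"
  shows "heq C n A B X d Z d''"
proof -
  have cX: "cxAC C n A B X d" and cY: "cxAC C n A B Y d'" and cZ: "cxAC C n A B Z d''"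
    using h1 h2 unfolding heq_alt by blast+
  have X: "is_cx C n X d" and Y: "is_cx C n Y d'" and Z: "is_cx C n Z d''" using cX cY cZ cxAC_cx by blast+
  obtain f g where f: "is_cmor C n X d Y d' f" and f0: "f 0 = Idn C A" and f1: "f (Suc n) = Idn C B"
    and g: "is_cmor C n Y d' X d g" and g0: "g 0 = Idn C A" and g1: "g (Suc n) = Idn C B"
    and gf: "homotopic C n X d X d (ccp X Y X g f) (cid X)" and fg: "homotopic C n Y d' Y d' (ccp Y X Y f g) (cid Y)"
    using h1 unfolding heq_alt by blast
  obtain f' g' where f': "is_cmor C n Y d' Z d'' f'" and f0': "f' 0 = Idn C A" and f1': "f' (Suc n) = Idn C B"
    and g': "is_cmor C n Z d'' Y d' g'" and g0': "g' 0 = Idn C A" and g1': "g' (Suc n) = Idn C B"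
    and gf': "homotopic C n Y d' Y d' (ccp Y Z Y g' f') (cid Y)" and fg': "homotopic C n Z d'' Z d'' (ccp Z Y Z f' g') (cid Z)"
    using h2 unfolding heq_alt by blast
  have A: "A = X 0" "A = Y 0" "A = Z 0" "B = X (Suc n)" "B = Y (Suc n)" "B = Z (Suc n)"
    using cX cY cZ unfolding cxAC_def by auto
  have oA: "A \<in> Ob C" "B \<in> Ob C" using cx_ob[OF X, of 0] cx_ob[OF X, of "Suc n"] A by auto
  define F where "F = ccp X Y Z f' f"
  define G where "G = ccp Z Y X g g'"
  have F: "is_cmor C n X d Z d'' F" unfolding F_def by (rule cmor_ccp[OF X Y Z f f'])
  have G: "is_cmor C n Z d'' X d G" unfolding G_def by (rule cmor_ccp[OF Z Y X g' g])
  have GF: "homotopic C n X d X d (ccp X Z X G F) (cid X)"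
  proof -
    have s1: "homotopic C n X d Y d' (ccp X Y Y (ccp Y Z Y g' f') f) (ccp X Y Y (cid Y) f)"
      by (rule htp_pre[OF X Y Y cmor_mor[OF cmor_cid[OF Y]] f gf'])
    have s2: "homotopic C n X d X d (ccp X Y X g (ccp X Y Y (ccp Y Z Y g' f') f)) (ccp X Y X g (ccp X Y Y (cid Y) f))"
      by (rule htp_post[OF X Y X cmor_mor[OF cmor_ccp[OF X Y Y f cmor_cid[OF Y]]] g s1])
    have s3: "homotopic C n X d X d (ccp X Z X G F) (ccp X Y X g f)"
    proof (rule htp_cong[OF _ _ s2])
      fix i assume i: "i \<le> Suc n"
      have m: "f i \<in> Hm C (X i) (Y i)" "g i \<in> Hm C (Y i) (X i)" "f' i \<in> Hm C (Y i) (Z i)" "g' i \<in> Hm C (Z i) (Y i)"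
        using i mor_hm[OF cmor_mor[OF f]] mor_hm[OF cmor_mor[OF g]] mor_hm[OF cmor_mor[OF f']] mor_hm[OF cmor_mor[OF g']] by auto
      show "ccp X Y X g (ccp X Y Y (ccp Y Z Y g' f') f) i = ccp X Z X G F i"
        using m by (simp add: ccp_def F_def G_def cp_assoc)
      show "ccp X Y X g (ccp X Y Y (cid Y) f) i = ccp X Y X g f i"
        using m by (simp add: ccp_def cid_def)
    qed
    show ?thesis by (rule htp_trans[OF X X cmor_mor[OF cmor_cid[OF X]] s3 gf])
  qed
  have FG: "homotopic C n Z d'' Z d'' (ccp Z X Z F G) (cid Z)"
  proof -
    have s1: "homotopic C n Z d'' Y d' (ccp Z Y Y (ccp Y X Y f g) g') (ccp Z Y Y (cid Y) g')"
      by (rule htp_pre[OF Z Y Y cmor_mor[OF cmor_cid[OF Y]] g' fg])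
    have s2: "homotopic C n Z d'' Z d'' (ccp Z Y Z f' (ccp Z Y Y (ccp Y X Y f g) g')) (ccp Z Y Z f' (ccp Z Y Y (cid Y) g'))"
      by (rule htp_post[OF Z Y Z cmor_mor[OF cmor_ccp[OF Z Y Y g' cmor_cid[OF Y]]] f' s1])
    have s3: "homotopic C n Z d'' Z d'' (ccp Z X Z F G) (ccp Z Y Z f' g')"
    proof (rule htp_cong[OF _ _ s2])
      fix i assume i: "i \<le> Suc n"
      have m: "f i \<in> Hm C (X i) (Y i)" "g i \<in> Hm C (Y i) (X i)" "f' i \<in> Hm C (Y i) (Z i)" "g' i \<in> Hm C (Z i) (Y i)"
        using i mor_hm[OF cmor_mor[OF f]] mor_hm[OF cmor_mor[OF g]] mor_hm[OF cmor_mor[OF f']] mor_hm[OF cmor_mor[OF g']] by auto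
      show "ccp Z Y Z f' (ccp Z Y Y (ccp Y X Y f g) g') i = ccp Z X Z F G i"
        using m by (simp add: ccp_def F_def G_def cp_assoc)
      show "ccp Z Y Z f' (ccp Z Y Y (cid Y) g') i = ccp Z Y Z f' g' i"
        using m by (simp add: ccp_def cid_def)
    qed
    show ?thesis by (rule htp_trans[OF Z Z cmor_mor[OF cmor_cid[OF Z]] s3 fg'])
  qed
  have e: "F 0 = Idn C A" "F (Suc n) = Idn C B" "G 0 = Idn C A" "G (Suc n) = Idn C B"
    using f0 f1 g0 g1 f0' f1' g0' g1' A oA by (auto simp: F_def G_def ccp_def)
  show ?thesis unfolding heq_alt using cX cZ F G GF FG e by blast
qed


definition cexact :: "nat \<Rightarrow> (nat \<Rightarrow> 'o) \<Rightarrow> (nat \<Rightarrow> 'm) \<Rightarrow> bool" where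
  "cexact n X d \<longleftrightarrow> (\<forall>W\<in>Ob C. \<forall>i. 1 \<le> i \<and> i \<le> n \<longrightarrow> (\<forall>h\<in>Hm C (X i) W.
            Cp C (X (i - 1)) (X i) W h (d (i - 1)) = Zr C (X (i - 1)) W \<longrightarrow>
            (\<exists>h'\<in>Hm C (X (Suc i)) W. h = Cp C (X i) (X (Suc i)) W h' (d i))))"

lemma cexactD: "cexact n X d \<Longrightarrow> W \<in> Ob C \<Longrightarrow> Suc j \<le> n \<Longrightarrow> h \<in> Hm C (X (Suc j)) W \<Longrightarrow>
   Cp C (X j) (X (Suc j)) W h (d j) = Zr C (X j) W \<Longrightarrow>
   \<exists>h'. h' \<in> Hm C (X (Suc (Suc j))) W \<and> h = Cp C (X (Suc j)) (X (Suc (Suc j))) W h' (d (Suc j))"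
  unfolding cexact_def by (drule bspec[where x=W], assumption, drule spec[where x="Suc j"]) auto

lemma zs_homotopy:
  assumes X: "is_cx C n X d" and Y: "is_cx C n Y d'" and ex: "cexact n X d"
    and N: "is_cmor C n X d Y d' N" and N0: "N 0 = Zr C (X 0) (Y 0)"
  shows "\<exists>\<phi>. hok n X Y \<phi> \<and> (\<forall>i\<le>n. N i = hterm n X d Y d' \<phi> i)"
proof -
  define s where "s i p = (if i = 0 then Zr C (X i) (Y i) else Cp C (X i) (Y (i - 1)) (Y i) (d' (i - 1)) p)" for i p
  define \<phi> where "\<phi> = rec_nat (Zr C (X 0) (Y 0)) (\<lambda>i p. if i = 0 then Zr C (X 1) (Y 0) else
     SOME h. h \<in> Hm C (X (Suc i)) (Y i) \<and> Cp C (X i) (X (Suc i)) (Y i) h (d i) = Ad C (X i) (Y i) (N i) (ng (X i) (Y i) (s i p)))"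
  have phiS: "\<phi> (Suc i) = (if i = 0 then Zr C (X 1) (Y 0) else
     SOME h. h \<in> Hm C (X (Suc i)) (Y i) \<and> Cp C (X i) (X (Suc i)) (Y i) h (d i) = Ad C (X i) (Y i) (N i) (ng (X i) (Y i) (s i (\<phi> i))))" for i
    unfolding \<phi>_def by simp
  have obX: "\<And>i. i \<le> Suc n \<Longrightarrow> X i \<in> Ob C" and obY: "\<And>i. i \<le> Suc n \<Longrightarrow> Y i \<in> Ob C"
    using cx_ob[OF X] cx_ob[OF Y] by auto
  have Nm: "\<And>i. i \<le> Suc n \<Longrightarrow> N i \<in> Hm C (X i) (Y i)" using mor_hm[OF cmor_mor[OF N]] by auto
  have inv: "i \<le> n \<longrightarrow> \<phi> (Suc i) \<in> Hm C (X (Suc i)) (Y i) \<and>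
      Cp C (X i) (X (Suc i)) (Y i) (\<phi> (Suc i)) (d i) = Ad C (X i) (Y i) (N i) (ng (X i) (Y i) (s i (\<phi> i)))" for i
  proof (induction i rule: less_induct)
    case (less i)
    show ?case
  proof (cases i)
    case 0
    have o: "X 0 \<in> Ob C" "Y 0 \<in> Ob C" "X 1 \<in> Ob C" using obX obY by auto
    have "d 0 \<in> Hm C (X 0) (X 1)" if "0 \<le> n" using cx_d[OF X, of 0] by simp
    then show ?thesis using o N0 0 by (simp add: phiS s_def)
  next
    case (Suc j)
    show ?thesis unfolding Suc
    proof
      assume jn: "Suc j \<le> n"
      then have IH: "\<phi> (Suc j) \<in> Hm C (X (Suc j)) (Y j)"
        "Cp C (X j) (X (Suc j)) (Y j) (\<phi> (Suc j)) (d j) = Ad C (X j) (Y j) (N j) (ng (X j) (Y j) (s j (\<phi> j)))"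
        using less.IH[of j] Suc by auto
      have dj: "d j \<in> Hm C (X j) (X (Suc j))" "d' j \<in> Hm C (Y j) (Y (Suc j))"
        using cx_d[OF X, of j] cx_d[OF Y, of j] jn by auto
      have Nj: "N j \<in> Hm C (X j) (Y j)" "N (Suc j) \<in> Hm C (X (Suc j)) (Y (Suc j))" using Nm jn by auto
      have sj: "s j (\<phi> j) \<in> Hm C (X j) (Y j)" and ds: "Cp C (X j) (Y j) (Y (Suc j)) (d' j) (s j (\<phi> j)) = Zr C (X j) (Y (Suc j))"
      proof (atomize (full), cases j)
        case 0 then show "s j (\<phi> j) \<in> Hm C (X j) (Y j) \<and> Cp C (X j) (Y j) (Y (Suc j)) (d' j) (s j (\<phi> j)) = Zr C (X j) (Y (Suc j))"
          using obX obY jn dj by (simp add: s_def)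
      next
        case (Suc k)
        have pk: "\<phi> (Suc k) \<in> Hm C (X (Suc k)) (Y k)" using less.IH[of k] \<open>i = Suc j\<close> Suc jn by auto
        have dk: "d' k \<in> Hm C (Y k) (Y (Suc k))" using cx_d[OF Y, of k] Suc jn by auto
        have dd: "Cp C (Y k) (Y (Suc k)) (Y (Suc (Suc k))) (d' (Suc k)) (d' k) = Zr C (Y k) (Y (Suc (Suc k)))"
          using cx_dd[OF Y, of k] Suc jn by auto
        have "Cp C (X (Suc k)) (Y (Suc k)) (Y (Suc (Suc k))) (d' (Suc k)) (Cp C (X (Suc k)) (Y k) (Y (Suc k)) (d' k) (\<phi> (Suc k)))
            = Zr C (X (Suc k)) (Y (Suc (Suc k)))"
          using pk dk dj Suc dd obY jn by (simp add: cp_assoc)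
        then show "s j (\<phi> j) \<in> Hm C (X j) (Y j) \<and> Cp C (X j) (Y j) (Y (Suc j)) (d' j) (s j (\<phi> j)) = Zr C (X j) (Y (Suc j))"
          using Suc pk dk by (simp add: s_def)
      qed
      define r where "r = Ad C (X (Suc j)) (Y (Suc j)) (N (Suc j)) (ng (X (Suc j)) (Y (Suc j)) (s (Suc j) (\<phi> (Suc j))))"
      have sSj: "s (Suc j) (\<phi> (Suc j)) = Cp C (X (Suc j)) (Y j) (Y (Suc j)) (d' j) (\<phi> (Suc j))" by (simp add: s_def)
      have rm: "r \<in> Hm C (X (Suc j)) (Y (Suc j))" using IH dj Nj by (simp add: r_def sSj)
      have c1: "Cp C (X j) (X (Suc j)) (Y (Suc j)) (N (Suc j)) (d j) = Cp C (X j) (Y j) (Y (Suc j)) (d' j) (N j)"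
        using cmor_comm[OF N, of j] jn by simp
      have c2: "Cp C (X j) (X (Suc j)) (Y (Suc j)) (Cp C (X (Suc j)) (Y j) (Y (Suc j)) (d' j) (\<phi> (Suc j))) (d j)
          = Ad C (X j) (Y (Suc j)) (Cp C (X j) (Y j) (Y (Suc j)) (d' j) (N j)) (ng (X j) (Y (Suc j)) (Zr C (X j) (Y (Suc j))))"
      proof -
        have "Cp C (X j) (X (Suc j)) (Y (Suc j)) (Cp C (X (Suc j)) (Y j) (Y (Suc j)) (d' j) (\<phi> (Suc j))) (d j)
            = Cp C (X j) (Y j) (Y (Suc j)) (d' j) (Cp C (X j) (X (Suc j)) (Y j) (\<phi> (Suc j)) (d j))"
          using IH(1) dj by (simp add: cp_assoc)
        also have "\<dots> = Cp C (X j) (Y j) (Y (Suc j)) (d' j) (Ad C (X j) (Y j) (N j) (ng (X j) (Y j) (s j (\<phi> j))))"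
          using IH by simp
        also have "\<dots> = Ad C (X j) (Y (Suc j)) (Cp C (X j) (Y j) (Y (Suc j)) (d' j) (N j)) (ng (X j) (Y (Suc j)) (Cp C (X j) (Y j) (Y (Suc j)) (d' j) (s j (\<phi> j))))"
          using dj Nj sj by (simp add: cp_ad_r cp_ng_r)
        finally show ?thesis using ds by simp
      qed
      have rd: "Cp C (X j) (X (Suc j)) (Y (Suc j)) r (d j) = Zr C (X j) (Y (Suc j))"
      proof -
        have "Cp C (X j) (X (Suc j)) (Y (Suc j)) r (d j) = Ad C (X j) (Y (Suc j)) (Cp C (X j) (X (Suc j)) (Y (Suc j)) (N (Suc j)) (d j))
           (ng (X j) (Y (Suc j)) (Cp C (X j) (X (Suc j)) (Y (Suc j)) (Cp C (X (Suc j)) (Y j) (Y (Suc j)) (d' j) (\<phi> (Suc j))) (d j)))"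
          unfolding r_def sSj using IH dj Nj by (simp add: cp_ad_l cp_ng_l)
        also have "\<dots> = Zr C (X j) (Y (Suc j))" unfolding c1 c2 using dj Nj obX obY jn by (simp add: ng_ad)
        finally show ?thesis .
      qed
      obtain h' where h': "h' \<in> Hm C (X (Suc (Suc j))) (Y (Suc j))"
        "r = Cp C (X (Suc j)) (X (Suc (Suc j))) (Y (Suc j)) h' (d (Suc j))"
        using cexactD[OF ex obY[of "Suc j"] jn rm rd] jn by auto
      have "\<exists>h. h \<in> Hm C (X (Suc (Suc j))) (Y (Suc j)) \<and> Cp C (X (Suc j)) (X (Suc (Suc j))) (Y (Suc j)) h (d (Suc j)) = r"
        using h' by auto
      then have "\<phi> (Suc (Suc j)) \<in> Hm C (X (Suc (Suc j))) (Y (Suc j)) \<and> Cp C (X (Suc j)) (X (Suc (Suc j))) (Y (Suc j)) (\<phi> (Suc (Suc j))) (d (Suc j)) = r"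
        unfolding phiS[of "Suc j"] r_def by (simp only: nat.distinct if_False) (rule someI_ex)
      then show "\<phi> (Suc (Suc j)) \<in> Hm C (X (Suc (Suc j))) (Y (Suc j)) \<and>
          Cp C (X (Suc j)) (X (Suc (Suc j))) (Y (Suc j)) (\<phi> (Suc (Suc j))) (d (Suc j)) =
          Ad C (X (Suc j)) (Y (Suc j)) (N (Suc j)) (ng (X (Suc j)) (Y (Suc j)) (s (Suc j) (\<phi> (Suc j))))"
        unfolding r_def by simp
    qed
  qed
  qed
  have hk: "hok n X Y \<phi>" unfolding hok_def
  proof (intro allI impI)
    fix i assume "1 \<le> i \<and> i \<le> Suc n"
    then obtain j where j: "i = Suc j" "j \<le> n" by (cases i) auto
    then show "\<phi> i \<in> Hm C (X i) (Y (i - 1))" using inv[of j] by simp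
  qed
  have "N i = hterm n X d Y d' \<phi> i" if i: "i \<le> n" for i
  proof -
    have sm: "s i (\<phi> i) \<in> Hm C (X i) (Y i)"
    proof (cases i)
      case 0 then show ?thesis using obX obY by (simp add: s_def)
    next
      case (Suc k)
      then show ?thesis using inv[of k] cx_d[OF Y, of k] i by (simp add: s_def)
    qed
    have "hterm n X d Y d' \<phi> i = Ad C (X i) (Y i) (s i (\<phi> i)) (Cp C (X i) (X (Suc i)) (Y i) (\<phi> (Suc i)) (d i))"
      unfolding hterm_def s_def using i by simp
    also have "\<dots> = N i" using inv[of i] i sm Nm[of i] by (simp add: ad_lcomm[of "s i (\<phi> i)"])
    finally show ?thesis by simp
  qed
  then show ?thesis using hk by blast
qed

lemma zs_ze_htp:
  assumes X: "is_cx C n X d" and Y: "is_cx C n Y d'" and R: "is_cx C n R dR" and ex: "cexact n X d"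
    and N: "is_cmor C n X d Y d' N" and N0: "N 0 = Zr C (X 0) (Y 0)"
    and M: "is_cmor C n Y d' R dR M" and M1: "M (Suc n) = Zr C (Y (Suc n)) (R (Suc n))"
  shows "homotopic C n X d R dR (ccp X Y R M N) (czr X R)"
proof -
  obtain \<phi> where p: "hok n X Y \<phi>" and e: "\<And>i. i \<le> n \<Longrightarrow> N i = hterm n X d Y d' \<phi> i"
    using zs_homotopy[OF X Y ex N N0] by blast
  show ?thesis
  proof (rule htpI[OF hok_hsh[OF p cmor_mor[OF M]]])
    fix i assume i: "i \<le> Suc n"
    have m: "hterm n X d Y d' \<phi> i \<in> Hm C (X i) (Y i)" "M i \<in> Hm C (Y i) (R i)" "N i \<in> Hm C (X i) (Y i)"
      using hterm_hm[OF X Y p i] mor_hm[OF cmor_mor[OF M] i] mor_hm[OF cmor_mor[OF N] i] by auto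
    have h: "hterm n X d R dR (hsh X Y R M \<phi>) i = Cp C (X i) (Y i) (R i) (M i) (hterm n X d Y d' \<phi> i)"
      using hterm_post[OF X Y R p M i] by simp
    show "ccp X Y R M N i = Ad C (X i) (R i) (czr X R i) (hterm n X d R dR (hsh X Y R M \<phi>) i)"
    proof (cases "i \<le> n")
      case True
      then show ?thesis using m h e[OF True] by (simp add: ccp_def czr_def)
    next
      case False
      then have "i = Suc n" using i by simp
      then show ?thesis using m h M1 cx_ob[OF R i] cx_ob[OF X i] by (simp add: ccp_def czr_def)
    qed
  qed
qed

end


context padd begin

lemma htp_ng:
  assumes X: "is_cx C n X d" and Y: "is_cx C n Y d'" and g: "mor n X Y g"
    and fg: "homotopic C n X d Y d' f g"
  shows "homotopic C n X d Y d' (cng X Y f) (cng X Y g)"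
proof -
  obtain \<phi> where p: "hok n X Y \<phi>" and e: "\<And>i. i \<le> Suc n \<Longrightarrow> f i = Ad C (X i) (Y i) (g i) (hterm n X d Y d' \<phi> i)"
    using fg unfolding homotopic_alt by blast
  show ?thesis
  proof (rule htpI[OF hok_hng[OF p]])
    fix i assume i: "i \<le> Suc n"
    have m: "g i \<in> Hm C (X i) (Y i)" "hterm n X d Y d' \<phi> i \<in> Hm C (X i) (Y i)"
      using mor_hm[OF g i] hterm_hm[OF X Y p i] by auto
    show "cng X Y f i = Ad C (X i) (Y i) (cng X Y g i) (hterm n X d Y d' (hng X Y \<phi>) i)"
      using m by (simp add: cng_def e[OF i] hterm_hng[OF X Y p i] ng_ad)
  qed
qed

lemma htp_add_l:
  assumes X: "is_cx C n X d" and Y: "is_cx C n Y d'" and g: "mor n X Y g" and k: "mor n X Y k"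
    and fg: "homotopic C n X d Y d' f g"
  shows "homotopic C n X d Y d' (cad X Y k f) (cad X Y k g)"
proof -
  have f: "mor n X Y f" by (rule htp_mor[OF X Y g fg])
  show ?thesis
    by (rule htp_cong[OF _ _ htp_add[OF X Y g k fg]])
      (use mor_hm[OF f] mor_hm[OF g] mor_hm[OF k] in \<open>auto simp: cad_def ad_comm\<close>)
qed

lemma mor_ccp: "mor n X Y f \<Longrightarrow> mor n Y Z g \<Longrightarrow> mor n X Z (ccp X Y Z g f)"
  unfolding mor_def ccp_def by simp
lemma mor_cad: "mor n X Y f \<Longrightarrow> mor n X Y g \<Longrightarrow> mor n X Y (cad X Y f g)"
  unfolding mor_def cad_def by simp
lemma mor_cng: "mor n X Y f \<Longrightarrow> mor n X Y (cng X Y f)"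
  unfolding mor_def cng_def by simp
lemma mor_cid: "is_cx C n X d \<Longrightarrow> mor n X X (cid X)"
  unfolding mor_def cid_def using cx_ob by simp
lemma mor_czr: "is_cx C n X d \<Longrightarrow> is_cx C n Y d' \<Longrightarrow> mor n X Y (czr X Y)"
  unfolding mor_def czr_def using cx_ob by simp


lemma ad_ng_cancel3[simp]: "a \<in> Hm C X Y \<Longrightarrow> b \<in> Hm C X Y \<Longrightarrow> Ad C X Y a (Ad C X Y b (ng X Y a)) = b"
  by (simp add: ad_comm[of b X Y])

lemma dance:
  assumes Xh: "is_cx C n Xh dX" and Yh: "is_cx C n Yh dY"
    and cP: "cxAC C n A B P dP" and cQ: "cxAC C n A B Q dQ"
    and exX: "cexact n Xh dX"
    and f: "is_cmor C n Xh dX Yh dY f" and g: "is_cmor C n Yh dY Xh dX g"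
    and f0: "f 0 = Idn C (Xh 0)" and f1: "f (Suc n) = Idn C (Xh (Suc n))"
    and g0: "g 0 = Idn C (Xh 0)" and g1: "g (Suc n) = Idn C (Xh (Suc n))"
    and XY0: "Yh 0 = Xh 0" and XY1: "Yh (Suc n) = Xh (Suc n)"
    and gf: "homotopic C n Xh dX Xh dX (ccp Xh Yh Xh g f) (cid Xh)"
    and fg: "homotopic C n Yh dY Yh dY (ccp Yh Xh Yh f g) (cid Yh)"
    and iX: "is_cmor C n P dP Xh dX iX" and pX: "is_cmor C n Xh dX P dP pX"
    and iY: "is_cmor C n Q dQ Yh dY iY" and pY: "is_cmor C n Yh dY Q dQ pY"
    and piX: "\<And>i. i \<le> Suc n \<Longrightarrow> Cp C (P i) (Xh i) (P i) (pX i) (iX i) = Idn C (P i)"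
    and piY: "\<And>i. i \<le> Suc n \<Longrightarrow> Cp C (Q i) (Yh i) (Q i) (pY i) (iY i) = Idn C (Q i)"
    and e0: "iY 0 = iX 0" "pY 0 = pX 0" and e1: "iY (Suc n) = iX (Suc n)" "pY (Suc n) = pX (Suc n)"
  shows "heq C n A B P dP Q dQ"
proof -
  have P: "is_cx C n P dP" and Q: "is_cx C n Q dQ" using cP cQ cxAC_cx by auto
  have PQ: "P 0 = A" "Q 0 = A" "P (Suc n) = B" "Q (Suc n) = B" using cP cQ unfolding cxAC_def by auto
  note mf = mor_hm[OF cmor_mor[OF f]] and mg = mor_hm[OF cmor_mor[OF g]]
   and miX = mor_hm[OF cmor_mor[OF iX]] and mpX = mor_hm[OF cmor_mor[OF pX]]
   and miY = mor_hm[OF cmor_mor[OF iY]] and mpY = mor_hm[OF cmor_mor[OF pY]]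
  have piX': "Cp C (P i) (Xh i) Z (Cp C (Xh i) (P i) Z h (pX i)) (iX i) = h" if "i \<le> Suc n" "h \<in> Hm C (P i) Z" for i Z h
    using that miX mpX piX by (simp flip: cp_assoc)
  have piY': "Cp C (Q i) (Yh i) Z (Cp C (Yh i) (Q i) Z h (pY i)) (iY i) = h" if "i \<le> Suc n" "h \<in> Hm C (Q i) Z" for i Z h
    using that miY mpY piY by (simp flip: cp_assoc)
  define w where "w = cad Xh Yh (ccp Xh Yh Yh (ccp Yh Q Yh iY pY) f) (cng Xh Yh (ccp Xh Xh Yh f (ccp Xh P Xh iX pX)))"
  define u where "u = ccp P Xh Q (ccp Xh Yh Q pY f) iX"
  define v where "v = ccp Q Yh P (ccp Yh Xh P pX g) iY"
  define N where "N = ccp P Xh P (ccp Xh Yh P (ccp Yh Xh P pX g) w) iX"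
  define M where "M = ccp Q Yh Q (ccp Yh Xh Q (ccp Xh Yh Q pY w) g) iY"
  have eX: "is_cmor C n Xh dX Xh dX (ccp Xh P Xh iX pX)" by (rule cmor_ccp[OF Xh P Xh pX iX])
  have eY: "is_cmor C n Yh dY Yh dY (ccp Yh Q Yh iY pY)" by (rule cmor_ccp[OF Yh Q Yh pY iY])
  have w: "is_cmor C n Xh dX Yh dY w" unfolding w_def
    by (rule cmor_cad[OF Xh Yh cmor_ccp[OF Xh Yh Yh f eY] cmor_cng[OF Xh Yh cmor_ccp[OF Xh Xh Yh eX f]]])
  have u: "is_cmor C n P dP Q dQ u" unfolding u_def by (rule cmor_ccp[OF P Xh Q iX cmor_ccp[OF Xh Yh Q f pY]])
  have v: "is_cmor C n Q dQ P dP v" unfolding v_def by (rule cmor_ccp[OF Q Yh P iY cmor_ccp[OF Yh Xh P g pX]])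
  have N: "is_cmor C n P dP P dP N" unfolding N_def
    by (rule cmor_ccp[OF P Xh P iX cmor_ccp[OF Xh Yh P w cmor_ccp[OF Yh Xh P g pX]]])
  have M: "is_cmor C n Q dQ Q dQ M" unfolding M_def
    by (rule cmor_ccp[OF Q Yh Q iY cmor_ccp[OF Yh Xh Q g cmor_ccp[OF Xh Yh Q w pY]]])
  note mw = mor_hm[OF cmor_mor[OF w]]
  have w0: "w 0 = Zr C (Xh 0) (Yh 0)"
    using mf[of 0] mpX[of 0] miX[of 0] f0 e0 XY0 PQ by (simp add: w_def ccp_def cad_def cng_def)
  have w1: "w (Suc n) = Zr C (Xh (Suc n)) (Yh (Suc n))"
    using mf[of "Suc n"] mpX[of "Suc n"] miX[of "Suc n"] f1 e1 XY1 PQ by (simp add: w_def ccp_def cad_def cng_def)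
  have ad: "homotopic C n P dP P dP (ccp P Q P v u) (cad P P (cid P) N)"
  proof -
    have a2: "homotopic C n P dP Xh dX (ccp P Xh Xh (ccp Xh Yh Xh g f) iX) (ccp P Xh Xh (cid Xh) iX)"
      by (rule htp_pre[OF P Xh Xh mor_cid[OF Xh] iX gf])
    have a3: "homotopic C n P dP P dP (ccp P Xh P pX (ccp P Xh Xh (ccp Xh Yh Xh g f) iX)) (ccp P Xh P pX (ccp P Xh Xh (cid Xh) iX))"
      by (rule htp_post[OF P Xh P mor_ccp[OF cmor_mor[OF iX] mor_cid[OF Xh]] pX a2])
    have a4: "homotopic C n P dP P dP (cad P P (ccp P Xh P pX (ccp P Xh Xh (ccp Xh Yh Xh g f) iX)) N) (cad P P (ccp P Xh P pX (ccp P Xh Xh (cid Xh) iX)) N)"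
      by (rule htp_add[OF P P mor_ccp[OF mor_ccp[OF cmor_mor[OF iX] mor_cid[OF Xh]] cmor_mor[OF pX]] cmor_mor[OF N] a3])
    show ?thesis
    proof (rule htp_cong[OF _ _ a4])
      fix i assume i: "i \<le> Suc n"
      note m = mf[OF i] mg[OF i] miX[OF i] mpX[OF i] miY[OF i] mpY[OF i]
      show "cad P P (ccp P Xh P pX (ccp P Xh Xh (ccp Xh Yh Xh g f) iX)) N i = ccp P Q P v u i"
        using m i by (simp add: cad_def ccp_def cng_def N_def w_def u_def v_def cp_assoc cp_ad_l cp_ad_r cp_ng_l cp_ng_r piX' piY')
      show "cad P P (ccp P Xh P pX (ccp P Xh Xh (cid Xh) iX)) N i = cad P P (cid P) N i"
        using m i by (simp add: cad_def ccp_def cid_def piX)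
    qed
  qed
  have bd: "homotopic C n Q dQ Q dQ (ccp Q P Q u v) (cad Q Q (cid Q) (cng Q Q M))"
  proof -
    have a2: "homotopic C n Q dQ Yh dY (ccp Q Yh Yh (ccp Yh Xh Yh f g) iY) (ccp Q Yh Yh (cid Yh) iY)"
      by (rule htp_pre[OF Q Yh Yh mor_cid[OF Yh] iY fg])
    have a3: "homotopic C n Q dQ Q dQ (ccp Q Yh Q pY (ccp Q Yh Yh (ccp Yh Xh Yh f g) iY)) (ccp Q Yh Q pY (ccp Q Yh Yh (cid Yh) iY))"
      by (rule htp_post[OF Q Yh Q mor_ccp[OF cmor_mor[OF iY] mor_cid[OF Yh]] pY a2])
    have a4: "homotopic C n Q dQ Q dQ (cad Q Q (ccp Q Yh Q pY (ccp Q Yh Yh (ccp Yh Xh Yh f g) iY)) (cng Q Q M)) (cad Q Q (ccp Q Yh Q pY (ccp Q Yh Yh (cid Yh) iY)) (cng Q Q M))"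
      by (rule htp_add[OF Q Q mor_ccp[OF mor_ccp[OF cmor_mor[OF iY] mor_cid[OF Yh]] cmor_mor[OF pY]] mor_cng[OF cmor_mor[OF M]] a3])
    show ?thesis
    proof (rule htp_cong[OF _ _ a4])
      fix i assume i: "i \<le> Suc n"
      note m = mf[OF i] mg[OF i] miX[OF i] mpX[OF i] miY[OF i] mpY[OF i]
      show "cad Q Q (ccp Q Yh Q pY (ccp Q Yh Yh (ccp Yh Xh Yh f g) iY)) (cng Q Q M) i = ccp Q P Q u v i"
        using m i by (simp add: cad_def ccp_def cng_def M_def w_def u_def v_def cp_assoc cp_ad_l cp_ad_r cp_ng_l cp_ng_r piX' piY' piY ng_ad)
      show "cad Q Q (ccp Q Yh Q pY (ccp Q Yh Yh (cid Yh) iY)) (cng Q Q M) i = cad Q Q (cid Q) (cng Q Q M) i"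
        using m i by (simp add: cad_def ccp_def cid_def piY)
    qed
  qed
  have NN: "homotopic C n P dP P dP (ccp P P P N N) (czr P P)"
  proof -
    define K where "K = ccp Yh P P N (ccp Yh Xh P pX g)"
    have K: "is_cmor C n Yh dY P dP K" unfolding K_def by (rule cmor_ccp[OF Yh P P cmor_ccp[OF Yh Xh P g pX] N])
    have K1: "K (Suc n) = Zr C (Yh (Suc n)) (P (Suc n))"
      using mf[of "Suc n"] mg[of "Suc n"] miX[of "Suc n"] mpX[of "Suc n"] w1 cx_ob[OF P, of "Suc n"] cx_ob[OF Yh, of "Suc n"]
        cx_ob[OF Xh, of "Suc n"]
      by (simp add: K_def N_def ccp_def)
    have c1: "homotopic C n Xh dX P dP (ccp Xh Yh P K w) (czr Xh P)"
      by (rule zs_ze_htp[OF Xh Yh P exX w w0 K K1])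
    have c2: "homotopic C n P dP P dP (ccp P Xh P (ccp Xh Yh P K w) iX) (ccp P Xh P (czr Xh P) iX)"
      by (rule htp_pre[OF P Xh P mor_czr[OF Xh P] iX c1])
    show ?thesis
    proof (rule htp_cong[OF _ _ c2])
      fix i assume i: "i \<le> Suc n"
      note m = mf[OF i] mg[OF i] miX[OF i] mpX[OF i] miY[OF i] mpY[OF i] mw[OF i]
      show "ccp P Xh P (ccp Xh Yh P K w) iX i = ccp P P P N N i"
        using m i by (simp add: ccp_def K_def N_def cp_assoc)
      show "ccp P Xh P (czr Xh P) iX i = czr P P i"
        using m i cx_ob[OF P i] by (simp add: ccp_def czr_def)
    qed
  qed
  have MM: "homotopic C n Q dQ Q dQ (ccp Q Q Q M M) (czr Q Q)"
  proof -
    define K where "K = ccp Yh Q Q M pY"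
    have K: "is_cmor C n Yh dY Q dQ K" unfolding K_def by (rule cmor_ccp[OF Yh Q Q pY M])
    have K1: "K (Suc n) = Zr C (Yh (Suc n)) (Q (Suc n))"
      using mf[of "Suc n"] mg[of "Suc n"] miY[of "Suc n"] mpY[of "Suc n"] w1 cx_ob[OF Q, of "Suc n"] cx_ob[OF Yh, of "Suc n"]
        cx_ob[OF Xh, of "Suc n"]
      by (simp add: K_def M_def ccp_def)
    have c1: "homotopic C n Xh dX Q dQ (ccp Xh Yh Q K w) (czr Xh Q)"
      by (rule zs_ze_htp[OF Xh Yh Q exX w w0 K K1])
    have c2: "homotopic C n Q dQ Q dQ (ccp Q Xh Q (ccp Xh Yh Q K w) (ccp Q Yh Xh g iY)) (ccp Q Xh Q (czr Xh Q) (ccp Q Yh Xh g iY))"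
      by (rule htp_pre[OF Q Xh Q mor_czr[OF Xh Q] cmor_ccp[OF Q Yh Xh iY g] c1])
    show ?thesis
    proof (rule htp_cong[OF _ _ c2])
      fix i assume i: "i \<le> Suc n"
      note m = mf[OF i] mg[OF i] miX[OF i] mpX[OF i] miY[OF i] mpY[OF i] mw[OF i]
      show "ccp Q Xh Q (ccp Xh Yh Q K w) (ccp Q Yh Xh g iY) i = ccp Q Q Q M M i"
        using m i by (simp add: ccp_def K_def M_def cp_assoc)
      show "ccp Q Xh Q (czr Xh Q) (ccp Q Yh Xh g iY) i = czr Q Q i"
        using m i cx_ob[OF Q i] cx_ob[OF Xh i] by (simp add: ccp_def czr_def)
    qed
  qed
  define h where "h = cad P P (cid P) (cng P P N)"
  define h' where "h' = cad Q Q (cid Q) M"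
  define v' where "v' = ccp Q P P h v"
  define v'' where "v'' = ccp Q Q P v h'"
  have h: "is_cmor C n P dP P dP h" unfolding h_def by (rule cmor_cad[OF P P cmor_cid[OF P] cmor_cng[OF P P N]])
  have h': "is_cmor C n Q dQ Q dQ h'" unfolding h'_def by (rule cmor_cad[OF Q Q cmor_cid[OF Q] M])
  have v': "is_cmor C n Q dQ P dP v'" unfolding v'_def by (rule cmor_ccp[OF Q P P v h])
  have v'': "is_cmor C n Q dQ P dP v''" unfolding v''_def by (rule cmor_ccp[OF Q Q P h' v])
  note mN = mor_hm[OF cmor_mor[OF N]] and mM = mor_hm[OF cmor_mor[OF M]] and mu = mor_hm[OF cmor_mor[OF u]]
    and mv = mor_hm[OF cmor_mor[OF v]] and mv' = mor_hm[OF cmor_mor[OF v']] and mv'' = mor_hm[OF cmor_mor[OF v'']]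
  have E: "homotopic C n P dP P dP (ccp P Q P v' u) (cid P)"
  proof -
    have e1: "homotopic C n P dP P dP (ccp P P P h (ccp P Q P v u)) (ccp P P P h (cad P P (cid P) N))"
      by (rule htp_post[OF P P P mor_cad[OF mor_cid[OF P] cmor_mor[OF N]] h ad])
    have Ea: "homotopic C n P dP P dP (ccp P Q P v' u) (ccp P P P h (cad P P (cid P) N))"
      by (rule htp_cong[OF _ _ e1]) (use mu mv mor_hm[OF cmor_mor[OF h]] in \<open>auto simp: ccp_def v'_def cp_assoc\<close>)
    have e2: "homotopic C n P dP P dP (cad P P (cid P) (cng P P (ccp P P P N N))) (cad P P (cid P) (cng P P (czr P P)))"
      by (rule htp_add_l[OF P P mor_cng[OF mor_czr[OF P P]] mor_cid[OF P] htp_ng[OF P P mor_czr[OF P P] NN]])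
    have Eb: "homotopic C n P dP P dP (ccp P P P h (cad P P (cid P) N)) (cid P)"
    proof (rule htp_cong[OF _ _ e2])
      fix i assume i: "i \<le> Suc n"
      note m = mN[OF i] cx_ob[OF P i]
      show "cad P P (cid P) (cng P P (ccp P P P N N)) i = ccp P P P h (cad P P (cid P) N) i"
        using m by (simp add: ccp_def cad_def cng_def cid_def h_def cp_ad_l cp_ad_r cp_ng_l ad_assoc)
      show "cad P P (cid P) (cng P P (czr P P)) i = cid P i"
        using m by (simp add: cad_def cng_def cid_def czr_def)
    qed
    show ?thesis by (rule htp_trans[OF P P mor_cid[OF P] Ea Eb])
  qed
  have F: "homotopic C n Q dQ Q dQ (ccp Q P Q u v'') (cid Q)"
  proof -
    have f1: "homotopic C n Q dQ Q dQ (ccp Q Q Q (ccp Q P Q u v) h') (ccp Q Q Q (cad Q Q (cid Q) (cng Q Q M)) h')"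
      by (rule htp_pre[OF Q Q Q mor_cad[OF mor_cid[OF Q] mor_cng[OF cmor_mor[OF M]]] h' bd])
    have Fa: "homotopic C n Q dQ Q dQ (ccp Q P Q u v'') (ccp Q Q Q (cad Q Q (cid Q) (cng Q Q M)) h')"
      by (rule htp_cong[OF _ _ f1]) (use mu mv mor_hm[OF cmor_mor[OF h']] in \<open>auto simp: ccp_def v''_def cp_assoc\<close>)
    have f2: "homotopic C n Q dQ Q dQ (cad Q Q (cid Q) (cng Q Q (ccp Q Q Q M M))) (cad Q Q (cid Q) (cng Q Q (czr Q Q)))"
      by (rule htp_add_l[OF Q Q mor_cng[OF mor_czr[OF Q Q]] mor_cid[OF Q] htp_ng[OF Q Q mor_czr[OF Q Q] MM]])
    have Fb: "homotopic C n Q dQ Q dQ (ccp Q Q Q (cad Q Q (cid Q) (cng Q Q M)) h') (cid Q)"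
    proof (rule htp_cong[OF _ _ f2])
      fix i assume i: "i \<le> Suc n"
      note m = mM[OF i] cx_ob[OF Q i]
      show "cad Q Q (cid Q) (cng Q Q (ccp Q Q Q M M)) i = ccp Q Q Q (cad Q Q (cid Q) (cng Q Q M)) h' i"
        using m by (simp add: ccp_def cad_def cng_def cid_def h'_def cp_ad_l cp_ad_r cp_ng_l ad_assoc)
      show "cad Q Q (cid Q) (cng Q Q (czr Q Q)) i = cid Q i"
        using m by (simp add: cad_def cng_def cid_def czr_def)
    qed
    show ?thesis by (rule htp_trans[OF Q Q mor_cid[OF Q] Fa Fb])
  qed
  have G: "homotopic C n Q dQ P dP v' v''"
  proof -
    have g1: "homotopic C n Q dQ P dP (ccp Q Q P v' (ccp Q P Q u v'')) (ccp Q Q P v' (cid Q))"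
      by (rule htp_post[OF Q Q P mor_cid[OF Q] v' F])
    have G1: "homotopic C n Q dQ P dP v' (ccp Q Q P v' (ccp Q P Q u v''))"
      by (rule htp_cong[OF _ _ htp_sym[OF Q P mor_ccp[OF mor_cid[OF Q] cmor_mor[OF v']] g1]])
        (use mv' in \<open>auto simp: ccp_def cid_def\<close>)
    have g2: "homotopic C n Q dQ P dP (ccp Q P P (ccp P Q P v' u) v'') (ccp Q P P (cid P) v'')"
      by (rule htp_pre[OF Q P P mor_cid[OF P] v'' E])
    have G2: "homotopic C n Q dQ P dP (ccp Q Q P v' (ccp Q P Q u v'')) v''"
      by (rule htp_cong[OF _ _ g2]) (use mv' mv'' mu in \<open>auto simp: ccp_def cid_def cp_assoc\<close>)
    show ?thesis by (rule htp_trans[OF Q P cmor_mor[OF v''] G1 G2])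
  qed
  have H: "homotopic C n Q dQ Q dQ (ccp Q P Q u v') (cid Q)"
    by (rule htp_trans[OF Q Q mor_cid[OF Q] htp_post[OF Q P Q cmor_mor[OF v''] u G] F])
  have u0: "u 0 = Idn C A" "u (Suc n) = Idn C B"
    using mf[of 0] miX[of 0] mpX[of 0] piX[of 0] f0 e0 XY0 PQ mf[of "Suc n"] miX[of "Suc n"] mpX[of "Suc n"] piX[of "Suc n"] f1 e1 XY1
    by (simp_all add: u_def ccp_def)
  have vv0: "v 0 = Idn C A" "v (Suc n) = Idn C B"
    using mg[of 0] miY[of 0] mpY[of 0] piY[of 0] e0 XY0 PQ mg[of "Suc n"] miY[of "Suc n"] mpY[of "Suc n"] piY[of "Suc n"] e1 XY1
      g0 g1 piX[of 0] piX[of "Suc n"] miX[of 0] mpX[of 0] miX[of "Suc n"] mpX[of "Suc n"]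
    by (simp_all add: v_def ccp_def)
  have N0: "N 0 = Zr C A A" "N (Suc n) = Zr C B B"
    using mg[of 0] miX[of 0] mpX[of 0] w0 XY0 PQ mg[of "Suc n"] miX[of "Suc n"] mpX[of "Suc n"] w1 XY1
      cx_ob[OF Xh, of 0] cx_ob[OF Xh, of "Suc n"] cx_ob[OF P, of 0] cx_ob[OF P, of "Suc n"]
    by (simp_all add: N_def ccp_def)
  have v'0: "v' 0 = Idn C A" "v' (Suc n) = Idn C B"
    using vv0 N0 cx_ob[OF P, of 0] cx_ob[OF P, of "Suc n"] PQ by (simp_all add: v'_def h_def ccp_def cad_def cid_def cng_def)
  show ?thesis unfolding heq_alt using cP cQ u u0 v' v'0 E H by blast
qed

end


locale afun = C: padd C + D: padd D for C :: "('o,'m) addcat" and D :: "('p,'q) addcat" +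
  fixes Fo :: "'o \<Rightarrow> 'p" and Fm :: "'o \<Rightarrow> 'o \<Rightarrow> 'm \<Rightarrow> 'q"
  assumes af: "is_add_functor C D Fo Fm"
begin

lemma Fo_ob: "X \<in> Ob C \<Longrightarrow> Fo X \<in> Ob D" using af unfolding is_add_functor_def by blast
lemma Fm_hm: "f \<in> Hm C X Y \<Longrightarrow> Fm X Y f \<in> Hm D (Fo X) (Fo Y)"
  using af C.hm_obs unfolding is_add_functor_def by blast
lemma Fm_idn: "X \<in> Ob C \<Longrightarrow> Fm X X (Idn C X) = Idn D (Fo X)" using af unfolding is_add_functor_def by blast
lemma Fm_cp: "f \<in> Hm C X Y \<Longrightarrow> g \<in> Hm C Y Z \<Longrightarrow> Fm X Z (Cp C X Y Z g f) = Cp D (Fo X) (Fo Y) (Fo Z) (Fm Y Z g) (Fm X Y f)"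
  using af C.hm_obs unfolding is_add_functor_def by metis
lemma Fm_ad: "f \<in> Hm C X Y \<Longrightarrow> g \<in> Hm C X Y \<Longrightarrow> Fm X Y (Ad C X Y f g) = Ad D (Fo X) (Fo Y) (Fm X Y f) (Fm X Y g)"
  using af C.hm_obs unfolding is_add_functor_def by metis

lemma Fm_zr: assumes "X \<in> Ob C" "Y \<in> Ob C" shows "Fm X Y (Zr C X Y) = Zr D (Fo X) (Fo Y)"
proof -
  have z: "Zr C X Y \<in> Hm C X Y" using assms by simp
  have m: "Fm X Y (Zr C X Y) \<in> Hm D (Fo X) (Fo Y)" using Fm_hm[OF z] .
  have "Ad D (Fo X) (Fo Y) (Fm X Y (Zr C X Y)) (Fm X Y (Zr C X Y)) = Ad D (Fo X) (Fo Y) (Fm X Y (Zr C X Y)) (Zr D (Fo X) (Fo Y))"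
    using Fm_ad[OF z z, symmetric] z m by simp
  then show ?thesis using D.ad_cancel[OF m m] m D.hm_obs[OF m] by simp
qed

lemma Fm_ng: assumes f: "f \<in> Hm C X Y" shows "Fm X Y (C.ng X Y f) = D.ng (Fo X) (Fo Y) (Fm X Y f)"
proof -
  have o: "X \<in> Ob C" "Y \<in> Ob C" using C.hm_obs[OF f] by auto
  have "Ad D (Fo X) (Fo Y) (Fm X Y f) (Fm X Y (C.ng X Y f)) = Zr D (Fo X) (Fo Y)"
    using Fm_ad[OF f C.ng_hm[OF f], symmetric] f o by (simp add: Fm_zr)
  then show ?thesis using D.ng_unique Fm_hm f by simp
qed

definition FX :: "(nat \<Rightarrow> 'o) \<Rightarrow> nat \<Rightarrow> 'p" where "FX X = (\<lambda>i. Fo (X i))"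
definition Fd :: "(nat \<Rightarrow> 'o) \<Rightarrow> (nat \<Rightarrow> 'm) \<Rightarrow> nat \<Rightarrow> 'q" where "Fd X d = (\<lambda>i. Fm (X i) (X (Suc i)) (d i))"
definition Ff :: "(nat \<Rightarrow> 'o) \<Rightarrow> (nat \<Rightarrow> 'o) \<Rightarrow> (nat \<Rightarrow> 'm) \<Rightarrow> nat \<Rightarrow> 'q" where "Ff X Y f = (\<lambda>i. Fm (X i) (Y i) (f i))"

lemma F_cx: assumes X: "is_cx C n X d" shows "is_cx D n (FX X) (Fd X d)"
  unfolding is_cx_def FX_def Fd_def
proof (intro conjI allI impI)
  fix i assume "i \<le> Suc n" then show "Fo (X i) \<in> Ob D" using Fo_ob C.cx_ob[OF X] by blast
next
  fix i assume "i \<le> n" then show "Fm (X i) (X (Suc i)) (d i) \<in> Hm D (Fo (X i)) (Fo (X (Suc i)))"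
    using Fm_hm C.cx_d[OF X] by blast
next
  fix i assume i: "i < n"
  have m: "d i \<in> Hm C (X i) (X (Suc i))" "d (Suc i) \<in> Hm C (X (Suc i)) (X (Suc (Suc i)))" using C.cx_d[OF X] i by auto
  show "Cp D (Fo (X i)) (Fo (X (Suc i))) (Fo (X (Suc (Suc i)))) (Fm (X (Suc i)) (X (Suc (Suc i))) (d (Suc i))) (Fm (X i) (X (Suc i)) (d i)) =
       Zr D (Fo (X i)) (Fo (X (Suc (Suc i))))"
    using Fm_cp[OF m, symmetric] C.cx_dd[OF X i] Fm_zr C.cx_ob[OF X, of i] C.cx_ob[OF X, of "Suc (Suc i)"] i by simp
qed

lemma F_cxAC: "cxAC C n A B X d \<Longrightarrow> cxAC D n (Fo A) (Fo B) (FX X) (Fd X d)"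
  unfolding cxAC_def using F_cx by (auto simp: FX_def)

lemma F_mor: "C.mor n X Y f \<Longrightarrow> D.mor n (FX X) (FX Y) (Ff X Y f)"
  unfolding C.mor_def D.mor_def FX_def Ff_def using Fm_hm by blast

lemma F_cmor: assumes X: "is_cx C n X d" and Y: "is_cx C n Y d'" and f: "is_cmor C n X d Y d' f"
  shows "is_cmor D n (FX X) (Fd X d) (FX Y) (Fd Y d') (Ff X Y f)"
proof (rule D.cmorI)
  fix i assume "i \<le> Suc n" then show "Ff X Y f i \<in> Hm D (FX X i) (FX Y i)"
    using F_mor[OF C.cmor_mor[OF f]] D.mor_hm by blast
next
  fix i assume i: "i \<le> n"
  have m: "d i \<in> Hm C (X i) (X (Suc i))" "d' i \<in> Hm C (Y i) (Y (Suc i))" "f i \<in> Hm C (X i) (Y i)"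
    "f (Suc i) \<in> Hm C (X (Suc i)) (Y (Suc i))"
    using C.cx_d[OF X] C.cx_d[OF Y] C.mor_hm[OF C.cmor_mor[OF f]] i by auto
  show "Cp D (FX X i) (FX X (Suc i)) (FX Y (Suc i)) (Ff X Y f (Suc i)) (Fd X d i) = Cp D (FX X i) (FX Y i) (FX Y (Suc i)) (Fd Y d' i) (Ff X Y f i)"
    unfolding FX_def Ff_def Fd_def using Fm_cp[OF m(1) m(4)] Fm_cp[OF m(3) m(2)] C.cmor_comm[OF f i] by simp
qed

lemma F_hterm:
  assumes X: "is_cx C n X d" and Y: "is_cx C n Y d'" and p: "C.hok n X Y \<phi>" and i: "i \<le> Suc n"
  shows "Fm (X i) (Y i) (C.hterm n X d Y d' \<phi> i) = D.hterm n (FX X) (Fd X d) (FX Y) (Fd Y d') (\<lambda>i. Fm (X i) (Y (i - 1)) (\<phi> i)) i"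
  using i
proof (rule C.hterm_cases)
  assume a: "i = 0" "i \<noteq> Suc n"
  have m: "\<phi> (Suc 0) \<in> Hm C (X (Suc 0)) (Y 0)" "d 0 \<in> Hm C (X 0) (X (Suc 0))"
    using C.hok_hm[OF p, of 1] C.cx_d[OF X, of 0] a by auto
  show ?thesis using a m C.hm_obs[OF m(1)] C.hm_obs[OF m(2)] Fm_hm[OF m(1)] Fm_hm[OF m(2)]
    by (simp add: C.hterm_0 D.hterm_0 FX_def Fd_def Fm_ad Fm_cp Fm_zr Fo_ob)
next
  assume a: "i = Suc n" "i \<noteq> 0"
  have m: "\<phi> (Suc n) \<in> Hm C (X (Suc n)) (Y n)" "d' n \<in> Hm C (Y n) (Y (Suc n))"
    using C.hok_hm[OF p, of "Suc n"] C.cx_d[OF Y, of n] by auto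
  show ?thesis using a m C.hm_obs[OF m(1)] C.hm_obs[OF m(2)] Fm_hm[OF m(1)] Fm_hm[OF m(2)]
    by (simp add: C.hterm_top D.hterm_top FX_def Fd_def Fm_ad Fm_cp Fm_zr Fo_ob)
next
  assume a: "i \<noteq> 0" "i \<noteq> Suc n" "i \<le> n"
  then obtain j where j: "i = Suc j" by (cases i) auto
  have m: "\<phi> (Suc j) \<in> Hm C (X (Suc j)) (Y j)" "d' j \<in> Hm C (Y j) (Y (Suc j))"
    "\<phi> (Suc (Suc j)) \<in> Hm C (X (Suc (Suc j))) (Y (Suc j))" "d (Suc j) \<in> Hm C (X (Suc j)) (X (Suc (Suc j)))"
    using C.hok_hm[OF p, of i] C.hok_hm[OF p, of "Suc i"] C.cx_d[OF Y, of j] C.cx_d[OF X, of i] a j by auto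
  show ?thesis using a j m Fm_hm[OF m(1)] Fm_hm[OF m(2)] Fm_hm[OF m(3)] Fm_hm[OF m(4)]
    by (simp add: C.hterm_mid D.hterm_mid FX_def Fd_def Fm_ad Fm_cp)
qed

lemma F_htp:
  assumes X: "is_cx C n X d" and Y: "is_cx C n Y d'" and g: "C.mor n X Y g"
    and h: "homotopic C n X d Y d' f g"
  shows "homotopic D n (FX X) (Fd X d) (FX Y) (Fd Y d') (Ff X Y f) (Ff X Y g)"
proof -
  obtain \<phi> where p: "C.hok n X Y \<phi>" and e: "\<And>i. i \<le> Suc n \<Longrightarrow> f i = Ad C (X i) (Y i) (g i) (C.hterm n X d Y d' \<phi> i)"
    using h unfolding C.homotopic_alt by blast
  have p': "D.hok n (FX X) (FX Y) (\<lambda>i. Fm (X i) (Y (i - 1)) (\<phi> i))"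
    unfolding D.hok_def FX_def using C.hok_hm[OF p] Fm_hm by simp
  show ?thesis
  proof (rule D.htpI[OF p'])
    fix i assume i: "i \<le> Suc n"
    show "Ff X Y f i = Ad D (FX X i) (FX Y i) (Ff X Y g i) (D.hterm n (FX X) (Fd X d) (FX Y) (Fd Y d') (\<lambda>i. Fm (X i) (Y (i - 1)) (\<phi> i)) i)"
      using e[OF i] Fm_ad[OF C.mor_hm[OF g i] C.hterm_hm[OF X Y p i]] F_hterm[OF X Y p i]
      by (simp add: Ff_def FX_def)
  qed
qed

lemma F_heq:
  assumes h: "heq C n A B X d Y d'"
  shows "heq D n (Fo A) (Fo B) (FX X) (Fd X d) (FX Y) (Fd Y d')"
proof -
  have cX: "cxAC C n A B X d" and cY: "cxAC C n A B Y d'" using h unfolding heq_def by blast+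
  have X: "is_cx C n X d" and Y: "is_cx C n Y d'" using cX cY C.cxAC_cx by blast+
  obtain f g where f: "is_cmor C n X d Y d' f" and f0: "f 0 = Idn C A" and f1: "f (Suc n) = Idn C B"
    and g: "is_cmor C n Y d' X d g" and g0: "g 0 = Idn C A" and g1: "g (Suc n) = Idn C B"
    and gf: "homotopic C n X d X d (C.ccp X Y X g f) (C.cid X)" and fg: "homotopic C n Y d' Y d' (C.ccp Y X Y f g) (C.cid Y)"
    using h unfolding C.heq_alt by blast
  have A: "A = X 0" "B = X (Suc n)" using cX unfolding cxAC_def by auto
  have oA: "A \<in> Ob C" "B \<in> Ob C" using C.cx_ob[OF X, of 0] C.cx_ob[OF X, of "Suc n"] A by auto
  have gf': "homotopic D n (FX X) (Fd X d) (FX X) (Fd X d) (D.ccp (FX X) (FX Y) (FX X) (Ff Y X g) (Ff X Y f)) (D.cid (FX X))"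
    by (rule D.htp_cong[OF _ _ F_htp[OF X X C.mor_cid[OF X] gf]])
      (use C.mor_hm[OF C.cmor_mor[OF f]] C.mor_hm[OF C.cmor_mor[OF g]] C.cx_ob[OF X] in \<open>auto simp: Ff_def FX_def C.ccp_def D.ccp_def C.cid_def D.cid_def Fm_cp Fm_idn\<close>)
  have fg': "homotopic D n (FX Y) (Fd Y d') (FX Y) (Fd Y d') (D.ccp (FX Y) (FX X) (FX Y) (Ff X Y f) (Ff Y X g)) (D.cid (FX Y))"
    by (rule D.htp_cong[OF _ _ F_htp[OF Y Y C.mor_cid[OF Y] fg]])
      (use C.mor_hm[OF C.cmor_mor[OF f]] C.mor_hm[OF C.cmor_mor[OF g]] C.cx_ob[OF Y] in \<open>auto simp: Ff_def FX_def C.ccp_def D.ccp_def C.cid_def D.cid_def Fm_cp Fm_idn\<close>)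
  have e: "Ff X Y f 0 = Idn D (Fo A)" "Ff X Y f (Suc n) = Idn D (Fo B)" "Ff Y X g 0 = Idn D (Fo A)" "Ff Y X g (Suc n) = Idn D (Fo B)"
    using f0 f1 g0 g1 oA A cY unfolding cxAC_def by (auto simp: Ff_def Fm_idn)
  show ?thesis unfolding D.heq_alt
    using F_cxAC[OF cX] F_cxAC[OF cY] F_cmor[OF X Y f] F_cmor[OF Y X g] e gf' fg' by blast
qed

end


context padd begin

lemma ic_Ob: "(X, e) \<in> Ob (ic C) \<longleftrightarrow> X \<in> Ob C \<and> e \<in> Hm C X X \<and> Cp C X X X e e = e"
  unfolding ic_def by simp

lemma ic_Hm: "x \<in> Hm (ic C) (X, eX) (Y, eY) \<longleftrightarrow> (X, eX) \<in> Ob (ic C) \<and> (Y, eY) \<in> Ob (ic C) \<and>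
   (\<exists>f. x = (eY, f, eX) \<and> f \<in> Hm C X Y \<and> Cp C X X Y f eX = f \<and> Cp C X Y Y eY f = f)"
  unfolding ic_def by auto

lemma ic_Hm_triple: "(a, f, b) \<in> Hm (ic C) (X, eX) (Y, eY) \<longleftrightarrow> (X, eX) \<in> Ob (ic C) \<and> (Y, eY) \<in> Ob (ic C) \<and>
   a = eY \<and> b = eX \<and> f \<in> Hm C X Y \<and> Cp C X X Y f eX = f \<and> Cp C X Y Y eY f = f"
  unfolding ic_Hm by auto

lemma ic_Cp[simp]: "Cp (ic C) (X, eX) (Y, eY) (Z, eZ) (a, g, b) (a', f, b') = (eZ, Cp C X Y Z g f, eX)"
  unfolding ic_def by simp
lemma ic_Idn[simp]: "Idn (ic C) (X, e) = (e, e, e)"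
  unfolding ic_def by simp
lemma ic_Ad[simp]: "Ad (ic C) (X, eX) (Y, eY) (a, f, b) (a', g, b') = (eY, Ad C X Y f g, eX)"
  unfolding ic_def by simp
lemma ic_Zr[simp]: "Zr (ic C) (X, eX) (Y, eY) = (eY, Zr C X Y, eX)"
  unfolding ic_def by simp

lemma ic_cat: "is_category (ic C)"
  unfolding is_category_def
proof (intro conjI allI ballI impI)
  fix X Y :: "'o \<times> 'm" assume "X \<notin> Ob (ic C) \<or> Y \<notin> Ob (ic C)"
  then show "Hm (ic C) X Y = {}"
    by (cases X, cases Y) (auto simp: ic_Hm)
next
  fix X :: "'o \<times> 'm" assume "X \<in> Ob (ic C)"
  then show "Idn (ic C) X \<in> Hm (ic C) X X"
    by (cases X) (auto simp: ic_Hm_triple ic_Ob)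
next
  fix X Y Z :: "'o \<times> 'm" and f g assume a: "X \<in> Ob (ic C)" "Y \<in> Ob (ic C)" "Z \<in> Ob (ic C)" "f \<in> Hm (ic C) X Y" "g \<in> Hm (ic C) Y Z"
  obtain X1 X2 Y1 Y2 Z1 Z2 where o: "X = (X1, X2)" "Y = (Y1, Y2)" "Z = (Z1, Z2)" by (cases X, cases Y, cases Z) auto
  obtain f1 f2 f3 g1 g2 g3 where fg: "f = (f1, f2, f3)" "g = (g1, g2, g3)" by (cases f, cases g) auto
  have F: "(X1, X2) \<in> Ob (ic C)" "(Y1, Y2) \<in> Ob (ic C)" "(Z1, Z2) \<in> Ob (ic C)" "f1 = Y2" "f3 = X2" "g1 = Z2" "g3 = Y2"
    "f2 \<in> Hm C X1 Y1" "Cp C X1 X1 Y1 f2 X2 = f2" "Cp C X1 Y1 Y1 Y2 f2 = f2" "g2 \<in> Hm C Y1 Z1"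
    "Cp C Y1 Y1 Z1 g2 Y2 = g2" "Cp C Y1 Z1 Z1 Z2 g2 = g2" using a unfolding o fg ic_Hm_triple by auto
  have X2: "X2 \<in> Hm C X1 X1" "Z2 \<in> Hm C Z1 Z1" using F(1,3) unfolding ic_Ob by auto
  have "Cp C X1 X1 Z1 (Cp C X1 Y1 Z1 g2 f2) X2 = Cp C X1 Y1 Z1 g2 (Cp C X1 X1 Y1 f2 X2)"
    using cp_assoc[OF X2(1) F(8) F(11)] by simp
  moreover have "Cp C X1 Z1 Z1 Z2 (Cp C X1 Y1 Z1 g2 f2) = Cp C X1 Y1 Z1 (Cp C Y1 Z1 Z1 Z2 g2) f2"
    using F X2 by (simp add: cp_assoc)
  ultimately show "Cp (ic C) X Y Z g f \<in> Hm (ic C) X Z"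
    using F unfolding o fg by (simp add: ic_Hm_triple)
next
  fix X Y Z W :: "'o \<times> 'm" and f g h assume a: "X \<in> Ob (ic C)" "Y \<in> Ob (ic C)" "Z \<in> Ob (ic C)" "W \<in> Ob (ic C)"
    "f \<in> Hm (ic C) X Y" "g \<in> Hm (ic C) Y Z" "h \<in> Hm (ic C) Z W"
  obtain X1 X2 Y1 Y2 Z1 Z2 W1 W2 where o: "X = (X1, X2)" "Y = (Y1, Y2)" "Z = (Z1, Z2)" "W = (W1, W2)"
    by (cases X, cases Y, cases Z, cases W) auto
  obtain f1 f2 f3 g1 g2 g3 h1 h2 h3 where fg: "f = (f1, f2, f3)" "g = (g1, g2, g3)" "h = (h1, h2, h3)"
    by (cases f, cases g, cases h) auto
  show "Cp (ic C) X Z W h (Cp (ic C) X Y Z g f) = Cp (ic C) X Y W (Cp (ic C) Y Z W h g) f"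
    using a unfolding o fg ic_Hm_triple by (auto simp: cp_assoc)
next
  fix X Y :: "'o \<times> 'm" and f assume a: "X \<in> Ob (ic C)" "Y \<in> Ob (ic C)" "f \<in> Hm (ic C) X Y"
  obtain X1 X2 Y1 Y2 where o: "X = (X1, X2)" "Y = (Y1, Y2)" by (cases X, cases Y) auto
  obtain f1 f2 f3 where fg: "f = (f1, f2, f3)" by (cases f) auto
  show "Cp (ic C) X Y Y (Idn (ic C) Y) f = f" "Cp (ic C) X X Y f (Idn (ic C) X) = f"
    using a unfolding o fg ic_Hm_triple by auto
qed

lemma ic_group: assumes XO: "X \<in> Ob (ic C)" and YO: "Y \<in> Ob (ic C)" shows "comm_group (hom_group (ic C) X Y)"
proof -
  obtain X1 X2 Y1 Y2 where o: "X = (X1, X2)" "Y = (Y1, Y2)" by (cases X, cases Y) auto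
  have ob: "X1 \<in> Ob C" "X2 \<in> Hm C X1 X1" "Cp C X1 X1 X1 X2 X2 = X2" "Y1 \<in> Ob C" "Y2 \<in> Hm C Y1 Y1" "Cp C Y1 Y1 Y1 Y2 Y2 = Y2"
    using XO YO unfolding o ic_Ob by auto
  have car: "x \<in> carrier (hom_group (ic C) X Y) \<longleftrightarrow> (\<exists>f. x = (Y2, f, X2) \<and> f \<in> Hm C X1 Y1 \<and> Cp C X1 X1 Y1 f X2 = f \<and> Cp C X1 Y1 Y1 Y2 f = f)" for x
    using XO YO unfolding o hom_group_def by (simp add: ic_Hm)
  show ?thesis
  proof (rule comm_groupI)
    fix x y assume "x \<in> carrier (hom_group (ic C) X Y)" "y \<in> carrier (hom_group (ic C) X Y)"
    then obtain f g where "x = (Y2, f, X2)" "f \<in> Hm C X1 Y1" "Cp C X1 X1 Y1 f X2 = f" "Cp C X1 Y1 Y1 Y2 f = f"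
      "y = (Y2, g, X2)" "g \<in> Hm C X1 Y1" "Cp C X1 X1 Y1 g X2 = g" "Cp C X1 Y1 Y1 Y2 g = g" unfolding car by blast
    then show "x \<otimes>\<^bsub>hom_group (ic C) X Y\<^esub> y \<in> carrier (hom_group (ic C) X Y)"
      "x \<otimes>\<^bsub>hom_group (ic C) X Y\<^esub> y = y \<otimes>\<^bsub>hom_group (ic C) X Y\<^esub> x"
      using ob unfolding car by (auto simp: hom_group_def o cp_ad_l cp_ad_r ad_comm)
  next
    show "\<one>\<^bsub>hom_group (ic C) X Y\<^esub> \<in> carrier (hom_group (ic C) X Y)"
      using ob unfolding car by (auto simp: hom_group_def o)
  next
    fix x y z assume "x \<in> carrier (hom_group (ic C) X Y)" "y \<in> carrier (hom_group (ic C) X Y)" "z \<in> carrier (hom_group (ic C) X Y)"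
    then obtain f g h where "x = (Y2, f, X2)" "f \<in> Hm C X1 Y1" "y = (Y2, g, X2)" "g \<in> Hm C X1 Y1" "z = (Y2, h, X2)" "h \<in> Hm C X1 Y1"
      unfolding car by blast
    then show "x \<otimes>\<^bsub>hom_group (ic C) X Y\<^esub> y \<otimes>\<^bsub>hom_group (ic C) X Y\<^esub> z = x \<otimes>\<^bsub>hom_group (ic C) X Y\<^esub> (y \<otimes>\<^bsub>hom_group (ic C) X Y\<^esub> z)"
      by (auto simp: hom_group_def o ad_assoc)
  next
    fix x assume "x \<in> carrier (hom_group (ic C) X Y)"
    then obtain f where "x = (Y2, f, X2)" "f \<in> Hm C X1 Y1" unfolding car by blast
    then show "\<one>\<^bsub>hom_group (ic C) X Y\<^esub> \<otimes>\<^bsub>hom_group (ic C) X Y\<^esub> x = x"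
      by (auto simp: hom_group_def o)
  next
    fix x assume "x \<in> carrier (hom_group (ic C) X Y)"
    then obtain f where x: "x = (Y2, f, X2)" "f \<in> Hm C X1 Y1" "Cp C X1 X1 Y1 f X2 = f" "Cp C X1 Y1 Y1 Y2 f = f" unfolding car by blast
    have "(Y2, ng X1 Y1 f, X2) \<in> carrier (hom_group (ic C) X Y)"
      using x ob unfolding car by (auto simp: cp_ng_l cp_ng_r)
    moreover have "(Y2, ng X1 Y1 f, X2) \<otimes>\<^bsub>hom_group (ic C) X Y\<^esub> x = \<one>\<^bsub>hom_group (ic C) X Y\<^esub>"
      using x by (auto simp: hom_group_def o)
    ultimately show "\<exists>y\<in>carrier (hom_group (ic C) X Y). y \<otimes>\<^bsub>hom_group (ic C) X Y\<^esub> x = \<one>\<^bsub>hom_group (ic C) X Y\<^esub>" by blast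
  qed
qed

lemma ic_preadd: "is_preadditive (ic C)"
proof -
  have 1: "\<forall>X\<in>Ob (ic C). \<forall>Y\<in>Ob (ic C). comm_group (hom_group (ic C) X Y)" using ic_group by blast
  have 3: "\<forall>X\<in>Ob (ic C). \<forall>Y\<in>Ob (ic C). \<forall>Z\<in>Ob (ic C).
        (\<forall>f\<in>Hm (ic C) X Y. \<forall>f'\<in>Hm (ic C) X Y. \<forall>g\<in>Hm (ic C) Y Z.
           Cp (ic C) X Y Z g (Ad (ic C) X Y f f') = Ad (ic C) X Z (Cp (ic C) X Y Z g f) (Cp (ic C) X Y Z g f')) \<and>
        (\<forall>f\<in>Hm (ic C) X Y. \<forall>g\<in>Hm (ic C) Y Z. \<forall>g'\<in>Hm (ic C) Y Z.
           Cp (ic C) X Y Z (Ad (ic C) Y Z g g') f = Ad (ic C) X Z (Cp (ic C) X Y Z g f) (Cp (ic C) X Y Z g' f))"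
  proof (intro ballI)
    fix X Y Z :: "'o \<times> 'm" assume a: "X \<in> Ob (ic C)" "Y \<in> Ob (ic C)" "Z \<in> Ob (ic C)"
    obtain X1 X2 Y1 Y2 Z1 Z2 where o: "X = (X1, X2)" "Y = (Y1, Y2)" "Z = (Z1, Z2)" by (cases X, cases Y, cases Z) auto
    show "(\<forall>f\<in>Hm (ic C) X Y. \<forall>f'\<in>Hm (ic C) X Y. \<forall>g\<in>Hm (ic C) Y Z.
           Cp (ic C) X Y Z g (Ad (ic C) X Y f f') = Ad (ic C) X Z (Cp (ic C) X Y Z g f) (Cp (ic C) X Y Z g f')) \<and>
        (\<forall>f\<in>Hm (ic C) X Y. \<forall>g\<in>Hm (ic C) Y Z. \<forall>g'\<in>Hm (ic C) Y Z.
           Cp (ic C) X Y Z (Ad (ic C) Y Z g g') f = Ad (ic C) X Z (Cp (ic C) X Y Z g f) (Cp (ic C) X Y Z g' f))"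
      unfolding o by (auto simp: ic_Hm cp_ad_l cp_ad_r)
  qed
  show ?thesis unfolding is_preadditive_def using ic_cat 1 3 by blast
qed

end

lemma ic_padd: "padd C \<Longrightarrow> padd (ic C)"
  using padd.ic_preadd padd_def by blast



context afun begin

lemma icF_funct: "is_add_functor (ic C) (ic D) (icFo Fo Fm) (icFm Fm)"
  unfolding is_add_functor_def
proof (intro conjI ballI)
  fix X assume a: "X \<in> Ob (ic C)"
  obtain X1 X2 where o: "X = (X1, X2)" by (cases X) auto
  show "icFo Fo Fm X \<in> Ob (ic D)"
    using a unfolding o by (auto simp: icFo_def C.ic_Ob D.ic_Ob Fo_ob Fm_hm simp flip: Fm_cp)
next
  fix X Y f assume a: "X \<in> Ob (ic C)" "Y \<in> Ob (ic C)" "f \<in> Hm (ic C) X Y"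
  obtain X1 X2 Y1 Y2 where o: "X = (X1, X2)" "Y = (Y1, Y2)" by (cases X, cases Y) auto
  obtain f1 f2 f3 where fg: "f = (f1, f2, f3)" by (cases f) auto
  show "icFm Fm X Y f \<in> Hm (ic D) (icFo Fo Fm X) (icFo Fo Fm Y)"
    using a unfolding o fg by (auto simp: icFo_def icFm_def C.ic_Ob D.ic_Ob C.ic_Hm_triple D.ic_Hm_triple Fo_ob Fm_hm simp flip: Fm_cp)
next
  fix X assume a: "X \<in> Ob (ic C)"
  obtain X1 X2 where o: "X = (X1, X2)" by (cases X) auto
  show "icFm Fm X X (Idn (ic C) X) = Idn (ic D) (icFo Fo Fm X)"
    using a unfolding o by (auto simp: icFo_def icFm_def)
next
  fix X Y Z f g assume a: "X \<in> Ob (ic C)" "Y \<in> Ob (ic C)" "Z \<in> Ob (ic C)" "f \<in> Hm (ic C) X Y" "g \<in> Hm (ic C) Y Z"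
  obtain X1 X2 Y1 Y2 Z1 Z2 where o: "X = (X1, X2)" "Y = (Y1, Y2)" "Z = (Z1, Z2)" by (cases X, cases Y, cases Z) auto
  obtain f1 f2 f3 g1 g2 g3 where fg: "f = (f1, f2, f3)" "g = (g1, g2, g3)" by (cases f, cases g) auto
  show "icFm Fm X Z (Cp (ic C) X Y Z g f) = Cp (ic D) (icFo Fo Fm X) (icFo Fo Fm Y) (icFo Fo Fm Z) (icFm Fm Y Z g) (icFm Fm X Y f)"
    using a unfolding o fg by (auto simp: icFo_def icFm_def C.ic_Hm_triple Fm_cp)
next
  fix X Y f g assume a: "X \<in> Ob (ic C)" "Y \<in> Ob (ic C)" "f \<in> Hm (ic C) X Y" "g \<in> Hm (ic C) X Y"
  obtain X1 X2 Y1 Y2 where o: "X = (X1, X2)" "Y = (Y1, Y2)" by (cases X, cases Y) auto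
  obtain f1 f2 f3 g1 g2 g3 where fg: "f = (f1, f2, f3)" "g = (g1, g2, g3)" by (cases f, cases g) auto
  show "icFm Fm X Y (Ad (ic C) X Y f g) = Ad (ic D) (icFo Fo Fm X) (icFo Fo Fm Y) (icFm Fm X Y f) (icFm Fm X Y g)"
    using a unfolding o fg by (auto simp: icFo_def icFm_def C.ic_Hm_triple Fm_ad)
qed

end

context padd begin

lemma J_funct: "is_add_functor C (ic C) (\<lambda>X. (X, Idn C X)) (\<lambda>X Y f. (Idn C Y, f, Idn C X))"
  unfolding is_add_functor_def
  by (auto simp: ic_Ob ic_Hm_triple)

lemma J_afun: "afun C (ic C) (\<lambda>X. (X, Idn C X)) (\<lambda>X Y f. (Idn C Y, f, Idn C X))"
  unfolding afun_def afun_axioms_def using ic_padd padd_axioms J_funct by blast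

definition idem :: "nat \<Rightarrow> (nat \<Rightarrow> 'o) \<Rightarrow> (nat \<Rightarrow> 'm) \<Rightarrow> (nat \<Rightarrow> 'm) \<Rightarrow> bool" where
  "idem n X d e \<longleftrightarrow> is_cmor C n X d X d e \<and> (\<forall>i\<le>Suc n. Cp C (X i) (X i) (X i) (e i) (e i) = e i)"

lemma lift_fst: "fst (lift_cx C X d e) = (\<lambda>i. (X i, e i))" unfolding lift_cx_def by simp
lemma lift_snd: "snd (lift_cx C X d e) = (\<lambda>i. (e (Suc i), Cp C (X i) (X (Suc i)) (X (Suc i)) (e (Suc i)) (d i), e i))"
  unfolding lift_cx_def by simp

lemma idem_hm: "idem n X d e \<Longrightarrow> i \<le> Suc n \<Longrightarrow> e i \<in> Hm C (X i) (X i)"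
  unfolding idem_def using mor_hm cmor_mor by blast
lemma idem_ee: "idem n X d e \<Longrightarrow> i \<le> Suc n \<Longrightarrow> Cp C (X i) (X i) (X i) (e i) (e i) = e i"
  unfolding idem_def by blast
lemma idem_comm: "idem n X d e \<Longrightarrow> i \<le> n \<Longrightarrow> Cp C (X i) (X (Suc i)) (X (Suc i)) (e (Suc i)) (d i) = Cp C (X i) (X i) (X (Suc i)) (d i) (e i)"
  unfolding idem_def using cmor_comm by blast

lemma lift_cx:
  assumes X: "is_cx C n X d" and e: "idem n X d e"
  shows "cxAC (ic C) n (X 0, e 0) (X (Suc n), e (Suc n)) (fst (lift_cx C X d e)) (snd (lift_cx C X d e))"
  unfolding cxAC_def is_cx_def lift_fst lift_snd
proof (intro conjI allI impI)
  fix i assume i: "i \<le> Suc n"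
  show "(X i, e i) \<in> Ob (ic C)" using idem_hm[OF e i] idem_ee[OF e i] cx_ob[OF X i] by (simp add: ic_Ob)
next
  fix i assume i: "i \<le> n"
  have m: "e i \<in> Hm C (X i) (X i)" "e (Suc i) \<in> Hm C (X (Suc i)) (X (Suc i))" "d i \<in> Hm C (X i) (X (Suc i))"
    using idem_hm[OF e] cx_d[OF X] i by auto
  have ee: "Cp C (X i) (X i) (X i) (e i) (e i) = e i" "Cp C (X (Suc i)) (X (Suc i)) (X (Suc i)) (e (Suc i)) (e (Suc i)) = e (Suc i)"
    using idem_ee[OF e] i by auto
  have c: "Cp C (X i) (X (Suc i)) (X (Suc i)) (e (Suc i)) (d i) = Cp C (X i) (X i) (X (Suc i)) (d i) (e i)"
    using idem_comm[OF e i] .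
  have 1: "Cp C (X i) (X i) (X (Suc i)) (Cp C (X i) (X (Suc i)) (X (Suc i)) (e (Suc i)) (d i)) (e i) = Cp C (X i) (X (Suc i)) (X (Suc i)) (e (Suc i)) (d i)"
    unfolding c using m ee by (simp flip: cp_assoc)
  have 2: "Cp C (X i) (X (Suc i)) (X (Suc i)) (e (Suc i)) (Cp C (X i) (X (Suc i)) (X (Suc i)) (e (Suc i)) (d i)) = Cp C (X i) (X (Suc i)) (X (Suc i)) (e (Suc i)) (d i)"
    using m ee by (simp add: cp_assoc)
  show "(e (Suc i), Cp C (X i) (X (Suc i)) (X (Suc i)) (e (Suc i)) (d i), e i) \<in> Hm (ic C) (X i, e i) (X (Suc i), e (Suc i))"
    using m ee 1 2 cx_ob[OF X, of i] cx_ob[OF X, of "Suc i"] i by (simp add: ic_Hm_triple ic_Ob)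
next
  fix i assume i: "i < n"
  have m: "e i \<in> Hm C (X i) (X i)" "e (Suc i) \<in> Hm C (X (Suc i)) (X (Suc i))" "d i \<in> Hm C (X i) (X (Suc i))"
    "e (Suc (Suc i)) \<in> Hm C (X (Suc (Suc i))) (X (Suc (Suc i)))" "d (Suc i) \<in> Hm C (X (Suc i)) (X (Suc (Suc i)))"
    using idem_hm[OF e] cx_d[OF X] i by auto
  have c: "Cp C (X (Suc i)) (X (Suc (Suc i))) (X (Suc (Suc i))) (e (Suc (Suc i))) (d (Suc i)) = Cp C (X (Suc i)) (X (Suc i)) (X (Suc (Suc i))) (d (Suc i)) (e (Suc i))"
    using idem_comm[OF e, of "Suc i"] i by simp
  have ee: "Cp C (X (Suc i)) (X (Suc i)) (X (Suc i)) (e (Suc i)) (e (Suc i)) = e (Suc i)" using idem_ee[OF e, of "Suc i"] i by simp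
  have dd: "Cp C (X i) (X (Suc i)) (X (Suc (Suc i))) (d (Suc i)) (d i) = Zr C (X i) (X (Suc (Suc i)))" using cx_dd[OF X i] .
  have "Cp C (X i) (X (Suc i)) (X (Suc (Suc i))) (Cp C (X (Suc i)) (X (Suc (Suc i))) (X (Suc (Suc i))) (e (Suc (Suc i))) (d (Suc i)))
      (Cp C (X i) (X (Suc i)) (X (Suc i)) (e (Suc i)) (d i))
    = Cp C (X i) (X (Suc i)) (X (Suc (Suc i))) (Cp C (X (Suc i)) (X (Suc (Suc i))) (X (Suc (Suc i))) (e (Suc (Suc i))) (d (Suc i))) (d i)"
  proof -
    have "Cp C (X i) (X (Suc i)) (X (Suc (Suc i))) (Cp C (X (Suc i)) (X (Suc i)) (X (Suc (Suc i))) (d (Suc i)) (e (Suc i)))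
      (Cp C (X i) (X (Suc i)) (X (Suc i)) (e (Suc i)) (d i))
      = Cp C (X i) (X (Suc i)) (X (Suc (Suc i))) (d (Suc i)) (Cp C (X i) (X (Suc i)) (X (Suc i)) (Cp C (X (Suc i)) (X (Suc i)) (X (Suc i)) (e (Suc i)) (e (Suc i))) (d i))"
      using m by (simp add: cp_assoc)
    then show ?thesis unfolding c ee using m by (simp add: cp_assoc)
  qed
  also have "\<dots> = Zr C (X i) (X (Suc (Suc i)))"
  proof -
    have c0: "Cp C (X i) (X (Suc i)) (X (Suc i)) (e (Suc i)) (d i) = Cp C (X i) (X i) (X (Suc i)) (d i) (e i)"
      using idem_comm[OF e, of i] i by simp
    have "Cp C (X i) (X (Suc i)) (X (Suc (Suc i))) (Cp C (X (Suc i)) (X (Suc i)) (X (Suc (Suc i))) (d (Suc i)) (e (Suc i))) (d i)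
      = Cp C (X i) (X (Suc i)) (X (Suc (Suc i))) (d (Suc i)) (Cp C (X i) (X (Suc i)) (X (Suc i)) (e (Suc i)) (d i))"
      using m by (simp add: cp_assoc)
    also have "\<dots> = Cp C (X i) (X i) (X (Suc (Suc i))) (Cp C (X i) (X (Suc i)) (X (Suc (Suc i))) (d (Suc i)) (d i)) (e i)"
      unfolding c0 using m by (simp add: cp_assoc)
    finally show ?thesis unfolding c using dd m cx_ob[OF X, of "Suc (Suc i)"] i by simp
  qed
  finally show "Cp (ic C) (X i, e i) (X (Suc i), e (Suc i)) (X (Suc (Suc i)), e (Suc (Suc i)))
        (e (Suc (Suc i)), Cp C (X (Suc i)) (X (Suc (Suc i))) (X (Suc (Suc i))) (e (Suc (Suc i))) (d (Suc i)), e (Suc i))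
        (e (Suc i), Cp C (X i) (X (Suc i)) (X (Suc i)) (e (Suc i)) (d i), e i) =
       Zr (ic C) (X i, e i) (X (Suc (Suc i)), e (Suc (Suc i)))" by simp
qed auto

end



context padd begin

lemma J_exact:
  assumes X: "is_cx C n X d" and ex: "cexact n X d"
  shows "padd.cexact (ic C) n (\<lambda>i. (X i, Idn C (X i))) (\<lambda>i. (Idn C (X (Suc i)), d i, Idn C (X i)))"
  unfolding padd.cexact_def[OF ic_padd[OF padd_axioms]]
proof (intro ballI allI impI)
  fix W i h
  assume W: "W \<in> Ob (ic C)" and i: "1 \<le> i \<and> i \<le> n"
    and h: "h \<in> Hm (ic C) (X i, Idn C (X i)) W"
    and z: "Cp (ic C) (X (i - 1), Idn C (X (i - 1))) (X i, Idn C (X i)) W h (Idn C (X (Suc (i - 1))), d (i - 1), Idn C (X (i - 1))) =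
       Zr (ic C) (X (i - 1), Idn C (X (i - 1))) W"
  obtain j where j: "i = Suc j" using i by (cases i) auto
  obtain W1 W2 where o: "W = (W1, W2)" by (cases W) auto
  obtain h1 h2 h3 where hh: "h = (h1, h2, h3)" by (cases h) auto
  have hf: "h1 = W2" "h3 = Idn C (X i)" "h2 \<in> Hm C (X i) W1" "Cp C (X i) W1 W1 W2 h2 = h2"
    using h unfolding o hh ic_Hm_triple by auto
  have Wf: "W1 \<in> Ob C" "W2 \<in> Hm C W1 W1" "Cp C W1 W1 W1 W2 W2 = W2" using W unfolding o ic_Ob by auto
  have z': "Cp C (X j) (X (Suc j)) W1 h2 (d j) = Zr C (X j) W1"
    using z unfolding o hh j by simp
  obtain h' where h': "h' \<in> Hm C (X (Suc (Suc j))) W1" "h2 = Cp C (X (Suc j)) (X (Suc (Suc j))) W1 h' (d (Suc j))"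
    using cexactD[OF ex Wf(1) _ _ z'] hf i j by auto
  have dj: "d (Suc j) \<in> Hm C (X (Suc j)) (X (Suc (Suc j)))" using cx_d[OF X, of "Suc j"] i j by simp
  have ob: "X (Suc (Suc j)) \<in> Ob C" using cx_ob[OF X, of "Suc (Suc j)"] i j by simp
  have m: "(W2, Cp C (X (Suc (Suc j))) W1 W1 W2 h', Idn C (X (Suc (Suc j)))) \<in> Hm (ic C) (X (Suc i), Idn C (X (Suc i))) W"
    unfolding o j ic_Hm_triple using W o h' Wf ob by (simp add: ic_Ob cp_assoc)
  have e: "h = Cp (ic C) (X i, Idn C (X i)) (X (Suc i), Idn C (X (Suc i))) W (W2, Cp C (X (Suc (Suc j))) W1 W1 W2 h', Idn C (X (Suc (Suc j)))) (Idn C (X (Suc i)), d i, Idn C (X i))"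
  proof -
    have "Cp C (X (Suc j)) (X (Suc (Suc j))) W1 (Cp C (X (Suc (Suc j))) W1 W1 W2 h') (d (Suc j)) = Cp C (X (Suc j)) W1 W1 W2 h2"
      using h'(1) dj Wf by (simp add: h'(2) cp_assoc)
    then show ?thesis unfolding o hh j using hf j by simp
  qed
  show "\<exists>h'\<in>Hm (ic C) (X (Suc i), Idn C (X (Suc i))) W.
            h = Cp (ic C) (X i, Idn C (X i)) (X (Suc i), Idn C (X (Suc i))) W h' (Idn C (X (Suc i)), d i, Idn C (X i))"
    using m e j by blast
qed

lemma lift_iota:
  assumes X: "is_cx C n X d" and e: "idem n X d e"
  shows "is_cmor (ic C) n (fst (lift_cx C X d e)) (snd (lift_cx C X d e)) (\<lambda>i. (X i, Idn C (X i))) (\<lambda>i. (Idn C (X (Suc i)), d i, Idn C (X i)))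
     (\<lambda>i. (Idn C (X i), e i, e i))"
  unfolding is_cmor_def lift_fst lift_snd
proof (intro conjI allI impI)
  fix i assume i: "i \<le> Suc n"
  show "(Idn C (X i), e i, e i) \<in> Hm (ic C) (X i, e i) (X i, Idn C (X i))"
    using idem_hm[OF e i] idem_ee[OF e i] cx_ob[OF X i] by (simp add: ic_Hm_triple ic_Ob)
next
  fix i assume i: "i \<le> n"
  have m: "e i \<in> Hm C (X i) (X i)" "e (Suc i) \<in> Hm C (X (Suc i)) (X (Suc i))" "d i \<in> Hm C (X i) (X (Suc i))"
    using idem_hm[OF e] cx_d[OF X] i by auto
  have "Cp C (X i) (X (Suc i)) (X (Suc i)) (e (Suc i)) (Cp C (X i) (X (Suc i)) (X (Suc i)) (e (Suc i)) (d i)) = Cp C (X i) (X i) (X (Suc i)) (d i) (e i)"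
  proof -
    have "Cp C (X i) (X (Suc i)) (X (Suc i)) (e (Suc i)) (Cp C (X i) (X (Suc i)) (X (Suc i)) (e (Suc i)) (d i))
      = Cp C (X i) (X (Suc i)) (X (Suc i)) (Cp C (X (Suc i)) (X (Suc i)) (X (Suc i)) (e (Suc i)) (e (Suc i))) (d i)"
      using m cp_assoc[of "d i" "X i" "X (Suc i)" "e (Suc i)" "X (Suc i)" "e (Suc i)" "X (Suc i)"] by simp
    then show ?thesis using idem_ee[OF e, of "Suc i"] idem_comm[OF e i] i by simp
  qed
  then show "Cp (ic C) (X i, e i) (X (Suc i), e (Suc i)) (X (Suc i), Idn C (X (Suc i))) (Idn C (X (Suc i)), e (Suc i), e (Suc i))
        (e (Suc i), Cp C (X i) (X (Suc i)) (X (Suc i)) (e (Suc i)) (d i), e i) =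
       Cp (ic C) (X i, e i) (X i, Idn C (X i)) (X (Suc i), Idn C (X (Suc i))) (Idn C (X (Suc i)), d i, Idn C (X i))
        (Idn C (X i), e i, e i)" by simp
qed

lemma lift_proj:
  assumes X: "is_cx C n X d" and e: "idem n X d e"
  shows "is_cmor (ic C) n (\<lambda>i. (X i, Idn C (X i))) (\<lambda>i. (Idn C (X (Suc i)), d i, Idn C (X i))) (fst (lift_cx C X d e)) (snd (lift_cx C X d e))
     (\<lambda>i. (e i, e i, Idn C (X i)))"
  unfolding is_cmor_def lift_fst lift_snd
proof (intro conjI allI impI)
  fix i assume i: "i \<le> Suc n"
  show "(e i, e i, Idn C (X i)) \<in> Hm (ic C) (X i, Idn C (X i)) (X i, e i)"
    using idem_hm[OF e i] idem_ee[OF e i] cx_ob[OF X i] by (simp add: ic_Hm_triple ic_Ob)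
next
  fix i assume i: "i \<le> n"
  have m: "e i \<in> Hm C (X i) (X i)" "e (Suc i) \<in> Hm C (X (Suc i)) (X (Suc i))" "d i \<in> Hm C (X i) (X (Suc i))"
    using idem_hm[OF e] cx_d[OF X] i by auto
  have "Cp C (X i) (X i) (X (Suc i)) (Cp C (X i) (X (Suc i)) (X (Suc i)) (e (Suc i)) (d i)) (e i) = Cp C (X i) (X (Suc i)) (X (Suc i)) (e (Suc i)) (d i)"
  proof -
    have "Cp C (X i) (X i) (X (Suc i)) (Cp C (X i) (X i) (X (Suc i)) (d i) (e i)) (e i) = Cp C (X i) (X i) (X (Suc i)) (d i) (Cp C (X i) (X i) (X i) (e i) (e i))"
      using m cp_assoc[of "e i" "X i" "X i" "e i" "X i" "d i" "X (Suc i)"] by simp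
    then show ?thesis unfolding idem_comm[OF e i] using idem_ee[OF e, of i] i by simp
  qed
  then show "Cp (ic C) (X i, Idn C (X i)) (X (Suc i), Idn C (X (Suc i))) (X (Suc i), e (Suc i)) (e (Suc i), e (Suc i), Idn C (X (Suc i)))
        (Idn C (X (Suc i)), d i, Idn C (X i)) =
       Cp (ic C) (X i, Idn C (X i)) (X i, e i) (X (Suc i), e (Suc i)) (e (Suc i), Cp C (X i) (X (Suc i)) (X (Suc i)) (e (Suc i)) (d i), e i)
        (e i, e i, Idn C (X i))" by simp
qed

lemma lift_pi:
  assumes e: "idem n X d e" and i: "i \<le> Suc n"
  shows "Cp (ic C) (fst (lift_cx C X d e) i) (X i, Idn C (X i)) (fst (lift_cx C X d e) i) (e i, e i, Idn C (X i)) (Idn C (X i), e i, e i)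
    = Idn (ic C) (fst (lift_cx C X d e) i)"
  using idem_ee[OF e i] by (simp add: lift_fst)

end


context padd begin

lemma indep:
  assumes X: "is_cx C n X dX" and Y: "is_cx C n Y dY" and exX: "cexact n X dX"
    and hXY: "heq C n A B X dX Y dY"
    and eX: "idem n X dX e" and eY: "idem n Y dY e'"
    and e0: "e' 0 = e 0" and e1: "e' (Suc n) = e (Suc n)"
  shows "heq (ic C) n (A, e 0) (B, e (Suc n)) (fst (lift_cx C X dX e)) (snd (lift_cx C X dX e))
           (fst (lift_cx C Y dY e')) (snd (lift_cx C Y dY e'))"
proof -
  interpret K: padd "ic C" using ic_padd[OF padd_axioms] .
  interpret J: afun C "ic C" "\<lambda>X. (X, Idn C X)" "\<lambda>X Y f. (Idn C Y, f, Idn C X)" using J_afun .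
  have AB: "X 0 = A" "Y 0 = A" "X (Suc n) = B" "Y (Suc n) = B" using hXY unfolding heq_def cxAC_def by auto
  have JX: "J.FX X = (\<lambda>i. (X i, Idn C (X i)))" "J.FX Y = (\<lambda>i. (Y i, Idn C (Y i)))"
    unfolding J.FX_def by auto
  have Jd: "J.Fd X dX = (\<lambda>i. (Idn C (X (Suc i)), dX i, Idn C (X i)))" "J.Fd Y dY = (\<lambda>i. (Idn C (Y (Suc i)), dY i, Idn C (Y i)))"
    unfolding J.Fd_def by auto
  have hJ: "heq (ic C) n (A, Idn C A) (B, Idn C B) (\<lambda>i. (X i, Idn C (X i))) (\<lambda>i. (Idn C (X (Suc i)), dX i, Idn C (X i)))
     (\<lambda>i. (Y i, Idn C (Y i))) (\<lambda>i. (Idn C (Y (Suc i)), dY i, Idn C (Y i)))"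
    using J.F_heq[OF hXY] unfolding JX Jd .
  have cxX: "is_cx (ic C) n (\<lambda>i. (X i, Idn C (X i))) (\<lambda>i. (Idn C (X (Suc i)), dX i, Idn C (X i)))"
   and cxY: "is_cx (ic C) n (\<lambda>i. (Y i, Idn C (Y i))) (\<lambda>i. (Idn C (Y (Suc i)), dY i, Idn C (Y i)))"
    using hJ unfolding heq_def cxAC_def by auto
  obtain f g where f: "is_cmor (ic C) n (\<lambda>i. (X i, Idn C (X i))) (\<lambda>i. (Idn C (X (Suc i)), dX i, Idn C (X i)))
       (\<lambda>i. (Y i, Idn C (Y i))) (\<lambda>i. (Idn C (Y (Suc i)), dY i, Idn C (Y i))) f"
    and f0: "f 0 = Idn (ic C) (A, Idn C A)" and f1: "f (Suc n) = Idn (ic C) (B, Idn C B)"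
    and g: "is_cmor (ic C) n (\<lambda>i. (Y i, Idn C (Y i))) (\<lambda>i. (Idn C (Y (Suc i)), dY i, Idn C (Y i)))
       (\<lambda>i. (X i, Idn C (X i))) (\<lambda>i. (Idn C (X (Suc i)), dX i, Idn C (X i))) g"
    and g0: "g 0 = Idn (ic C) (A, Idn C A)" and g1: "g (Suc n) = Idn (ic C) (B, Idn C B)"
    and gf: "homotopic (ic C) n (\<lambda>i. (X i, Idn C (X i))) (\<lambda>i. (Idn C (X (Suc i)), dX i, Idn C (X i)))
       (\<lambda>i. (X i, Idn C (X i))) (\<lambda>i. (Idn C (X (Suc i)), dX i, Idn C (X i)))
       (K.ccp (\<lambda>i. (X i, Idn C (X i))) (\<lambda>i. (Y i, Idn C (Y i))) (\<lambda>i. (X i, Idn C (X i))) g f) (K.cid (\<lambda>i. (X i, Idn C (X i))))"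
    and fg: "homotopic (ic C) n (\<lambda>i. (Y i, Idn C (Y i))) (\<lambda>i. (Idn C (Y (Suc i)), dY i, Idn C (Y i)))
       (\<lambda>i. (Y i, Idn C (Y i))) (\<lambda>i. (Idn C (Y (Suc i)), dY i, Idn C (Y i)))
       (K.ccp (\<lambda>i. (Y i, Idn C (Y i))) (\<lambda>i. (X i, Idn C (X i))) (\<lambda>i. (Y i, Idn C (Y i))) f g) (K.cid (\<lambda>i. (Y i, Idn C (Y i))))"
    using hJ unfolding K.heq_alt by blast
  have cP: "cxAC (ic C) n (A, e 0) (B, e (Suc n)) (fst (lift_cx C X dX e)) (snd (lift_cx C X dX e))"
    using lift_cx[OF X eX] AB by simp
  have cQ: "cxAC (ic C) n (A, e 0) (B, e (Suc n)) (fst (lift_cx C Y dY e')) (snd (lift_cx C Y dY e'))"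
    using lift_cx[OF Y eY] AB e0 e1 by simp
  show ?thesis
  proof (rule K.dance[OF cxX cxY cP cQ J_exact[OF X exX] f g _ _ g0[folded AB(1)] g1[folded AB(3)] _ _ gf fg
        lift_iota[OF X eX] lift_proj[OF X eX] lift_iota[OF Y eY] lift_proj[OF Y eY]])
    show "f 0 = Idn (ic C) (X 0, Idn C (X 0))" "f (Suc n) = Idn (ic C) (X (Suc n), Idn C (X (Suc n)))"
      using f0 f1 AB by auto
    show "(Y 0, Idn C (Y 0)) = (X 0, Idn C (X 0))" "(Y (Suc n), Idn C (Y (Suc n))) = (X (Suc n), Idn C (X (Suc n)))"
      using AB by auto
    show "(Idn C (Y 0), e' 0, e' 0) = (Idn C (X 0), e 0, e 0)" "(e' 0, e' 0, Idn C (Y 0)) = (e 0, e 0, Idn C (X 0))"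
      "(Idn C (Y (Suc n)), e' (Suc n), e' (Suc n)) = (Idn C (X (Suc n)), e (Suc n), e (Suc n))"
      "(e' (Suc n), e' (Suc n), Idn C (Y (Suc n))) = (e (Suc n), e (Suc n), Idn C (X (Suc n)))"
      using AB e0 e1 by auto
    fix i assume i: "i \<le> Suc n"
    show "Cp (ic C) (fst (lift_cx C X dX e) i) (X i, Idn C (X i)) (fst (lift_cx C X dX e) i) (e i, e i, Idn C (X i)) (Idn C (X i), e i, e i) =
        Idn (ic C) (fst (lift_cx C X dX e) i)" by (rule lift_pi[OF eX i])
    show "Cp (ic C) (fst (lift_cx C Y dY e') i) (Y i, Idn C (Y i)) (fst (lift_cx C Y dY e') i) (e' i, e' i, Idn C (Y i)) (Idn C (Y i), e' i, e' i) =
        Idn (ic C) (fst (lift_cx C Y dY e') i)" by (rule lift_pi[OF eY i])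
  qed
qed

end


context padd begin

lemma hterm_cong_d:
  assumes "\<And>i. i \<le> n \<Longrightarrow> d i = dq i" "\<And>i. i \<le> n \<Longrightarrow> d' i = dq' i" and i: "i \<le> Suc n"
  shows "hterm n X d Y d' \<phi> i = hterm n X dq Y dq' \<phi> i"
proof -
  have a: "i \<noteq> 0 \<Longrightarrow> d' (i - 1) = dq' (i - 1)" using assms(2)[of "i - 1"] i by simp
  have b: "i \<noteq> Suc n \<Longrightarrow> d i = dq i" using assms(1)[of i] i by simp
  have c: "d' n = dq' n" using assms(2)[of n] by simp
  show ?thesis unfolding hterm_def using a b c by simp
qed

lemma homotopic_cong_d:
  assumes "\<And>i. i \<le> n \<Longrightarrow> d i = dq i" "\<And>i. i \<le> n \<Longrightarrow> d' i = dq' i"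
  shows "homotopic C n X d Y d' f g = homotopic C n X dq Y dq' f g"
  unfolding homotopic_alt using hterm_cong_d[OF assms] by simp

lemma is_cx_cong_d:
  assumes "\<And>i. i \<le> n \<Longrightarrow> d i = dq i"
  shows "is_cx C n X d = is_cx C n X dq"
  unfolding is_cx_def using assms by simp

lemma is_cmor_cong_d:
  assumes "\<And>i. i \<le> n \<Longrightarrow> d i = dq i" "\<And>i. i \<le> n \<Longrightarrow> d' i = dq' i"
  shows "is_cmor C n X d Y d' f = is_cmor C n X dq Y dq' f"
  unfolding is_cmor_def using assms by simp

lemma heq_cong_d:
  assumes h: "heq C n A B X d Y d'" and e: "\<And>i. i \<le> n \<Longrightarrow> d i = dq i"
  shows "heq C n A B X dq Y d'"
proof -
  have r: "\<And>i. i \<le> n \<Longrightarrow> d' i = d' i" by simp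
  have c1: "is_cx C n X d = is_cx C n X dq" by (rule is_cx_cong_d) (simp add: e)
  have c2: "is_cmor C n X d Y d' f = is_cmor C n X dq Y d' f" for f by (rule is_cmor_cong_d) (simp_all add: e)
  have c3: "is_cmor C n Y d' X d f = is_cmor C n Y d' X dq f" for f by (rule is_cmor_cong_d) (simp_all add: e)
  have c4: "homotopic C n X d X d f g = homotopic C n X dq X dq f g" for f g by (rule homotopic_cong_d) (simp_all add: e)
  have h2: "cxAC C n A B X d \<and> cxAC C n A B Y d' \<and>
     (\<exists>f g. is_cmor C n X d Y d' f \<and> f 0 = Idn C A \<and> f (Suc n) = Idn C B \<and>
            is_cmor C n Y d' X d g \<and> g 0 = Idn C A \<and> g (Suc n) = Idn C B \<and>
            homotopic C n X d X d (\<lambda>i. Cp C (X i) (Y i) (X i) (g i) (f i)) (\<lambda>i. Idn C (X i)) \<and>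
            homotopic C n Y d' Y d' (\<lambda>i. Cp C (Y i) (X i) (Y i) (f i) (g i)) (\<lambda>i. Idn C (Y i)))"
    using h unfolding heq_def .
  show ?thesis unfolding heq_def cxAC_def c1[symmetric] c2[symmetric] c3[symmetric] c4[symmetric] using h2 unfolding cxAC_def by blast
qed

end

context afun begin

lemma F_idem: assumes X: "is_cx C n X d" and e: "C.idem n X d e"
  shows "D.idem n (FX X) (Fd X d) (Ff X X e)"
  unfolding D.idem_def
proof
  show "is_cmor D n (FX X) (Fd X d) (FX X) (Fd X d) (Ff X X e)"
    using F_cmor[OF X X] e unfolding C.idem_def by blast
  show "\<forall>i\<le>Suc n. Cp D (FX X i) (FX X i) (FX X i) (Ff X X e i) (Ff X X e i) = Ff X X e i"
    using C.idem_hm[OF e] C.idem_ee[OF e] by (simp add: FX_def Ff_def flip: Fm_cp)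
qed

end

lemma nexangle_cexact: assumes "padd C" "nexangle C E n X d \<delta>" shows "padd.cexact C n X d"
  using assms(2) unfolding padd.cexact_def[OF assms(1)] nexangle_def by blast

lemma nexang_padd: "is_nexangulated C E s n \<Longrightarrow> padd C"
  unfolding is_nexangulated_def is_additive_def padd_def by blast

lemma icE_Ex: "\<delta> \<in> Ex (icE C E) (C1, eC) (A1, eA) \<longleftrightarrow> (C1, eC) \<in> Ob (ic C) \<and> (A1, eA) \<in> Ob (ic C) \<and>
   (\<exists>\<alpha>. \<delta> = (eA, \<alpha>, eC) \<and> \<alpha> \<in> Ex E C1 A1 \<and> pushE C E C1 A1 A1 eA \<alpha> = \<alpha> \<and> pullE C E C1 C1 A1 eC \<alpha> = \<alpha>)"
  unfolding icE_def by auto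

lemma ics_mem: "Z \<in> ics C s n (C1, eC) (A1, eA) (x, \<alpha>, y) \<longleftrightarrow>
  (\<exists>X d e. (X, d) \<in> s C1 A1 \<alpha> \<and> is_cmor C n X d X d e \<and>
          (\<forall>i\<le>Suc n. Cp C (X i) (X i) (X i) (e i) (e i) = e i) \<and>
          e 0 = eA \<and> e (Suc n) = eC \<and>
          heq (ic C) n (A1, eA) (C1, eC) (fst (lift_cx C X d e)) (snd (lift_cx C X d e)) (fst Z) (snd Z))"
  unfolding ics_def by simp



lemma icE_EAd[simp]: "EAd (icE C E) (C1, eC) (A1, eA) (x, \<alpha>, y) (x', \<beta>, y') = (eA, EAd E C1 A1 \<alpha> \<beta>, eC)"
  unfolding icE_def by simp
lemma icE_EMp[simp]: "EMp (icE C E) (C', eC') (Cc, eC) (A, eA) (A', eA') (x, c, y) (x', a, y') (u, \<alpha>, v) =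
   (x', EMp E C' Cc A A' c a \<alpha>, y)"
  unfolding icE_def by simp
lemma icG[simp]: "ic\<Gamma> Fm \<Gamma> (Cc, eC) (A, eA) (x, \<alpha>, y) = (Fm A A x, \<Gamma> Cc A \<alpha>, Fm Cc Cc y)"
  unfolding ic\<Gamma>_def by simp
lemma icFo_simp[simp]: "icFo Fo Fm (X, e) = (Fo X, Fm X X e)" unfolding icFo_def by simp
lemma icFm_simp[simp]: "icFm Fm (X, eX) (Y, eY) (a, f, b) = (Fm Y Y a, Fm X Y f, Fm X X b)" unfolding icFm_def by simp

lemma part2:
  assumes C: "padd C" and D: "padd D" and af: "is_add_functor C D Fo Fm" and nt: "is_nat_trans C E D F Fo Fm \<Gamma>"
  shows "is_nat_trans (ic C) (icE C E) (ic D) (icE D F) (icFo Fo Fm) (icFm Fm) (ic\<Gamma> Fm \<Gamma>)"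
proof -
  interpret C: padd C by (rule C)
  interpret D: padd D by (rule D)
  interpret F: afun C D Fo Fm using C D af by (simp add: afun_def afun_axioms_def)
  have hom: "\<And>Cc A. Cc \<in> Ob C \<Longrightarrow> A \<in> Ob C \<Longrightarrow> \<Gamma> Cc A \<in> hom (ext_group E Cc A) (ext_group F (Fo Cc) (Fo A))"
    using nt unfolding is_nat_trans_def by blast
  have nat: "\<And>C' Cc A A' c a \<alpha>. C' \<in> Ob C \<Longrightarrow> Cc \<in> Ob C \<Longrightarrow> A \<in> Ob C \<Longrightarrow> A' \<in> Ob C \<Longrightarrow> c \<in> Hm C C' Cc \<Longrightarrow>
      a \<in> Hm C A A' \<Longrightarrow> \<alpha> \<in> Ex E Cc A \<Longrightarrow>
      \<Gamma> C' A' (EMp E C' Cc A A' c a \<alpha>) = EMp F (Fo C') (Fo Cc) (Fo A) (Fo A') (Fm C' Cc c) (Fm A A' a) (\<Gamma> Cc A \<alpha>)"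
    using nt unfolding is_nat_trans_def by blast
  have p1: "ic\<Gamma> Fm \<Gamma> Cc A \<in> hom (ext_group (icE C E) Cc A) (ext_group (icE D F) (icFo Fo Fm Cc) (icFo Fo Fm A))"
    if Cc: "Cc \<in> Ob (ic C)" and A: "A \<in> Ob (ic C)" for Cc A
  proof -
    obtain C1 eC A1 eA where o: "Cc = (C1, eC)" "A = (A1, eA)" by (cases Cc, cases A) auto
    have ob: "C1 \<in> Ob C" "A1 \<in> Ob C" "eC \<in> Hm C C1 C1" "eA \<in> Hm C A1 A1" using Cc A unfolding o C.ic_Ob by auto
    have obD: "icFo Fo Fm Cc \<in> Ob (ic D)" "icFo Fo Fm A \<in> Ob (ic D)"
      using F.icF_funct Cc A unfolding is_add_functor_def by blast+
    have h: "\<Gamma> C1 A1 \<in> hom (ext_group E C1 A1) (ext_group F (Fo C1) (Fo A1))" using hom ob by blast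
    have Gm: "\<Gamma> C1 A1 \<alpha> \<in> Ex F (Fo C1) (Fo A1)" if "\<alpha> \<in> Ex E C1 A1" for \<alpha>
      using h that unfolding hom_def ext_group_def by auto
    have Gadd: "\<Gamma> C1 A1 (EAd E C1 A1 \<alpha> \<beta>) = EAd F (Fo C1) (Fo A1) (\<Gamma> C1 A1 \<alpha>) (\<Gamma> C1 A1 \<beta>)"
      if "\<alpha> \<in> Ex E C1 A1" "\<beta> \<in> Ex E C1 A1" for \<alpha> \<beta>
      using h that unfolding hom_def ext_group_def by auto
    have push: "pushE D F (Fo C1) (Fo A1) (Fo A1) (Fm A1 A1 eA) (\<Gamma> C1 A1 \<alpha>) = \<Gamma> C1 A1 \<alpha>"
      if "\<alpha> \<in> Ex E C1 A1" "pushE C E C1 A1 A1 eA \<alpha> = \<alpha>" for \<alpha>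
      using nat[OF ob(1) ob(1) ob(2) ob(2) C.idn_hm[OF ob(1)] ob(4) that(1)] that(2) F.Fm_idn[OF ob(1)]
      unfolding pushE_def by simp
    have pull: "pullE D F (Fo C1) (Fo C1) (Fo A1) (Fm C1 C1 eC) (\<Gamma> C1 A1 \<alpha>) = \<Gamma> C1 A1 \<alpha>"
      if "\<alpha> \<in> Ex E C1 A1" "pullE C E C1 C1 A1 eC \<alpha> = \<alpha>" for \<alpha>
      using nat[OF ob(1) ob(1) ob(2) ob(2) ob(3) C.idn_hm[OF ob(2)] that(1)] that(2) F.Fm_idn[OF ob(2)]
      unfolding pullE_def by simp
    show ?thesis
      unfolding hom_def ext_group_def o
    proof (intro CollectI conjI funcsetI ballI)
      fix x assume "x \<in> carrier \<lparr>carrier = Ex (icE C E) (C1, eC) (A1, eA), mult = EAd (icE C E) (C1, eC) (A1, eA), one = EZr (icE C E) (C1, eC) (A1, eA)\<rparr>"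
      then obtain \<alpha> where x: "x = (eA, \<alpha>, eC)" "\<alpha> \<in> Ex E C1 A1" "pushE C E C1 A1 A1 eA \<alpha> = \<alpha>" "pullE C E C1 C1 A1 eC \<alpha> = \<alpha>"
        by (auto simp: icE_Ex)
      show "ic\<Gamma> Fm \<Gamma> (C1, eC) (A1, eA) x \<in> carrier \<lparr>carrier = Ex (icE D F) (icFo Fo Fm (C1, eC)) (icFo Fo Fm (A1, eA)),
               mult = EAd (icE D F) (icFo Fo Fm (C1, eC)) (icFo Fo Fm (A1, eA)), one = EZr (icE D F) (icFo Fo Fm (C1, eC)) (icFo Fo Fm (A1, eA))\<rparr>"
        using x obD Gm[OF x(2)] push[OF x(2,3)] pull[OF x(2,4)] unfolding o by (simp add: icE_Ex)
    next
      fix x y assume "x \<in> carrier \<lparr>carrier = Ex (icE C E) (C1, eC) (A1, eA), mult = EAd (icE C E) (C1, eC) (A1, eA), one = EZr (icE C E) (C1, eC) (A1, eA)\<rparr>"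
        "y \<in> carrier \<lparr>carrier = Ex (icE C E) (C1, eC) (A1, eA), mult = EAd (icE C E) (C1, eC) (A1, eA), one = EZr (icE C E) (C1, eC) (A1, eA)\<rparr>"
      then obtain \<alpha> \<beta> where x: "x = (eA, \<alpha>, eC)" "\<alpha> \<in> Ex E C1 A1" "y = (eA, \<beta>, eC)" "\<beta> \<in> Ex E C1 A1"
        by (auto simp: icE_Ex)
      show "ic\<Gamma> Fm \<Gamma> (C1, eC) (A1, eA)
            (x \<otimes>\<^bsub>\<lparr>carrier = Ex (icE C E) (C1, eC) (A1, eA), mult = EAd (icE C E) (C1, eC) (A1, eA), one = EZr (icE C E) (C1, eC) (A1, eA)\<rparr>\<^esub> y) =
           ic\<Gamma> Fm \<Gamma> (C1, eC) (A1, eA) x \<otimes>\<^bsub>\<lparr>carrier = Ex (icE D F) (icFo Fo Fm (C1, eC)) (icFo Fo Fm (A1, eA)),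
             mult = EAd (icE D F) (icFo Fo Fm (C1, eC)) (icFo Fo Fm (A1, eA)), one = EZr (icE D F) (icFo Fo Fm (C1, eC)) (icFo Fo Fm (A1, eA))\<rparr>\<^esub>
           ic\<Gamma> Fm \<Gamma> (C1, eC) (A1, eA) y"
        using x Gadd[OF x(2) x(4)] by simp
    qed
  qed
  have p2: "ic\<Gamma> Fm \<Gamma> C' A' (EMp (icE C E) C' Cc A A' c a \<alpha>) =
        EMp (icE D F) (icFo Fo Fm C') (icFo Fo Fm Cc) (icFo Fo Fm A) (icFo Fo Fm A') (icFm Fm C' Cc c) (icFm Fm A A' a) (ic\<Gamma> Fm \<Gamma> Cc A \<alpha>)"
    if a0: "C' \<in> Ob (ic C)" "Cc \<in> Ob (ic C)" "A \<in> Ob (ic C)" "A' \<in> Ob (ic C)" "c \<in> Hm (ic C) C' Cc" "a \<in> Hm (ic C) A A'"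
       "\<alpha> \<in> Ex (icE C E) Cc A" for C' Cc A A' c a \<alpha>
  proof -
    obtain C'1 eC' C1 eC A1 eA A'1 eA' where o: "C' = (C'1, eC')" "Cc = (C1, eC)" "A = (A1, eA)" "A' = (A'1, eA')"
      by (cases C', cases Cc, cases A, cases A') auto
    obtain c1 c2 c3 a1 a2 a3 where ca: "c = (c1, c2, c3)" "a = (a1, a2, a3)" by (cases c, cases a) auto
    have cc: "c1 = eC" "c3 = eC'" "c2 \<in> Hm C C'1 C1" "a1 = eA'" "a3 = eA" "a2 \<in> Hm C A1 A'1"
      using a0(5,6) unfolding o ca C.ic_Hm_triple by auto
    obtain \<alpha>2 where al: "\<alpha> = (eA, \<alpha>2, eC)" "\<alpha>2 \<in> Ex E C1 A1" using a0(7) unfolding o by (auto simp: icE_Ex)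
    have ob: "C'1 \<in> Ob C" "C1 \<in> Ob C" "A1 \<in> Ob C" "A'1 \<in> Ob C" using a0(1-4) unfolding o C.ic_Ob by auto
    show ?thesis unfolding o ca al using cc nat[OF ob cc(3) cc(6) al(2)] by simp
  qed
  show ?thesis unfolding is_nat_trans_def using p1 p2 by blast
qed


lemma hclass_mem: "Z \<in> hclass K n A B X d \<longleftrightarrow> heq K n A B X d (fst Z) (snd Z)"
  unfolding hclass_def by (cases Z) auto

lemma part3:
  assumes nC: "is_nexangulated C E s n" and nD: "is_nexangulated D F t n" and nf: "is_nexfun C E s D F t n Fo Fm \<Gamma>"
  shows "\<forall>Cc\<in>Ob (ic C). \<forall>A\<in>Ob (ic C). \<forall>\<delta>\<in>Ex (icE C E) Cc A. \<forall>X d. (X, d) \<in> ics C s n Cc A \<delta> \<longrightarrow>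
        ics D t n (icFo Fo Fm Cc) (icFo Fo Fm A) (ic\<Gamma> Fm \<Gamma> Cc A \<delta>)
          = hclass (ic D) n (icFo Fo Fm A) (icFo Fo Fm Cc) (\<lambda>i. icFo Fo Fm (X i)) (\<lambda>i. icFm Fm (X i) (X (Suc i)) (d i))"
proof (intro ballI allI impI)
  interpret C: padd C using nexang_padd[OF nC] .
  interpret D: padd D using nexang_padd[OF nD] .
  have af: "is_add_functor C D Fo Fm" and nt: "is_nat_trans C E D F Fo Fm \<Gamma>"
    and nf3: "\<And>Cc A \<delta> X d. Cc \<in> Ob C \<Longrightarrow> A \<in> Ob C \<Longrightarrow> \<delta> \<in> Ex E Cc A \<Longrightarrow> (X, d) \<in> s Cc A \<delta> \<Longrightarrow>
        t (Fo Cc) (Fo A) (\<Gamma> Cc A \<delta>) = hclass D n (Fo A) (Fo Cc) (\<lambda>i. Fo (X i)) (\<lambda>i. Fm (X i) (X (Suc i)) (d i))"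
    using nf unfolding is_nexfun_def by blast+
  interpret F: afun C D Fo Fm using af by (simp add: afun_def afun_axioms_def C.padd_axioms D.padd_axioms)
  interpret iC: padd "ic C" using ic_padd[OF C.padd_axioms] .
  interpret iD: padd "ic D" using ic_padd[OF D.padd_axioms] .
  interpret ICF: afun "ic C" "ic D" "icFo Fo Fm" "icFm Fm"
    using F.icF_funct by (simp add: afun_def afun_axioms_def iC.padd_axioms iD.padd_axioms)
  have rC: "is_realisation C E n s" using nC unfolding is_nexangulated_def by (elim conjE) assumption
  have realC: "\<And>Cc A \<delta>. Cc \<in> Ob C \<Longrightarrow> A \<in> Ob C \<Longrightarrow> \<delta> \<in> Ex E Cc A \<Longrightarrow> \<exists>X d. cxAC C n A Cc X d \<and> s Cc A \<delta> = hclass C n A Cc X d"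
    using rC unfolding is_realisation_def by blast
  have r1: "\<forall>Cc\<in>Ob D. \<forall>A\<in>Ob D. \<forall>\<delta>\<in>Ex F Cc A. \<forall>X d. (X, d) \<in> t Cc A \<delta> \<longrightarrow> nexangle D F n X d \<delta>"
    using nD unfolding is_nexangulated_def by (elim conjE) assumption
  have R1D: "\<And>Cc A \<delta> X d. Cc \<in> Ob D \<Longrightarrow> A \<in> Ob D \<Longrightarrow> \<delta> \<in> Ex F Cc A \<Longrightarrow> (X, d) \<in> t Cc A \<delta> \<Longrightarrow> nexangle D F n X d \<delta>"
    using r1 by blast
  have homG: "\<And>Cc A \<alpha>. Cc \<in> Ob C \<Longrightarrow> A \<in> Ob C \<Longrightarrow> \<alpha> \<in> Ex E Cc A \<Longrightarrow> \<Gamma> Cc A \<alpha> \<in> Ex F (Fo Cc) (Fo A)"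
  proof -
    fix Cc A \<alpha> assume a: "Cc \<in> Ob C" "A \<in> Ob C" "\<alpha> \<in> Ex E Cc A"
    have "\<Gamma> Cc A \<in> hom (ext_group E Cc A) (ext_group F (Fo Cc) (Fo A))" using nt a unfolding is_nat_trans_def by blast
    then have f: "\<Gamma> Cc A \<in> carrier (ext_group E Cc A) \<rightarrow> carrier (ext_group F (Fo Cc) (Fo A))" unfolding hom_def by blast
    have "\<alpha> \<in> carrier (ext_group E Cc A)" using a(3) by (simp add: ext_group_def)
    from funcset_mem[OF f this] show "\<Gamma> Cc A \<alpha> \<in> Ex F (Fo Cc) (Fo A)" by (simp add: ext_group_def)
  qed
  fix Cc A \<delta> X d
  assume Cc: "Cc \<in> Ob (ic C)" and A: "A \<in> Ob (ic C)" and dl: "\<delta> \<in> Ex (icE C E) Cc A" and Xd: "(X, d) \<in> ics C s n Cc A \<delta>"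
  obtain C1 eC A1 eA where o: "Cc = (C1, eC)" "A = (A1, eA)" by (cases Cc, cases A) auto
  obtain \<alpha> where al: "\<delta> = (eA, \<alpha>, eC)" "\<alpha> \<in> Ex E C1 A1" using dl unfolding o by (auto simp: icE_Ex)
  have ob: "C1 \<in> Ob C" "A1 \<in> Ob C" using Cc A unfolding o C.ic_Ob by auto
  obtain X0 d0 e0 where s0: "(X0, d0) \<in> s C1 A1 \<alpha>" and e0c: "is_cmor C n X0 d0 X0 d0 e0"
    and e0i: "\<forall>i\<le>Suc n. Cp C (X0 i) (X0 i) (X0 i) (e0 i) (e0 i) = e0 i" and e00: "e0 0 = eA" and e01: "e0 (Suc n) = eC"
    and hl: "heq (ic C) n (A1, eA) (C1, eC) (fst (lift_cx C X0 d0 e0)) (snd (lift_cx C X0 d0 e0)) X d"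
  proof -
    have "\<exists>X0 d0 e0. (X0, d0) \<in> s C1 A1 \<alpha> \<and> is_cmor C n X0 d0 X0 d0 e0 \<and>
          (\<forall>i\<le>Suc n. Cp C (X0 i) (X0 i) (X0 i) (e0 i) (e0 i) = e0 i) \<and> e0 0 = eA \<and> e0 (Suc n) = eC \<and>
          heq (ic C) n (A1, eA) (C1, eC) (fst (lift_cx C X0 d0 e0)) (snd (lift_cx C X0 d0 e0)) X d"
      using Xd unfolding o al ics_mem fst_conv snd_conv .
    then show ?thesis using that by blast
  qed
  obtain Xr dr where sr: "s C1 A1 \<alpha> = hclass C n A1 C1 Xr dr" using realC[OF ob(1) ob(2) al(2)] by blast
  have "heq C n A1 C1 Xr dr X0 d0" using s0 unfolding sr hclass_def by simp
  then have cX0: "cxAC C n A1 C1 X0 d0" unfolding heq_def by (elim conjE)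
  have X0: "is_cx C n X0 d0" and X00: "X0 0 = A1" "X0 (Suc n) = C1" using cX0 unfolding cxAC_def by auto
  have id0: "C.idem n X0 d0 e0" unfolding C.idem_def using e0c e0i by blast
  define FX0 where "FX0 = F.FX X0"
  define Fd0 where "Fd0 = F.Fd X0 d0"
  define Fe0 where "Fe0 = F.Ff X0 X0 e0"
  have tset: "t (Fo C1) (Fo A1) (\<Gamma> C1 A1 \<alpha>) = hclass D n (Fo A1) (Fo C1) FX0 Fd0"
    using nf3[OF ob(1) ob(2) al(2) s0] unfolding FX0_def Fd0_def F.FX_def F.Fd_def .
  have cxF: "cxAC D n (Fo A1) (Fo C1) FX0 Fd0" unfolding FX0_def Fd0_def by (rule F.F_cxAC[OF cX0])
  have FX0c: "is_cx D n FX0 Fd0" using cxF D.cxAC_cx by blast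
  have memF: "(FX0, Fd0) \<in> t (Fo C1) (Fo A1) (\<Gamma> C1 A1 \<alpha>)" unfolding tset hclass_def using D.heq_refl[OF cxF] by simp
  have idF: "D.idem n FX0 Fd0 Fe0" unfolding FX0_def Fd0_def Fe0_def by (rule F.F_idem[OF X0 id0])
  have Fe0e: "Fe0 0 = Fm A1 A1 eA" "Fe0 (Suc n) = Fm C1 C1 eC" unfolding Fe0_def F.Ff_def using e00 e01 X00 by auto
  have hLF: "heq (ic D) n (Fo A1, Fm A1 A1 eA) (Fo C1, Fm C1 C1 eC) (fst (lift_cx D FX0 Fd0 Fe0)) (snd (lift_cx D FX0 Fd0 Fe0))
      (\<lambda>i. icFo Fo Fm (X i)) (\<lambda>i. icFm Fm (X i) (X (Suc i)) (d i))"
  proof -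
    have h1: "heq (ic D) n (icFo Fo Fm (A1, eA)) (icFo Fo Fm (C1, eC)) (ICF.FX (fst (lift_cx C X0 d0 e0))) (ICF.Fd (fst (lift_cx C X0 d0 e0)) (snd (lift_cx C X0 d0 e0)))
        (ICF.FX X) (ICF.Fd X d)"
      by (rule ICF.F_heq[OF hl])
    have e1: "ICF.FX (fst (lift_cx C X0 d0 e0)) = fst (lift_cx D FX0 Fd0 Fe0)"
      by (simp add: ICF.FX_def C.lift_fst D.lift_fst FX0_def Fe0_def F.FX_def F.Ff_def)
    have e2: "ICF.FX X = (\<lambda>i. icFo Fo Fm (X i))" "ICF.Fd X d = (\<lambda>i. icFm Fm (X i) (X (Suc i)) (d i))"
      by (simp_all add: ICF.FX_def ICF.Fd_def)
    have e3: "ICF.Fd (fst (lift_cx C X0 d0 e0)) (snd (lift_cx C X0 d0 e0)) i = snd (lift_cx D FX0 Fd0 Fe0) i" if i: "i \<le> n" for i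
    proof -
      have m: "e0 (Suc i) \<in> Hm C (X0 (Suc i)) (X0 (Suc i))" "d0 i \<in> Hm C (X0 i) (X0 (Suc i))"
        using C.idem_hm[OF id0, of "Suc i"] C.cx_d[OF X0 i] i by auto
      show ?thesis using m by (simp add: ICF.Fd_def C.lift_fst C.lift_snd D.lift_snd FX0_def Fd0_def Fe0_def F.FX_def F.Fd_def F.Ff_def F.Fm_cp)
    qed
    have "heq (ic D) n (icFo Fo Fm (A1, eA)) (icFo Fo Fm (C1, eC)) (ICF.FX (fst (lift_cx C X0 d0 e0))) (snd (lift_cx D FX0 Fd0 Fe0))
        (ICF.FX X) (ICF.Fd X d)"
    proof (rule iD.heq_cong_d[OF h1])
      fix i assume "i \<le> n" then show "ICF.Fd (fst (lift_cx C X0 d0 e0)) (snd (lift_cx C X0 d0 e0)) i = snd (lift_cx D FX0 Fd0 Fe0) i" by (rule e3)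
    qed
    then have "heq (ic D) n (icFo Fo Fm (A1, eA)) (icFo Fo Fm (C1, eC)) (fst (lift_cx D FX0 Fd0 Fe0)) (snd (lift_cx D FX0 Fd0 Fe0))
        (ICF.FX X) (ICF.Fd X d)" unfolding e1 .
    then show ?thesis unfolding e2 by simp
  qed
  show "ics D t n (icFo Fo Fm Cc) (icFo Fo Fm A) (ic\<Gamma> Fm \<Gamma> Cc A \<delta>)
          = hclass (ic D) n (icFo Fo Fm A) (icFo Fo Fm Cc) (\<lambda>i. icFo Fo Fm (X i)) (\<lambda>i. icFm Fm (X i) (X (Suc i)) (d i))"
  proof (rule Set.set_eqI)
    fix Z
    show "Z \<in> ics D t n (icFo Fo Fm Cc) (icFo Fo Fm A) (ic\<Gamma> Fm \<Gamma> Cc A \<delta>) \<longleftrightarrow>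
        Z \<in> hclass (ic D) n (icFo Fo Fm A) (icFo Fo Fm Cc) (\<lambda>i. icFo Fo Fm (X i)) (\<lambda>i. icFm Fm (X i) (X (Suc i)) (d i))"
      unfolding o al icFo_simp icG ics_mem hclass_mem
    proof
      assume "\<exists>X' d' e'. (X', d') \<in> t (Fo C1) (Fo A1) (\<Gamma> C1 A1 \<alpha>) \<and> is_cmor D n X' d' X' d' e' \<and>
          (\<forall>i\<le>Suc n. Cp D (X' i) (X' i) (X' i) (e' i) (e' i) = e' i) \<and> e' 0 = Fm A1 A1 eA \<and> e' (Suc n) = Fm C1 C1 eC \<and>
          heq (ic D) n (Fo A1, Fm A1 A1 eA) (Fo C1, Fm C1 C1 eC) (fst (lift_cx D X' d' e')) (snd (lift_cx D X' d' e')) (fst Z) (snd Z)"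
      then obtain X' d' e' where t': "(X', d') \<in> t (Fo C1) (Fo A1) (\<Gamma> C1 A1 \<alpha>)" and ec: "is_cmor D n X' d' X' d' e'"
        and ei: "\<forall>i\<le>Suc n. Cp D (X' i) (X' i) (X' i) (e' i) (e' i) = e' i" and ee: "e' 0 = Fm A1 A1 eA" "e' (Suc n) = Fm C1 C1 eC"
        and hZ: "heq (ic D) n (Fo A1, Fm A1 A1 eA) (Fo C1, Fm C1 C1 eC) (fst (lift_cx D X' d' e')) (snd (lift_cx D X' d' e')) (fst Z) (snd Z)"
        by blast
      have hX': "heq D n (Fo A1) (Fo C1) FX0 Fd0 X' d'" using t' unfolding tset hclass_def by auto
      have X'c: "is_cx D n X' d'" using hX' unfolding heq_def cxAC_def by auto
      have ex': "D.cexact n X' d'"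
        using nexangle_cexact[OF D.padd_axioms R1D[OF F.Fo_ob[OF ob(1)] F.Fo_ob[OF ob(2)] homG[OF ob(1) ob(2) al(2)] t']] .
      have id': "D.idem n X' d' e'" unfolding D.idem_def using ec ei by blast
      have hi: "heq (ic D) n (Fo A1, e' 0) (Fo C1, e' (Suc n)) (fst (lift_cx D X' d' e')) (snd (lift_cx D X' d' e'))
           (fst (lift_cx D FX0 Fd0 Fe0)) (snd (lift_cx D FX0 Fd0 Fe0))"
        by (rule D.indep[OF X'c FX0c ex' D.heq_sym[OF hX'] id' idF]) (simp_all add: Fe0e ee)
      have "heq (ic D) n (Fo A1, Fm A1 A1 eA) (Fo C1, Fm C1 C1 eC) (\<lambda>i. icFo Fo Fm (X i)) (\<lambda>i. icFm Fm (X i) (X (Suc i)) (d i)) (fst Z) (snd Z)"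
        using iD.heq_trans[OF iD.heq_sym[OF hLF] iD.heq_trans[OF iD.heq_sym[OF hi[unfolded ee]] hZ]] .
      then show "heq (ic D) n (Fo A1, Fm A1 A1 eA) (Fo C1, Fm C1 C1 eC) (\<lambda>i. icFo Fo Fm (X i)) (\<lambda>i. icFm Fm (X i) (X (Suc i)) (d i)) (fst Z) (snd Z)" .
    next
      assume hZ: "heq (ic D) n (Fo A1, Fm A1 A1 eA) (Fo C1, Fm C1 C1 eC) (\<lambda>i. icFo Fo Fm (X i)) (\<lambda>i. icFm Fm (X i) (X (Suc i)) (d i)) (fst Z) (snd Z)"
      have "heq (ic D) n (Fo A1, Fm A1 A1 eA) (Fo C1, Fm C1 C1 eC) (fst (lift_cx D FX0 Fd0 Fe0)) (snd (lift_cx D FX0 Fd0 Fe0)) (fst Z) (snd Z)"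
        by (rule iD.heq_trans[OF hLF hZ])
      then show "\<exists>X' d' e'. (X', d') \<in> t (Fo C1) (Fo A1) (\<Gamma> C1 A1 \<alpha>) \<and> is_cmor D n X' d' X' d' e' \<and>
          (\<forall>i\<le>Suc n. Cp D (X' i) (X' i) (X' i) (e' i) (e' i) = e' i) \<and> e' 0 = Fm A1 A1 eA \<and> e' (Suc n) = Fm C1 C1 eC \<and>
          heq (ic D) n (Fo A1, Fm A1 A1 eA) (Fo C1, Fm C1 C1 eC) (fst (lift_cx D X' d' e')) (snd (lift_cx D X' d' e')) (fst Z) (snd Z)"
        using memF idF Fe0e unfolding D.idem_def by blast
    qed
  qed
qed



theorem lemma3p6:
  fixes C :: "('o,'m) addcat" and E :: "('o,'m,'x) bifun"
    and s :: "'o \<Rightarrow> 'o \<Rightarrow> 'x \<Rightarrow> ('o,'m) cx set"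
    and D :: "('p,'q) addcat" and F :: "('p,'q,'y) bifun"
    and t :: "'p \<Rightarrow> 'p \<Rightarrow> 'y \<Rightarrow> ('p,'q) cx set"
    and n :: nat
    and Fo :: "'o \<Rightarrow> 'p" and Fm :: "'o \<Rightarrow> 'o \<Rightarrow> 'm \<Rightarrow> 'q" and \<Gamma> :: "'o \<Rightarrow> 'o \<Rightarrow> 'x \<Rightarrow> 'y"
  assumes "is_nexangulated C E s n"
    and "is_nexangulated D F t n"
    and "is_nexfun C E s D F t n Fo Fm \<Gamma>"
  shows "is_nexfun (ic C) (icE C E) (ics C s n) (ic D) (icE D F) (ics D t n) n
           (icFo Fo Fm) (icFm Fm) (ic\<Gamma> Fm \<Gamma>)"
proof -
  have C: "padd C" using nexang_padd[OF assms(1)] .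
  have D: "padd D" using nexang_padd[OF assms(2)] .
  have af: "is_add_functor C D Fo Fm" and nt: "is_nat_trans C E D F Fo Fm \<Gamma>"
    using assms(3) unfolding is_nexfun_def by blast+
  interpret F: afun C D Fo Fm using C D af by (simp add: afun_def afun_axioms_def)
  show ?thesis unfolding is_nexfun_def
    using F.icF_funct part2[OF C D af nt] part3[OF assms] by blast
qed

end
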